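(* Let $\mathcal G$ be a braided stability groupoid, $R$ a commutative ring, $N\in\mathbb N$, $k,a\in\mathbb N$, and assume H3($N$): $\widetilde H_i(R\mathrm{Hom}(0,-))_n=0$ for all $-1\le i<N$ and all $n>k\cdot i+a$. Then for every $m\in\mathbb N$, $\widetilde H_i(R\mathrm{Hom}(m,-))_n=0$ for all $-1\le i<N$ and all $n>k\cdot i+a+m$.
   Context: Stability groupoid: monoidal groupoid $(\mathcal G,\oplus,0)$ with objects $(\mathbb N,+,0)$, $G_n=\mathrm{Aut}(n)$, $\oplus\colon G_m\times G_n\to G_{m+n}$ injective, $G_0$ trivial, $(G_{l+m}\times1)\cap(1\times G_{m+n})=1\times G_m\times1$ in $G_{l+m+n}$; braided: with braiding $b_{m,n}\in G_{m+n}$ of the monoidal groupoid. $U\mathcal G$: objects $\mathbb N$, $\mathrm{Hom}(m,n)=G_n/G_{n-m}$ for $m\le n$ ($G_{n-m}\subset G_n$ via $g\mapsto g\oplus\mathrm{id}_m$), empty otherwise, composition $fG_l\circ gG_m=f(\mathrm{id}_l\oplus g)G_{l+m}$, monoidal via $f_1G_{m_1}\oplus f_2G_{m_2}=(f_1\oplus f_2)(\mathrm{id}_{m_1}\oplus b^{-1}_{n_1,m_2}\oplus\mathrm{id}_{n_2})G_{m_1+m_2}$; $0$ initial, $\iota_n\colon0\to n$. For a functor $V\colon U\mathcal G\to R\text{-Mod}$ with $V_n=V(n)$, $\widetilde H_i(V)_n$ ($i\ge-1$) is the homology of $\widetilde C_p(V)_n=RG_n\otimes_{RG_{n-p-1}}V_{n-p-1}$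 ($p\ge-1$, zero for $n<p+1$, $G_{n-p-1}\subset G_n$ via $g\mapsto g\oplus\mathrm{id}_{p+1}$) with differential $\sum_{i=0}^p(-1)^id_i$, $d_i(g\otimes v)=g(\mathrm{id}_{n-p-1}\oplus b_{1,i}\oplus\mathrm{id}_{p-i})\otimes V(\mathrm{id}_{n-p-1}\oplus\iota_1)(v)$. $R\mathrm{Hom}(m,-)$ is the linearized representable functor. *)

theory Defs
  imports "HOL-Algebra.Group" "HOL-Algebra.Coset"
begin

text \<open>A (strict) monoidal groupoid with objects (nat,+,0): G n is the automorphism group
  of the object n, opl m n is the monoidal product G m x G n -> G (m+n), and b m n in G (m+n)
  is the braiding.\<close>

locale braided_stability_groupoid =
  fixes G :: "nat \<Rightarrow> 'g monoid"
    and opl :: "nat \<Rightarrow> nat \<Rightarrow> 'g \<Rightarrow> 'g \<Rightarrow> 'g"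
    and b :: "nat \<Rightarrow> nat \<Rightarrow> 'g"
  assumes grp: "\<And>n. group (G n)"
    and opl_closed: "\<And>m n g h. g \<in> carrier (G m) \<Longrightarrow> h \<in> carrier (G n) \<Longrightarrow>
          opl m n g h \<in> carrier (G (m + n))"
    and opl_mult: "\<And>m n g g' h h'. g \<in> carrier (G m) \<Longrightarrow> g' \<in> carrier (G m) \<Longrightarrow>
          h \<in> carrier (G n) \<Longrightarrow> h' \<in> carrier (G n) \<Longrightarrow>
          opl m n (g \<otimes>\<^bsub>G m\<^esub> g') (h \<otimes>\<^bsub>G n\<^esub> h')
            = opl m n g h \<otimes>\<^bsub>G (m + n)\<^esub> opl m n g' h'"
    and opl_inj: "\<And>m n g h g' h'. g \<in> carrier (G m) \<Longrightarrow> g' \<in> carrier (G m) \<Longrightarrow>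
          h \<in> carrier (G n) \<Longrightarrow> h' \<in> carrier (G n) \<Longrightarrow>
          opl m n g h = opl m n g' h' \<Longrightarrow> g = g' \<and> h = h'"
    and G0_trivial: "carrier (G 0) = {\<one>\<^bsub>G 0\<^esub>}"
    and unit_left: "\<And>n h. h \<in> carrier (G n) \<Longrightarrow> opl 0 n \<one>\<^bsub>G 0\<^esub> h = h"
    and unit_right: "\<And>n g. g \<in> carrier (G n) \<Longrightarrow> opl n 0 g \<one>\<^bsub>G 0\<^esub> = g"
    and opl_assoc: "\<And>l m n f g h. f \<in> carrier (G l) \<Longrightarrow> g \<in> carrier (G m) \<Longrightarrow>
          h \<in> carrier (G n) \<Longrightarrow>
          opl (l + m) n (opl l m f g) h = opl l (m + n) f (opl m n g h)"
    and intersection: "\<And>l m n.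
          (\<lambda>g. opl (l + m) n g \<one>\<^bsub>G n\<^esub>) ` carrier (G (l + m))
          \<inter> (\<lambda>h. opl l (m + n) \<one>\<^bsub>G l\<^esub> h) ` carrier (G (m + n))
          = (\<lambda>h. opl l (m + n) \<one>\<^bsub>G l\<^esub> (opl m n h \<one>\<^bsub>G n\<^esub>)) ` carrier (G m)"
    and braid_closed: "\<And>m n. b m n \<in> carrier (G (m + n))"
    and braid_natural: "\<And>m n g h. g \<in> carrier (G m) \<Longrightarrow> h \<in> carrier (G n) \<Longrightarrow>
          b m n \<otimes>\<^bsub>G (m + n)\<^esub> opl m n g h = opl n m h g \<otimes>\<^bsub>G (m + n)\<^esub> b m n"
    and hexagon1: "\<And>l m n. b l (m + n)
          = opl m (l + n) \<one>\<^bsub>G m\<^esub> (b l n) \<otimes>\<^bsub>G (l + m + n)\<^esub> opl (l + m) n (b l m) \<one>\<^bsub>G n\<^esub>"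
    and hexagon2: "\<And>l m n. b (l + m) n
          = opl (l + n) m (b l n) \<one>\<^bsub>G m\<^esub> \<otimes>\<^bsub>G (l + m + n)\<^esub> opl l (m + n) \<one>\<^bsub>G l\<^esub> (b m n)"

definition stab :: "(nat \<Rightarrow> 'g monoid) \<Rightarrow> (nat \<Rightarrow> nat \<Rightarrow> 'g \<Rightarrow> 'g \<Rightarrow> 'g) \<Rightarrow> nat \<Rightarrow> nat \<Rightarrow> 'g set" where
  "stab G opl m n = (\<lambda>h. opl (n - m) m h \<one>\<^bsub>G m\<^esub>) ` carrier (G (n - m))"

text \<open>The morphism f G_{n-m} in Hom(m,n).\<close>
definition UG_coset :: "(nat \<Rightarrow> 'g monoid) \<Rightarrow> (nat \<Rightarrow> nat \<Rightarrow> 'g \<Rightarrow> 'g \<Rightarrow> 'g) \<Rightarrow> nat \<Rightarrow> nat \<Rightarrow> 'g \<Rightarrow> 'g set" where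
  "UG_coset G opl m n f = l_coset (G n) f (stab G opl m n)"

definition UG_Hom :: "(nat \<Rightarrow> 'g monoid) \<Rightarrow> (nat \<Rightarrow> nat \<Rightarrow> 'g \<Rightarrow> 'g \<Rightarrow> 'g) \<Rightarrow> nat \<Rightarrow> nat \<Rightarrow> 'g set set" where
  "UG_Hom G opl m n = (if m \<le> n then UG_coset G opl m n ` carrier (G n) else {})"

definition UG_id :: "(nat \<Rightarrow> 'g monoid) \<Rightarrow> (nat \<Rightarrow> nat \<Rightarrow> 'g \<Rightarrow> 'g \<Rightarrow> 'g) \<Rightarrow> nat \<Rightarrow> 'g set" where
  "UG_id G opl n = UG_coset G opl n n \<one>\<^bsub>G n\<^esub>"

definition UG_iota :: "(nat \<Rightarrow> 'g monoid) \<Rightarrow> (nat \<Rightarrow> nat \<Rightarrow> 'g \<Rightarrow> 'g \<Rightarrow> 'g) \<Rightarrow> nat \<Rightarrow> 'g set" where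
  "UG_iota G opl n = UG_coset G opl 0 n \<one>\<^bsub>G n\<^esub>"

definition UG_comp :: "(nat \<Rightarrow> 'g monoid) \<Rightarrow> (nat \<Rightarrow> nat \<Rightarrow> 'g \<Rightarrow> 'g \<Rightarrow> 'g) \<Rightarrow> nat \<Rightarrow> nat \<Rightarrow> nat
    \<Rightarrow> 'g set \<Rightarrow> 'g set \<Rightarrow> 'g set" where
  "UG_comp G opl l m n X Y =
     (\<Union>f\<in>X. \<Union>g\<in>Y. UG_coset G opl l n (f \<otimes>\<^bsub>G n\<^esub> opl (n - m) m \<one>\<^bsub>G (n - m)\<^esub> g))"

definition UG_oplus :: "(nat \<Rightarrow> 'g monoid) \<Rightarrow> (nat \<Rightarrow> nat \<Rightarrow> 'g \<Rightarrow> 'g \<Rightarrow> 'g) \<Rightarrow> (nat \<Rightarrow> nat \<Rightarrow> 'g)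
    \<Rightarrow> nat \<Rightarrow> nat \<Rightarrow> nat \<Rightarrow> nat \<Rightarrow> 'g set \<Rightarrow> 'g set \<Rightarrow> 'g set" where
  "UG_oplus G opl b s1 t1 s2 t2 X Y =
     (\<Union>f1\<in>X. \<Union>f2\<in>Y. UG_coset G opl (s1 + s2) (t1 + t2)
        (opl t1 t2 f1 f2 \<otimes>\<^bsub>G (t1 + t2)\<^esub>
           opl (t1 - s1) (s1 + (t2 - s2) + s2) \<one>\<^bsub>G (t1 - s1)\<^esub>
             (opl (s1 + (t2 - s2)) s2 (inv\<^bsub>G (s1 + (t2 - s2))\<^esub> b s1 (t2 - s2)) \<one>\<^bsub>G s2\<^esub>)))"

definition chains :: "'a set \<Rightarrow> ('a \<Rightarrow> 'r::comm_ring_1) set" where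
  "chains S = {f. finite {x. f x \<noteq> 0} \<and> {x. f x \<noteq> 0} \<subseteq> S}"

definition delta :: "'a \<Rightarrow> 'a \<Rightarrow> 'r::comm_ring_1" where
  "delta x = (\<lambda>y. if y = x then 1 else 0)"

definition lin_span :: "('a \<Rightarrow> 'r::comm_ring_1) set \<Rightarrow> ('a \<Rightarrow> 'r) set" where
  "lin_span A = {f. \<exists>S c. finite S \<and> S \<subseteq> A \<and> f = (\<lambda>y. \<Sum>a\<in>S. c a * a y)}"

text \<open>We index by q = p + 1 >= 0. Since V = R Hom(m,-) has V_k free on Hom(m,k), the module
  RG_n (x)_{RG_{n-q}} V_{n-q} is the free R-module on G_n x Hom(m,n-q) modulo the
  balancing relations (g (h (+) id_q)) (x) x = g (x) (h . x) for h in G_{n-q}.\<close>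

definition Cbasis :: "(nat \<Rightarrow> 'g monoid) \<Rightarrow> (nat \<Rightarrow> nat \<Rightarrow> 'g \<Rightarrow> 'g \<Rightarrow> 'g) \<Rightarrow> nat \<Rightarrow> nat \<Rightarrow> nat
    \<Rightarrow> ('g \<times> 'g set) set" where
  "Cbasis G opl m n q = (if q \<le> n then carrier (G n) \<times> UG_Hom G opl m (n - q) else {})"

definition Crel :: "'r::comm_ring_1 itself \<Rightarrow> (nat \<Rightarrow> 'g monoid) \<Rightarrow> (nat \<Rightarrow> nat \<Rightarrow> 'g \<Rightarrow> 'g \<Rightarrow> 'g)
    \<Rightarrow> nat \<Rightarrow> nat \<Rightarrow> nat \<Rightarrow> ('g \<times> 'g set \<Rightarrow> 'r) set" where
  "Crel R G opl m n q = lin_span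
     {(\<lambda>y. delta (g \<otimes>\<^bsub>G n\<^esub> opl (n - q) q h \<one>\<^bsub>G q\<^esub>, x) y
           - delta (g, UG_comp G opl m (n - q) (n - q) (UG_coset G opl (n - q) (n - q) h) x) y)
      | g h x. q \<le> n \<and> g \<in> carrier (G n) \<and> h \<in> carrier (G (n - q))
               \<and> x \<in> UG_Hom G opl m (n - q)}"

text \<open>The face d_i on g (x) x in degree p = q - 1 (0 <= i <= p):
  g (id_{n-p-1} (+) b_{1,i} (+) id_{p-i}) (x) V(id_{n-p-1} (+) iota_1)(x).\<close>
definition face :: "(nat \<Rightarrow> 'g monoid) \<Rightarrow> (nat \<Rightarrow> nat \<Rightarrow> 'g \<Rightarrow> 'g \<Rightarrow> 'g) \<Rightarrow> (nat \<Rightarrow> nat \<Rightarrow> 'g)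
    \<Rightarrow> nat \<Rightarrow> nat \<Rightarrow> nat \<Rightarrow> nat \<Rightarrow> 'g \<times> 'g set \<Rightarrow> 'g \<times> 'g set" where
  "face G opl b m n q i z =
     (fst z \<otimes>\<^bsub>G n\<^esub> opl (n - q) q \<one>\<^bsub>G (n - q)\<^esub> (opl (1 + i) (q - 1 - i) (b 1 i) \<one>\<^bsub>G (q - 1 - i)\<^esub>),
      UG_comp G opl m (n - q) (n - q + 1)
        (UG_oplus G opl b (n - q) (n - q) 0 1 (UG_id G opl (n - q)) (UG_iota G opl 1)) (snd z))"

definition dbasis :: "'r::comm_ring_1 itself \<Rightarrow> (nat \<Rightarrow> 'g monoid) \<Rightarrow> (nat \<Rightarrow> nat \<Rightarrow> 'g \<Rightarrow> 'g \<Rightarrow> 'g)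
    \<Rightarrow> (nat \<Rightarrow> nat \<Rightarrow> 'g) \<Rightarrow> nat \<Rightarrow> nat \<Rightarrow> nat \<Rightarrow> 'g \<times> 'g set \<Rightarrow> 'g \<times> 'g set \<Rightarrow> 'r" where
  "dbasis R G opl b m n q z = (\<lambda>y. \<Sum>i<q. (- 1) ^ i * delta (face G opl b m n q i z) y)"

definition dchain :: "'r::comm_ring_1 itself \<Rightarrow> (nat \<Rightarrow> 'g monoid) \<Rightarrow> (nat \<Rightarrow> nat \<Rightarrow> 'g \<Rightarrow> 'g \<Rightarrow> 'g)
    \<Rightarrow> (nat \<Rightarrow> nat \<Rightarrow> 'g) \<Rightarrow> nat \<Rightarrow> nat \<Rightarrow> nat \<Rightarrow> ('g \<times> 'g set \<Rightarrow> 'r) \<Rightarrow> ('g \<times> 'g set \<Rightarrow> 'r)" where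
  "dchain R G opl b m n q f = (\<lambda>y. \<Sum>z\<in>{z. f z \<noteq> 0}. f z * dbasis R G opl b m n q z y)"

text \<open>H~_i(R Hom(m,-))_n = 0 (for i >= -1; degree i corresponds to q = i + 1): every cycle
  (mod relations) is a boundary (mod relations).\<close>
definition reduced_homology_vanishes :: "'r::comm_ring_1 itself \<Rightarrow> (nat \<Rightarrow> 'g monoid)
    \<Rightarrow> (nat \<Rightarrow> nat \<Rightarrow> 'g \<Rightarrow> 'g \<Rightarrow> 'g) \<Rightarrow> (nat \<Rightarrow> nat \<Rightarrow> 'g) \<Rightarrow> nat \<Rightarrow> int \<Rightarrow> nat \<Rightarrow> bool" where
  "reduced_homology_vanishes R G opl b m i n =
     (let q = nat (i + 1) in
      \<forall>f \<in> chains (Cbasis G opl m n q).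
        (q = 0 \<or> dchain R G opl b m n q f \<in> Crel R G opl m n (q - 1)) \<longrightarrow>
        (\<exists>c \<in> chains (Cbasis G opl m n (Suc q)).
           (\<lambda>y. f y - dchain R G opl b m n (Suc q) c y) \<in> Crel R G opl m n q))"

end

theory Submission
  imports Defs
begin


definition lext :: "('a \<Rightarrow> 'b \<Rightarrow> 'r::comm_ring_1) \<Rightarrow> ('a \<Rightarrow> 'r) \<Rightarrow> 'b \<Rightarrow> 'r" where
  "lext F f = (\<lambda>y. \<Sum>z\<in>{z. f z \<noteq> 0}. f z * F z y)"

abbreviation fin :: "('a \<Rightarrow> 'r::comm_ring_1) \<Rightarrow> bool" where
  "fin f \<equiv> finite {z. f z \<noteq> 0}"

lemma lext_sum: "finite A \<Longrightarrow> {z. f z \<noteq> 0} \<subseteq> A \<Longrightarrow> lext F f = (\<lambda>y. \<Sum>z\<in>A. f z * F z y)"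
  unfolding lext_def by (rule ext, rule sum.mono_neutral_left) auto

lemma fin_comb: "finite S \<Longrightarrow> (\<forall>a\<in>S. fin (g a)) \<Longrightarrow> fin (\<lambda>y. \<Sum>a\<in>S. c a * g a y)"
proof -
  assume S: "finite S" and g: "\<forall>a\<in>S. fin (g a)"
  have "{y. (\<Sum>a\<in>S. c a * g a y) \<noteq> 0} \<subseteq> (\<Union>a\<in>S. {y. g a y \<noteq> 0})"
  proof
    fix y assume "y \<in> {y. (\<Sum>a\<in>S. c a * g a y) \<noteq> 0}"
    then have "(\<Sum>a\<in>S. c a * g a y) \<noteq> 0" by simp
    then obtain a where "a \<in> S" "c a * g a y \<noteq> 0" by (meson sum.neutral)
    then have "a \<in> S" "g a y \<noteq> 0" by auto
    then show "y \<in> (\<Union>a\<in>S. {y. g a y \<noteq> 0})" by blast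
  qed
  moreover have "finite (\<Union>a\<in>S. {y. g a y \<noteq> 0})" using S g by auto
  ultimately show ?thesis by (rule finite_subset)
qed

lemma lext_lin: "finite S \<Longrightarrow> (\<forall>a\<in>S. fin (g a)) \<Longrightarrow>
   lext F (\<lambda>y. \<Sum>a\<in>S. c a * g a y) = (\<lambda>y. \<Sum>a\<in>S. c a * lext F (g a) y)"
proof -
  assume S: "finite S" and g: "\<forall>a\<in>S. fin (g a)"
  let ?U = "\<Union>a\<in>S. {y. g a y \<noteq> 0}"
  have U: "finite ?U" using S g by auto
  have sub: "{z. (\<Sum>a\<in>S. c a * g a z) \<noteq> 0} \<subseteq> ?U"
  proof
    fix y assume "y \<in> {y. (\<Sum>a\<in>S. c a * g a y) \<noteq> 0}"
    then have "(\<Sum>a\<in>S. c a * g a y) \<noteq> 0" by simp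
    then obtain a where "a \<in> S" "c a * g a y \<noteq> 0" by (meson sum.neutral)
    then have "a \<in> S" "g a y \<noteq> 0" by auto
    then show "y \<in> ?U" by blast
  qed
  have "lext F (\<lambda>y. \<Sum>a\<in>S. c a * g a y) = (\<lambda>y. \<Sum>z\<in>?U. (\<Sum>a\<in>S. c a * g a z) * F z y)"
    by (rule lext_sum[OF U sub])
  also have "\<dots> = (\<lambda>y. \<Sum>a\<in>S. c a * (\<Sum>z\<in>?U. g a z * F z y))"
    by (rule ext) (simp add: sum_distrib_left sum_distrib_right mult.assoc sum.swap[of _ ?U])
  also have "\<dots> = (\<lambda>y. \<Sum>a\<in>S. c a * lext F (g a) y)"
  proof (rule ext, rule sum.cong[OF refl])
    fix y a assume a: "a \<in> S"
    have "lext F (g a) = (\<lambda>y. \<Sum>z\<in>?U. g a z * F z y)" using a U by (intro lext_sum) auto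
    then show "c a * (\<Sum>z\<in>?U. g a z * F z y) = c a * lext F (g a) y" by simp
  qed
  finally show ?thesis .
qed

lemma fin_delta: "fin (delta x :: 'a \<Rightarrow> 'r::comm_ring_1)"
proof -
  have "{z. (delta x z :: 'r) \<noteq> 0} \<subseteq> {x}" unfolding delta_def by auto
  then show ?thesis by (rule finite_subset) auto
qed

lemma lext_delta: "lext F (delta x :: 'a \<Rightarrow> 'r::comm_ring_1) = F x"
proof (cases "(1::'r) = 0")
  case True
  then have "\<And>r::'r. r = 0" by (metis mult_1 mult_zero_left)
  then show ?thesis by (intro ext) metis
next
  case False
  then have "{z. (delta x z :: 'r) \<noteq> 0} = {x}" unfolding delta_def by auto
  then show ?thesis unfolding lext_def by (simp add: delta_def)
qed

lemma decomp: "fin f \<Longrightarrow> f = (\<lambda>y. \<Sum>z\<in>{z. f z \<noteq> 0}. f z * delta z y)"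
proof (rule ext)
  fix y assume fin: "fin f"
  have "(\<Sum>z\<in>{z. f z \<noteq> 0}. f z * delta z y) = (\<Sum>z\<in>{z. f z \<noteq> 0}. if z = y then f z else 0)"
    by (rule sum.cong) (auto simp: delta_def)
  also have "\<dots> = f y" using fin by (simp add: sum.delta')
  finally show "f y = (\<Sum>z\<in>{z. f z \<noteq> 0}. f z * delta z y)" by simp
qed

lemma span_gen: "a \<in> A \<Longrightarrow> a \<in> lin_span A"
  unfolding lin_span_def by (rule CollectI, rule exI[of _ "{a}"], rule exI[of _ "\<lambda>_. 1"]) auto

lemma span_0: "(\<lambda>y. 0) \<in> lin_span A"
  unfolding lin_span_def by (rule CollectI, rule exI[of _ "{}"]) auto

lemma span_sum: "finite S \<Longrightarrow> (\<forall>a\<in>S. g a \<in> lin_span A) \<Longrightarrow> (\<lambda>y. \<Sum>a\<in>S. c a * g a y) \<in> lin_span A"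
proof (induction S rule: finite_induct)
  case empty then show ?case by (simp add: span_0)
next
  case (insert x F)
  then have IH: "(\<lambda>y. \<Sum>a\<in>F. c a * g a y) \<in> lin_span A" by simp
  from insert have gx: "g x \<in> lin_span A" by simp
  obtain S1 c1 where 1: "finite S1" "S1 \<subseteq> A" "(\<lambda>y. \<Sum>a\<in>F. c a * g a y) = (\<lambda>y. \<Sum>a\<in>S1. c1 a * a y)"
    using IH unfolding lin_span_def by blast
  obtain S2 c2 where 2: "finite S2" "S2 \<subseteq> A" "g x = (\<lambda>y. \<Sum>a\<in>S2. c2 a * a y)"
    using gx unfolding lin_span_def by blast
  let ?c = "\<lambda>a. (if a \<in> S1 then c1 a else 0) + c x * (if a \<in> S2 then c2 a else 0)"
  have "(\<lambda>y. \<Sum>a\<in>insert x F. c a * g a y) = (\<lambda>y. \<Sum>a\<in>S1 \<union> S2. ?c a * a y)"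
  proof (rule ext)
    fix y
    have e1: "(\<Sum>a\<in>S1. c1 a * a y) = (\<Sum>a\<in>S1 \<union> S2. (if a \<in> S1 then c1 a else 0) * a y)"
      using 1 2 by (intro sum.mono_neutral_cong_left) auto
    have e2: "(\<Sum>a\<in>S2. c2 a * a y) = (\<Sum>a\<in>S1 \<union> S2. (if a \<in> S2 then c2 a else 0) * a y)"
      using 1 2 by (intro sum.mono_neutral_cong_left) auto
    have "(\<Sum>a\<in>insert x F. c a * g a y) = c x * g x y + (\<Sum>a\<in>F. c a * g a y)" using insert by simp
    also have "\<dots> = c x * (\<Sum>a\<in>S2. c2 a * a y) + (\<Sum>a\<in>S1. c1 a * a y)"
      using fun_cong[OF 1(3), of y] fun_cong[OF 2(3), of y] by simp
    also have "\<dots> = (\<Sum>a\<in>S1 \<union> S2. c x * ((if a \<in> S2 then c2 a else 0) * a y)) + (\<Sum>a\<in>S1 \<union> S2. (if a \<in> S1 then c1 a else 0) * a y)"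
      unfolding e1 e2 sum_distrib_left by simp
    also have "\<dots> = (\<Sum>a\<in>S1 \<union> S2. ?c a * a y)"
      unfolding sum.distrib[symmetric] by (rule sum.cong) (simp_all add: distrib_right mult.assoc)
    finally show "(\<Sum>a\<in>insert x F. c a * g a y) = (\<Sum>a\<in>S1 \<union> S2. ?c a * a y)" .
  qed
  then show ?case unfolding lin_span_def using 1 2
    by (intro CollectI exI[of _ "S1 \<union> S2"] exI[of _ ?c]) auto
qed

lemma span_diff: "f \<in> lin_span A \<Longrightarrow> g \<in> lin_span A \<Longrightarrow> (\<lambda>y. f y - g y) \<in> lin_span A"
proof -
  assume f: "f \<in> lin_span A" and g: "g \<in> lin_span A"
  let ?h = "\<lambda>i::bool. if i then f else g"
  have "(\<lambda>y. \<Sum>i\<in>{True, False}. (if i then 1 else -1) * ?h i y) \<in> lin_span A"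
    using f g by (intro span_sum) auto
  then show ?thesis by simp
qed

lemma span_add: "f \<in> lin_span A \<Longrightarrow> g \<in> lin_span A \<Longrightarrow> (\<lambda>y. f y + g y) \<in> lin_span A"
proof -
  assume f: "f \<in> lin_span A" and g: "g \<in> lin_span A"
  let ?h = "\<lambda>i::bool. if i then f else g"
  have "(\<lambda>y. \<Sum>i\<in>{True, False}. 1 * ?h i y) \<in> lin_span A"
    using f g by (intro span_sum) auto
  then show ?thesis by simp
qed

lemma span_fin: "\<forall>a\<in>A. fin a \<Longrightarrow> f \<in> lin_span A \<Longrightarrow> fin f"
  unfolding lin_span_def by (auto intro!: fin_comb)

lemma span_lext: "\<forall>a\<in>A. fin a \<Longrightarrow> \<forall>a\<in>A. lext F a \<in> lin_span B \<Longrightarrow> f \<in> lin_span A \<Longrightarrow> lext F f \<in> lin_span B"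
proof -
  assume fa: "\<forall>a\<in>A. fin a" and la: "\<forall>a\<in>A. lext F a \<in> lin_span B" and f: "f \<in> lin_span A"
  obtain S c where S: "finite S" "S \<subseteq> A" "f = (\<lambda>y. \<Sum>a\<in>S. c a * a y)" using f unfolding lin_span_def by blast
  have "lext F f = (\<lambda>y. \<Sum>a\<in>S. c a * lext F a y)" unfolding S(3) using S fa by (intro lext_lin) auto
  also have "\<dots> \<in> lin_span B" using S la by (intro span_sum) auto
  finally show ?thesis .
qed

lemma span_neg: "(\<lambda>y. f y - g y) \<in> lin_span A \<Longrightarrow> (\<lambda>y. g y - f y) \<in> lin_span A"
proof -
  assume h: "(\<lambda>y. f y - g y) \<in> lin_span A"
  have "(\<lambda>y. 0 - (f y - g y)) \<in> lin_span A" using span_diff[OF span_0 h] by simp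
  then show ?thesis by simp
qed

lemma lext_dd: "lext F (\<lambda>y. delta a y - delta c y :: 'r::comm_ring_1) = (\<lambda>y. F a y - F c y)"
proof (cases "a = c")
  case True
  then show ?thesis unfolding lext_def by simp
next
  case False
  let ?k = "\<lambda>x. if x = a then (1::'r) else -1"
  have e: "(\<lambda>y. delta a y - delta c y :: 'r) = (\<lambda>y. \<Sum>x\<in>{a, c}. ?k x * delta x y)"
    using False by auto
  have "lext F (\<lambda>y. \<Sum>x\<in>{a, c}. ?k x * delta x y) = (\<lambda>y. \<Sum>x\<in>{a, c}. ?k x * lext F (delta x) y)"
    by (rule lext_lin) (auto simp: fin_delta)
  then show ?thesis unfolding e using False by (simp add: lext_delta)
qed

lemma fin_dd: "fin (\<lambda>y. delta a y - delta c y :: 'r::comm_ring_1)"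
proof -
  have "{y. (delta a y - delta c y :: 'r) \<noteq> 0} \<subseteq> {a, c}" unfolding delta_def by auto
  then show ?thesis by (rule finite_subset) auto
qed

lemma sum_diff_fun: "(\<lambda>y. (\<Sum>i\<in>I. c i * A i y) - (\<Sum>i\<in>I. c i * B i y) :: 'r::comm_ring_1)
   = (\<lambda>y. \<Sum>i\<in>I. c i * (\<lambda>y. A i y - B i y) y)"
  by (simp add: sum_subtractf right_diff_distrib)

lemma lext_zero: "lext F (\<lambda>_. 0 :: 'r::comm_ring_1) = (\<lambda>_. 0)"
  unfolding lext_def by simp

lemma lext_comp: "fin f \<Longrightarrow> (\<forall>z. fin (F z)) \<Longrightarrow> lext H (lext F f) = lext (\<lambda>z. lext H (F z)) f"
proof -
  assume f: "fin f" and F: "\<forall>z. fin (F z)"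
  have "lext H (lext F f) = lext H (\<lambda>y. \<Sum>z\<in>{z. f z \<noteq> 0}. f z * F z y)" unfolding lext_def ..
  also have "\<dots> = (\<lambda>y. \<Sum>z\<in>{z. f z \<noteq> 0}. f z * lext H (F z) y)" using f F by (intro lext_lin) auto
  also have "\<dots> = lext (\<lambda>z. lext H (F z)) f" unfolding lext_def ..
  finally show ?thesis .
qed

lemma lext_sub: "(\<lambda>y. lext F1 f y - lext F2 f y) = lext (\<lambda>z y. F1 z y - F2 z y) f"
  unfolding lext_def by (simp add: sum_subtractf right_diff_distrib)

lemma lext_sumF: "(\<lambda>y. \<Sum>s\<in>S. lext (F s) f y) = lext (\<lambda>z y. \<Sum>s\<in>S. F s z y) f"
  unfolding lext_def by (rule ext) (simp add: sum_distrib_left sum.swap[of _ S])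

lemma lext_span: "fin f \<Longrightarrow> (\<forall>z\<in>{z. f z \<noteq> 0}. H z \<in> lin_span A) \<Longrightarrow> lext H f \<in> lin_span A"
  unfolding lext_def by (rule span_sum) auto

lemma lext_diff: "fin f \<Longrightarrow> fin g \<Longrightarrow> lext F (\<lambda>y. f y - g y) = (\<lambda>y. lext F f y - lext F g y)"
proof -
  assume f: "fin f" and g: "fin g"
  let ?h = "\<lambda>i::bool. if i then f else g"
  have e: "(\<lambda>y. f y - g y) = (\<lambda>y. \<Sum>i\<in>{True, False}. (if i then 1 else -1) * ?h i y)" by simp
  show ?thesis unfolding e using f g by (subst lext_lin) auto
qed

lemma lext_sumS: "finite S \<Longrightarrow> \<forall>s\<in>S. fin (g s) \<Longrightarrow> lext F (\<lambda>y. \<Sum>s\<in>S. g s y) = (\<lambda>y. \<Sum>s\<in>S. lext F (g s) y)"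
  using lext_lin[of S g F "\<lambda>_. 1"] by simp

lemma chains_lext: "f \<in> chains A \<Longrightarrow> (\<forall>z\<in>A. F z \<in> chains B) \<Longrightarrow> lext F f \<in> chains B"
proof -
  assume f: "f \<in> chains A" and F: "\<forall>z\<in>A. F z \<in> chains B"
  have fin: "fin f" and sub: "{z. f z \<noteq> 0} \<subseteq> A" using f unfolding chains_def by auto
  have "fin (lext F f)" unfolding lext_def using fin F sub unfolding chains_def by (intro fin_comb) auto
  moreover have "{y. lext F f y \<noteq> 0} \<subseteq> B"
  proof
    fix y assume "y \<in> {y. lext F f y \<noteq> 0}"
    then have "(\<Sum>z\<in>{z. f z \<noteq> 0}. f z * F z y) \<noteq> 0" unfolding lext_def by simp
    then obtain z where "z \<in> {z. f z \<noteq> 0}" "f z * F z y \<noteq> 0" by (meson sum.neutral)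
    then have "z \<in> A" "F z y \<noteq> 0" using sub by auto
    then show "y \<in> B" using F unfolding chains_def by auto
  qed
  ultimately show ?thesis unfolding chains_def by simp
qed

lemma chains_sum: "finite S \<Longrightarrow> \<forall>s\<in>S. g s \<in> chains B \<Longrightarrow> (\<lambda>y. \<Sum>s\<in>S. g s y) \<in> chains B"
proof -
  assume S: "finite S" and g: "\<forall>s\<in>S. g s \<in> chains B"
  have "fin (\<lambda>y. \<Sum>s\<in>S. 1 * g s y)" using S g unfolding chains_def by (intro fin_comb) auto
  moreover have "{y. (\<Sum>s\<in>S. g s y) \<noteq> 0} \<subseteq> B"
  proof
    fix y assume "y \<in> {y. (\<Sum>s\<in>S. g s y) \<noteq> 0}"
    then obtain s where "s \<in> S" "g s y \<noteq> 0" by (auto intro: sum.neutral)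
    then show "y \<in> B" using g unfolding chains_def by auto
  qed
  ultimately show ?thesis unfolding chains_def by simp
qed

lemma chains_delta: "x \<in> B \<Longrightarrow> delta x \<in> chains B"
  unfolding chains_def using fin_delta by (auto simp: delta_def split: if_splits)

lemma chains_zero: "(\<lambda>_. 0) \<in> chains B"
  unfolding chains_def by simp

lemma chains_empty: "f \<in> chains {} \<Longrightarrow> f = (\<lambda>_. 0)"
  unfolding chains_def by auto

lemma span_sum1: "finite S \<Longrightarrow> \<forall>s\<in>S. g s \<in> lin_span A \<Longrightarrow> (\<lambda>y. \<Sum>s\<in>S. g s y) \<in> lin_span A"
  using span_sum[of S g A "\<lambda>_. 1"] by simp

lemma span_eq: "f \<in> lin_span A \<Longrightarrow> f = g \<Longrightarrow> g \<in> lin_span A" by simp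



context braided_stability_groupoid begin

lemma mc: "x \<in> carrier (G n) \<Longrightarrow> y \<in> carrier (G n) \<Longrightarrow> x \<otimes>\<^bsub>G n\<^esub> y \<in> carrier (G n)"
  by (simp add: group.is_monoid grp monoid.m_closed)
lemma oc: "\<one>\<^bsub>G n\<^esub> \<in> carrier (G n)"
  by (simp add: group.is_monoid grp monoid.one_closed)
lemma ic: "x \<in> carrier (G n) \<Longrightarrow> inv\<^bsub>G n\<^esub> x \<in> carrier (G n)"
  by (simp add: grp group.inv_closed)
lemma ma: "x \<in> carrier (G n) \<Longrightarrow> y \<in> carrier (G n) \<Longrightarrow> z \<in> carrier (G n) \<Longrightarrow>
   (x \<otimes>\<^bsub>G n\<^esub> y) \<otimes>\<^bsub>G n\<^esub> z = x \<otimes>\<^bsub>G n\<^esub> (y \<otimes>\<^bsub>G n\<^esub> z)"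
  by (simp add: group.is_monoid grp monoid.m_assoc)
lemma lo: "x \<in> carrier (G n) \<Longrightarrow> \<one>\<^bsub>G n\<^esub> \<otimes>\<^bsub>G n\<^esub> x = x"
  by (simp add: group.is_monoid grp monoid.l_one)
lemma ro: "x \<in> carrier (G n) \<Longrightarrow> x \<otimes>\<^bsub>G n\<^esub> \<one>\<^bsub>G n\<^esub> = x"
  by (simp add: group.is_monoid grp monoid.r_one)
lemma li: "x \<in> carrier (G n) \<Longrightarrow> inv\<^bsub>G n\<^esub> x \<otimes>\<^bsub>G n\<^esub> x = \<one>\<^bsub>G n\<^esub>"
  by (simp add: grp group.l_inv)
lemma ri: "x \<in> carrier (G n) \<Longrightarrow> x \<otimes>\<^bsub>G n\<^esub> inv\<^bsub>G n\<^esub> x = \<one>\<^bsub>G n\<^esub>"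
  by (simp add: grp group.r_inv)
lemma li2: "x \<in> carrier (G n) \<Longrightarrow> y \<in> carrier (G n) \<Longrightarrow> inv\<^bsub>G n\<^esub> x \<otimes>\<^bsub>G n\<^esub> (x \<otimes>\<^bsub>G n\<^esub> y) = y"
  by (metis grp group.inv_solve_left ic mc)
lemma ri2: "x \<in> carrier (G n) \<Longrightarrow> y \<in> carrier (G n) \<Longrightarrow> x \<otimes>\<^bsub>G n\<^esub> (inv\<^bsub>G n\<^esub> x \<otimes>\<^bsub>G n\<^esub> y) = y"
  by (metis grp group.inv_solve_left ic mc group.inv_inv)
lemma lcan: "x \<in> carrier (G n) \<Longrightarrow> y \<in> carrier (G n) \<Longrightarrow> z \<in> carrier (G n) \<Longrightarrow>
   x \<otimes>\<^bsub>G n\<^esub> y = x \<otimes>\<^bsub>G n\<^esub> z \<longleftrightarrow> y = z"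
  by (metis grp group.Units_eq group.is_monoid monoid.Units_l_cancel)
lemma rcan: "x \<in> carrier (G n) \<Longrightarrow> y \<in> carrier (G n) \<Longrightarrow> z \<in> carrier (G n) \<Longrightarrow>
   y \<otimes>\<^bsub>G n\<^esub> x = z \<otimes>\<^bsub>G n\<^esub> x \<longleftrightarrow> y = z"
  by (simp add: grp group.right_cancel)
lemma invmult: "x \<in> carrier (G n) \<Longrightarrow> y \<in> carrier (G n) \<Longrightarrow>
   inv\<^bsub>G n\<^esub> (x \<otimes>\<^bsub>G n\<^esub> y) = inv\<^bsub>G n\<^esub> y \<otimes>\<^bsub>G n\<^esub> inv\<^bsub>G n\<^esub> x"
  by (simp add: grp group.inv_mult_group)
lemma invinv: "x \<in> carrier (G n) \<Longrightarrow> inv\<^bsub>G n\<^esub> (inv\<^bsub>G n\<^esub> x) = x"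
  by (simp add: grp group.inv_inv)
lemma invone: "inv\<^bsub>G n\<^esub> \<one>\<^bsub>G n\<^esub> = \<one>\<^bsub>G n\<^esub>"
  by (simp add: grp group.is_monoid monoid.inv_one)

lemmas gs = mc oc ic ma lo ro li ri li2 ri2 invinv invone

lemma oplc: "x \<in> carrier (G a) \<Longrightarrow> y \<in> carrier (G d) \<Longrightarrow> c = a + d \<Longrightarrow> opl a d x y \<in> carrier (G c)"
  using opl_closed by simp

lemma opl_one: "opl a d \<one>\<^bsub>G a\<^esub> \<one>\<^bsub>G d\<^esub> = \<one>\<^bsub>G (a+d)\<^esub>"
proof -
  let ?z = "opl a d \<one>\<^bsub>G a\<^esub> \<one>\<^bsub>G d\<^esub>"
  have z: "?z \<in> carrier (G (a+d))" by (simp add: oplc oc)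
  have "?z = ?z \<otimes>\<^bsub>G (a+d)\<^esub> ?z"
    using opl_mult[of "\<one>\<^bsub>G a\<^esub>" a "\<one>\<^bsub>G a\<^esub>" "\<one>\<^bsub>G d\<^esub>" d "\<one>\<^bsub>G d\<^esub>"] by (simp add: oc lo)
  then show ?thesis using z by (metis ri ma ic ro)
qed

lemma opl_one': "c = a + d \<Longrightarrow> opl a d \<one>\<^bsub>G a\<^esub> \<one>\<^bsub>G d\<^esub> = \<one>\<^bsub>G c\<^esub>"
  using opl_one by simp

lemma oplm: "c = a + d \<Longrightarrow> x \<in> carrier (G a) \<Longrightarrow> x' \<in> carrier (G a) \<Longrightarrow> y \<in> carrier (G d) \<Longrightarrow> y' \<in> carrier (G d) \<Longrightarrow>
   opl a d x y \<otimes>\<^bsub>G c\<^esub> opl a d x' y' = opl a d (x \<otimes>\<^bsub>G a\<^esub> x') (y \<otimes>\<^bsub>G d\<^esub> y')"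
  using opl_mult by simp

lemma opl_inv: "c = a + d \<Longrightarrow> x \<in> carrier (G a) \<Longrightarrow> y \<in> carrier (G d) \<Longrightarrow>
   inv\<^bsub>G c\<^esub> (opl a d x y) = opl a d (inv\<^bsub>G a\<^esub> x) (inv\<^bsub>G d\<^esub> y)"
proof -
  assume c: "c = a + d" and x: "x \<in> carrier (G a)" and y: "y \<in> carrier (G d)"
  have "opl a d (inv\<^bsub>G a\<^esub> x) (inv\<^bsub>G d\<^esub> y) \<otimes>\<^bsub>G c\<^esub> opl a d x y = \<one>\<^bsub>G c\<^esub>"
    using c x y by (simp add: oplm ic li opl_one)
  then show ?thesis using c x y
    by (metis grp group.inv_equality ic oplc)
qed

lemma opl_split1: "c = a + d \<Longrightarrow> x \<in> carrier (G a) \<Longrightarrow> y \<in> carrier (G d) \<Longrightarrow>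
   opl a d x y = opl a d x \<one>\<^bsub>G d\<^esub> \<otimes>\<^bsub>G c\<^esub> opl a d \<one>\<^bsub>G a\<^esub> y"
  by (simp add: oplm oc lo ro)
lemma opl_split2: "c = a + d \<Longrightarrow> x \<in> carrier (G a) \<Longrightarrow> y \<in> carrier (G d) \<Longrightarrow>
   opl a d x y = opl a d \<one>\<^bsub>G a\<^esub> y \<otimes>\<^bsub>G c\<^esub> opl a d x \<one>\<^bsub>G d\<^esub>"
  by (simp add: oplm oc lo ro)

lemma G0: "x \<in> carrier (G 0) \<Longrightarrow> x = \<one>\<^bsub>G 0\<^esub>"
  using G0_trivial by auto

lemma oplassoc: "f \<in> carrier (G l) \<Longrightarrow> g \<in> carrier (G m) \<Longrightarrow> h \<in> carrier (G n) \<Longrightarrow>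
   a = l + m \<Longrightarrow> c = m + n \<Longrightarrow> opl a n (opl l m f g) h = opl l c f (opl m n g h)"
  using opl_assoc by simp

lemma emb_mult: "w \<in> carrier (G k) \<Longrightarrow> h \<in> carrier (G k) \<Longrightarrow>
  opl k m w \<one>\<^bsub>G m\<^esub> \<otimes>\<^bsub>G (k+m)\<^esub> opl k m h \<one>\<^bsub>G m\<^esub> = opl k m (w \<otimes>\<^bsub>G k\<^esub> h) \<one>\<^bsub>G m\<^esub>"
  using opl_mult[of w k h "\<one>\<^bsub>G m\<^esub>" m "\<one>\<^bsub>G m\<^esub>"] by (simp add: oc lo)

lemma stab_eq: "N = k + m \<Longrightarrow> stab G opl m N = (\<lambda>h. opl k m h \<one>\<^bsub>G m\<^esub>) ` carrier (G k)"
  by (simp add: stab_def)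

lemma cos_char: "l_coset (G N) a ((\<lambda>h. opl k m h \<one>\<^bsub>G m\<^esub>) ` carrier (G k))
   = (\<lambda>h. a \<otimes>\<^bsub>G N\<^esub> opl k m h \<one>\<^bsub>G m\<^esub>) ` carrier (G k)"
  unfolding l_coset_def by auto

lemma cos_shift: "N = k + m \<Longrightarrow> a \<in> carrier (G N) \<Longrightarrow> w \<in> carrier (G k) \<Longrightarrow>
  l_coset (G N) (a \<otimes>\<^bsub>G N\<^esub> opl k m w \<one>\<^bsub>G m\<^esub>) ((\<lambda>h. opl k m h \<one>\<^bsub>G m\<^esub>) ` carrier (G k))
  = l_coset (G N) a ((\<lambda>h. opl k m h \<one>\<^bsub>G m\<^esub>) ` carrier (G k))"
proof -
  assume N: "N = k + m" and a: "a \<in> carrier (G N)" and w: "w \<in> carrier (G k)"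
  have e: "\<And>h. h \<in> carrier (G k) \<Longrightarrow> (a \<otimes>\<^bsub>G N\<^esub> opl k m w \<one>\<^bsub>G m\<^esub>) \<otimes>\<^bsub>G N\<^esub> opl k m h \<one>\<^bsub>G m\<^esub>
      = a \<otimes>\<^bsub>G N\<^esub> opl k m (w \<otimes>\<^bsub>G k\<^esub> h) \<one>\<^bsub>G m\<^esub>"
    using N a w by (simp add: ma oplc oc emb_mult)
  have e2: "\<And>h. h \<in> carrier (G k) \<Longrightarrow> a \<otimes>\<^bsub>G N\<^esub> opl k m h \<one>\<^bsub>G m\<^esub>
      = (a \<otimes>\<^bsub>G N\<^esub> opl k m w \<one>\<^bsub>G m\<^esub>) \<otimes>\<^bsub>G N\<^esub> opl k m (inv\<^bsub>G k\<^esub> w \<otimes>\<^bsub>G k\<^esub> h) \<one>\<^bsub>G m\<^esub>"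
  proof -
    fix h assume h: "h \<in> carrier (G k)"
    have hh: "inv\<^bsub>G k\<^esub> w \<otimes>\<^bsub>G k\<^esub> h \<in> carrier (G k)" using w h by (simp add: mc ic)
    have r: "w \<otimes>\<^bsub>G k\<^esub> (inv\<^bsub>G k\<^esub> w \<otimes>\<^bsub>G k\<^esub> h) = h" using w h by (rule ri2)
    show "?thesis h" using e[OF hh] unfolding r by simp
  qed
  show ?thesis unfolding cos_char
  proof (intro equalityI subsetI)
    fix y assume "y \<in> (\<lambda>h. (a \<otimes>\<^bsub>G N\<^esub> opl k m w \<one>\<^bsub>G m\<^esub>) \<otimes>\<^bsub>G N\<^esub> opl k m h \<one>\<^bsub>G m\<^esub>) ` carrier (G k)"
    then obtain h where h: "h \<in> carrier (G k)" "y = (a \<otimes>\<^bsub>G N\<^esub> opl k m w \<one>\<^bsub>G m\<^esub>) \<otimes>\<^bsub>G N\<^esub> opl k m h \<one>\<^bsub>G m\<^esub>" by blast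
    have "w \<otimes>\<^bsub>G k\<^esub> h \<in> carrier (G k)" using w h by (simp add: mc)
    then show "y \<in> (\<lambda>h. a \<otimes>\<^bsub>G N\<^esub> opl k m h \<one>\<^bsub>G m\<^esub>) ` carrier (G k)"
      using e[OF h(1)] h(2) by blast
  next
    fix y assume "y \<in> (\<lambda>h. a \<otimes>\<^bsub>G N\<^esub> opl k m h \<one>\<^bsub>G m\<^esub>) ` carrier (G k)"
    then obtain h where h: "h \<in> carrier (G k)" "y = a \<otimes>\<^bsub>G N\<^esub> opl k m h \<one>\<^bsub>G m\<^esub>" by blast
    have "inv\<^bsub>G k\<^esub> w \<otimes>\<^bsub>G k\<^esub> h \<in> carrier (G k)" using w h by (simp add: mc ic)
    then show "y \<in> (\<lambda>h. (a \<otimes>\<^bsub>G N\<^esub> opl k m w \<one>\<^bsub>G m\<^esub>) \<otimes>\<^bsub>G N\<^esub> opl k m h \<one>\<^bsub>G m\<^esub>) ` carrier (G k)"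
      using e2[OF h(1)] h(2) by blast
  qed
qed

lemma cos_mem: "y \<in> l_coset (G N) a ((\<lambda>h. opl k m h \<one>\<^bsub>G m\<^esub>) ` carrier (G k)) \<Longrightarrow>
   \<exists>h\<in>carrier (G k). y = a \<otimes>\<^bsub>G N\<^esub> opl k m h \<one>\<^bsub>G m\<^esub>"
  unfolding cos_char by auto

lemma cos_rep: "N = k + m \<Longrightarrow> a \<in> carrier (G N) \<Longrightarrow>
  y \<in> l_coset (G N) a ((\<lambda>h. opl k m h \<one>\<^bsub>G m\<^esub>) ` carrier (G k)) \<Longrightarrow>
  l_coset (G N) y ((\<lambda>h. opl k m h \<one>\<^bsub>G m\<^esub>) ` carrier (G k))
  = l_coset (G N) a ((\<lambda>h. opl k m h \<one>\<^bsub>G m\<^esub>) ` carrier (G k))"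
  using cos_mem cos_shift by metis

lemma cos_self: "N = k + m \<Longrightarrow> a \<in> carrier (G N) \<Longrightarrow>
  a \<in> l_coset (G N) a ((\<lambda>h. opl k m h \<one>\<^bsub>G m\<^esub>) ` carrier (G k))"
  unfolding cos_char by (auto intro!: image_eqI[where x="\<one>\<^bsub>G k\<^esub>"] simp: oc opl_one ro)

lemma cos_sub: "N = k + m \<Longrightarrow> a \<in> carrier (G N) \<Longrightarrow>
  l_coset (G N) a ((\<lambda>h. opl k m h \<one>\<^bsub>G m\<^esub>) ` carrier (G k)) \<subseteq> carrier (G N)"
  unfolding cos_char by (auto intro!: mc oplc oc)

lemma cos_same: "N = k + m \<Longrightarrow> a \<in> carrier (G N) \<Longrightarrow>
  y1 \<in> l_coset (G N) a ((\<lambda>h. opl k m h \<one>\<^bsub>G m\<^esub>) ` carrier (G k)) \<Longrightarrow>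
  y2 \<in> l_coset (G N) a ((\<lambda>h. opl k m h \<one>\<^bsub>G m\<^esub>) ` carrier (G k)) \<Longrightarrow>
  \<exists>w\<in>carrier (G k). y1 = y2 \<otimes>\<^bsub>G N\<^esub> opl k m w \<one>\<^bsub>G m\<^esub>"
proof -
  assume N: "N = k + m" and a: "a \<in> carrier (G N)" and 1: "y1 \<in> l_coset (G N) a ((\<lambda>h. opl k m h \<one>\<^bsub>G m\<^esub>) ` carrier (G k))"
    and 2: "y2 \<in> l_coset (G N) a ((\<lambda>h. opl k m h \<one>\<^bsub>G m\<^esub>) ` carrier (G k))"
  obtain h1 where h1: "h1 \<in> carrier (G k)" "y1 = a \<otimes>\<^bsub>G N\<^esub> opl k m h1 \<one>\<^bsub>G m\<^esub>" using cos_mem[OF 1] by blast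
  obtain h2 where h2: "h2 \<in> carrier (G k)" "y2 = a \<otimes>\<^bsub>G N\<^esub> opl k m h2 \<one>\<^bsub>G m\<^esub>" using cos_mem[OF 2] by blast
  have hh: "inv\<^bsub>G k\<^esub> h2 \<otimes>\<^bsub>G k\<^esub> h1 \<in> carrier (G k)" using h1 h2 by (simp add: mc ic)
  have c2: "opl k m h2 \<one>\<^bsub>G m\<^esub> \<in> carrier (G N)" using N h2 by (simp add: oplc oc)
  have c3: "opl k m (inv\<^bsub>G k\<^esub> h2 \<otimes>\<^bsub>G k\<^esub> h1) \<one>\<^bsub>G m\<^esub> \<in> carrier (G N)" using N hh by (simp add: oplc oc)
  have "y2 \<otimes>\<^bsub>G N\<^esub> opl k m (inv\<^bsub>G k\<^esub> h2 \<otimes>\<^bsub>G k\<^esub> h1) \<one>\<^bsub>G m\<^esub>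
     = a \<otimes>\<^bsub>G N\<^esub> (opl k m h2 \<one>\<^bsub>G m\<^esub> \<otimes>\<^bsub>G N\<^esub> opl k m (inv\<^bsub>G k\<^esub> h2 \<otimes>\<^bsub>G k\<^esub> h1) \<one>\<^bsub>G m\<^esub>)"
    using h2(2) a c2 c3 by (simp add: ma)
  also have "\<dots> = y1" using N h1 h2 hh emb_mult[of h2 k _ m] by (simp add: ri2)
  finally have "y2 \<otimes>\<^bsub>G N\<^esub> opl k m (inv\<^bsub>G k\<^esub> h2 \<otimes>\<^bsub>G k\<^esub> h1) \<one>\<^bsub>G m\<^esub> = y1" .
  then show ?thesis using h1 h2 by (metis ic mc)
qed

lemma Hom_char: "x \<in> UG_Hom G opl m N \<Longrightarrow> m \<le> N \<and> (\<exists>a\<in>carrier (G N). x = l_coset (G N) a (stab G opl m N))"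
  unfolding UG_Hom_def UG_coset_def by (auto split: if_splits)

lemma comp_coset: "N = k1 + M \<Longrightarrow> M = k2 + l \<Longrightarrow> a \<in> carrier (G N) \<Longrightarrow> y \<in> carrier (G M) \<Longrightarrow>
  UG_comp G opl l M N (l_coset (G N) a (stab G opl M N)) (l_coset (G M) y (stab G opl l M))
  = l_coset (G N) (a \<otimes>\<^bsub>G N\<^esub> opl k1 M \<one>\<^bsub>G k1\<^esub> y) (stab G opl l N)"
proof -
  assume N: "N = k1 + M" and M: "M = k2 + l" and a: "a \<in> carrier (G N)" and y: "y \<in> carrier (G M)"
  have sN: "stab G opl M N = (\<lambda>h. opl k1 M h \<one>\<^bsub>G M\<^esub>) ` carrier (G k1)" using N by (simp add: stab_eq)
  have sM: "stab G opl l M = (\<lambda>h. opl k2 l h \<one>\<^bsub>G l\<^esub>) ` carrier (G k2)" using M by (simp add: stab_eq)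
  have sL: "stab G opl l N = (\<lambda>h. opl (k1+k2) l h \<one>\<^bsub>G l\<^esub>) ` carrier (G (k1+k2))" using N M by (simp add: stab_eq)
  have ay: "a \<otimes>\<^bsub>G N\<^esub> opl k1 M \<one>\<^bsub>G k1\<^esub> y \<in> carrier (G N)" using N a y by (simp add: mc oplc oc)
  have key: "\<And>v w. v \<in> carrier (G k1) \<Longrightarrow> w \<in> carrier (G k2) \<Longrightarrow>
     (a \<otimes>\<^bsub>G N\<^esub> opl k1 M v \<one>\<^bsub>G M\<^esub>) \<otimes>\<^bsub>G N\<^esub> opl (N - M) M \<one>\<^bsub>G (N - M)\<^esub> (y \<otimes>\<^bsub>G M\<^esub> opl k2 l w \<one>\<^bsub>G l\<^esub>)
     = (a \<otimes>\<^bsub>G N\<^esub> opl k1 M \<one>\<^bsub>G k1\<^esub> y) \<otimes>\<^bsub>G N\<^esub> opl (k1+k2) l (opl k1 k2 v w) \<one>\<^bsub>G l\<^esub>"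
  proof -
    fix v w assume v: "v \<in> carrier (G k1)" and w: "w \<in> carrier (G k2)"
    have ww: "opl k2 l w \<one>\<^bsub>G l\<^esub> \<in> carrier (G M)" using M w by (simp add: oplc oc)
    have "(a \<otimes>\<^bsub>G N\<^esub> opl k1 M v \<one>\<^bsub>G M\<^esub>) \<otimes>\<^bsub>G N\<^esub> opl (N - M) M \<one>\<^bsub>G (N - M)\<^esub> (y \<otimes>\<^bsub>G M\<^esub> opl k2 l w \<one>\<^bsub>G l\<^esub>)
        = a \<otimes>\<^bsub>G N\<^esub> opl k1 M v (y \<otimes>\<^bsub>G M\<^esub> opl k2 l w \<one>\<^bsub>G l\<^esub>)"
      using N a v y ww by (simp add: ma oplc oc mc oplm lo ro)
    also have "\<dots> = a \<otimes>\<^bsub>G N\<^esub> (opl k1 M \<one>\<^bsub>G k1\<^esub> y \<otimes>\<^bsub>G N\<^esub> opl k1 M v (opl k2 l w \<one>\<^bsub>G l\<^esub>))"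
      using N a v y ww by (simp add: oplm oc lo)
    also have "opl k1 M v (opl k2 l w \<one>\<^bsub>G l\<^esub>) = opl (k1+k2) l (opl k1 k2 v w) \<one>\<^bsub>G l\<^esub>"
      using M v w by (simp add: oplassoc oc)
    finally show "?thesis v w" using N M a v y w by (simp add: ma oplc oc)
  qed
  have kc: "\<And>v w. v \<in> carrier (G k1) \<Longrightarrow> w \<in> carrier (G k2) \<Longrightarrow> opl k1 k2 v w \<in> carrier (G (k1+k2))"
    by (simp add: oplc)
  have each: "\<And>f g. f \<in> l_coset (G N) a (stab G opl M N) \<Longrightarrow> g \<in> l_coset (G M) y (stab G opl l M) \<Longrightarrow>
     UG_coset G opl l N (f \<otimes>\<^bsub>G N\<^esub> opl (N - M) M \<one>\<^bsub>G (N - M)\<^esub> g)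
     = l_coset (G N) (a \<otimes>\<^bsub>G N\<^esub> opl k1 M \<one>\<^bsub>G k1\<^esub> y) (stab G opl l N)"
  proof -
    fix f g assume f: "f \<in> l_coset (G N) a (stab G opl M N)" and g: "g \<in> l_coset (G M) y (stab G opl l M)"
    obtain v where v: "v \<in> carrier (G k1)" "f = a \<otimes>\<^bsub>G N\<^esub> opl k1 M v \<one>\<^bsub>G M\<^esub>" using cos_mem f sN by metis
    obtain w where w: "w \<in> carrier (G k2)" "g = y \<otimes>\<^bsub>G M\<^esub> opl k2 l w \<one>\<^bsub>G l\<^esub>" using cos_mem g sM by metis
    show "?thesis f g" unfolding UG_coset_def v(2) w(2) key[OF v(1) w(1)] sL
      using N M ay kc[OF v(1) w(1)] by (intro cos_shift) auto
  qed
  have ne1: "a \<in> l_coset (G N) a (stab G opl M N)" using sN N a cos_self by metis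
  have ne2: "y \<in> l_coset (G M) y (stab G opl l M)" using sM M y cos_self by metis
  show ?thesis unfolding UG_comp_def using each ne1 ne2 by blast
qed

lemma stab0: "stab G opl 0 N = carrier (G N)"
  unfolding stab_def by (auto simp: unit_right)

lemma cos_car: "a \<in> carrier (G N) \<Longrightarrow> l_coset (G N) a (carrier (G N)) = carrier (G N)"
  unfolding l_coset_def
proof (intro equalityI subsetI)
  fix y assume a: "a \<in> carrier (G N)" and "y \<in> (\<Union>h\<in>carrier (G N). {a \<otimes>\<^bsub>G N\<^esub> h})"
  then show "y \<in> carrier (G N)" by (auto intro: mc)
next
  fix y assume a: "a \<in> carrier (G N)" and y: "y \<in> carrier (G N)"
  have "y = a \<otimes>\<^bsub>G N\<^esub> (inv\<^bsub>G N\<^esub> a \<otimes>\<^bsub>G N\<^esub> y)" using a y by (simp add: ri2)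
  then show "y \<in> (\<Union>h\<in>carrier (G N). {a \<otimes>\<^bsub>G N\<^esub> h})" using a y by (auto intro!: mc ic)
qed

lemma Hom0: "UG_Hom G opl 0 N = {carrier (G N)}"
  unfolding UG_Hom_def UG_coset_def stab0 using cos_car oc[of N] by (auto intro!: image_eqI)

lemma stabNN: "stab G opl N N = {\<one>\<^bsub>G N\<^esub>}"
  unfolding stab_def using G0_trivial unit_left oc by auto

lemma UGid: "UG_id G opl N = {\<one>\<^bsub>G N\<^esub>}"
  unfolding UG_id_def UG_coset_def stabNN l_coset_def by (simp add: oc lo)

lemma UGiota: "UG_iota G opl N = carrier (G N)"
  unfolding UG_iota_def UG_coset_def stab0 by (simp add: cos_car oc)

lemma Xform: "UG_oplus G opl b K K 0 1 (UG_id G opl K) (UG_iota G opl 1)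
   = l_coset (G (K+1)) (inv\<^bsub>G (K+1)\<^esub> b K 1) (stab G opl K (K+1))"
proof -
  have bc: "b K 1 \<in> carrier (G (K+1))" using braid_closed[of K 1] by simp
  have ibc: "inv\<^bsub>G (K+1)\<^esub> b K 1 \<in> carrier (G (K+1))" using bc by (simp add: ic)
  have st: "stab G opl K (K+1) = (\<lambda>h. opl 1 K h \<one>\<^bsub>G K\<^esub>) ` carrier (G 1)" by (simp add: stab_eq)
  have each: "\<And>f. f \<in> carrier (G 1) \<Longrightarrow> UG_coset G opl (K + 0) (K + 1)
     (opl K 1 \<one>\<^bsub>G K\<^esub> f \<otimes>\<^bsub>G (K + 1)\<^esub>
      opl (K - K) (K + (1 - 0) + 0) \<one>\<^bsub>G (K - K)\<^esub>
       (opl (K + (1 - 0)) 0 (inv\<^bsub>G (K + (1 - 0))\<^esub> b K (1 - 0)) \<one>\<^bsub>G 0\<^esub>))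
     = l_coset (G (K+1)) (inv\<^bsub>G (K+1)\<^esub> b K 1) (stab G opl K (K+1))"
  proof -
    fix f assume f: "f \<in> carrier (G 1)"
    have e1: "opl (K - K) (K + (1 - 0) + 0) \<one>\<^bsub>G (K - K)\<^esub>
       (opl (K + (1 - 0)) 0 (inv\<^bsub>G (K + (1 - 0))\<^esub> b K (1 - 0)) \<one>\<^bsub>G 0\<^esub>) = inv\<^bsub>G (K+1)\<^esub> b K 1"
      using ibc by (simp add: unit_right unit_left)
    have nat: "b K 1 \<otimes>\<^bsub>G (K+1)\<^esub> opl K 1 \<one>\<^bsub>G K\<^esub> f = opl 1 K f \<one>\<^bsub>G K\<^esub> \<otimes>\<^bsub>G (K+1)\<^esub> b K 1"
      using braid_natural[of "\<one>\<^bsub>G K\<^esub>" K f 1] f by (simp add: oc)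
    have c1: "opl K 1 \<one>\<^bsub>G K\<^esub> f \<in> carrier (G (K+1))" using f by (simp add: oplc oc)
    have c2: "opl 1 K f \<one>\<^bsub>G K\<^esub> \<in> carrier (G (K+1))" using f by (simp add: oplc oc)
    have e2: "opl K 1 \<one>\<^bsub>G K\<^esub> f \<otimes>\<^bsub>G (K + 1)\<^esub> inv\<^bsub>G (K+1)\<^esub> b K 1
       = inv\<^bsub>G (K+1)\<^esub> b K 1 \<otimes>\<^bsub>G (K + 1)\<^esub> opl 1 K f \<one>\<^bsub>G K\<^esub>"
    proof -
      have "opl K 1 \<one>\<^bsub>G K\<^esub> f \<otimes>\<^bsub>G (K + 1)\<^esub> inv\<^bsub>G (K+1)\<^esub> b K 1
         = inv\<^bsub>G (K+1)\<^esub> b K 1 \<otimes>\<^bsub>G (K + 1)\<^esub> (b K 1 \<otimes>\<^bsub>G (K+1)\<^esub> opl K 1 \<one>\<^bsub>G K\<^esub> f) \<otimes>\<^bsub>G (K + 1)\<^esub> inv\<^bsub>G (K+1)\<^esub> b K 1"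
        using bc c1 ibc by (simp add: li2)
      also have "\<dots> = inv\<^bsub>G (K+1)\<^esub> b K 1 \<otimes>\<^bsub>G (K + 1)\<^esub> opl 1 K f \<one>\<^bsub>G K\<^esub>"
        unfolding nat using bc c2 ibc by (simp add: ma ri ro mc)
      finally show ?thesis .
    qed
    have "l_coset (G (K+1)) (inv\<^bsub>G (K+1)\<^esub> b K 1 \<otimes>\<^bsub>G (K + 1)\<^esub> opl 1 K f \<one>\<^bsub>G K\<^esub>) (stab G opl K (K+1))
       = l_coset (G (K+1)) (inv\<^bsub>G (K+1)\<^esub> b K 1) (stab G opl K (K+1))"
      unfolding st using f ibc by (intro cos_shift) auto
    then show "?thesis f" unfolding e1 e2 UG_coset_def by simp
  qed
  show ?thesis unfolding UG_oplus_def UGid UGiota using each oc[of 1] by auto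
qed

lemma face2: "K = r + m \<Longrightarrow> y \<in> carrier (G K) \<Longrightarrow>
  UG_comp G opl m K (K + 1) (UG_oplus G opl b K K 0 1 (UG_id G opl K) (UG_iota G opl 1))
     (l_coset (G K) y (stab G opl m K))
  = l_coset (G (K+1)) (opl K 1 y \<one>\<^bsub>G 1\<^esub> \<otimes>\<^bsub>G (K+1)\<^esub> opl r (m+1) \<one>\<^bsub>G r\<^esub> (inv\<^bsub>G (m+1)\<^esub> b m 1)) (stab G opl m (K+1))"
proof -
  assume K: "K = r + m" and y: "y \<in> carrier (G K)"
  have bc: "b K 1 \<in> carrier (G (K+1))" using braid_closed[of K 1] by simp
  have ibc: "inv\<^bsub>G (K+1)\<^esub> b K 1 \<in> carrier (G (K+1))" using bc by (simp add: ic)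
  have "UG_comp G opl m K (K + 1) (UG_oplus G opl b K K 0 1 (UG_id G opl K) (UG_iota G opl 1))
     (l_coset (G K) y (stab G opl m K)) = l_coset (G (K+1)) (inv\<^bsub>G (K+1)\<^esub> b K 1 \<otimes>\<^bsub>G (K+1)\<^esub> opl 1 K \<one>\<^bsub>G 1\<^esub> y) (stab G opl m (K+1))"
    unfolding Xform using K y ibc by (intro comp_coset) auto
  also have "inv\<^bsub>G (K+1)\<^esub> b K 1 \<otimes>\<^bsub>G (K+1)\<^esub> opl 1 K \<one>\<^bsub>G 1\<^esub> y = opl K 1 y \<one>\<^bsub>G 1\<^esub> \<otimes>\<^bsub>G (K+1)\<^esub> inv\<^bsub>G (K+1)\<^esub> b K 1"
  proof -
    have nat: "b K 1 \<otimes>\<^bsub>G (K+1)\<^esub> opl K 1 y \<one>\<^bsub>G 1\<^esub> = opl 1 K \<one>\<^bsub>G 1\<^esub> y \<otimes>\<^bsub>G (K+1)\<^esub> b K 1"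
      using braid_natural[of y K "\<one>\<^bsub>G 1\<^esub>" 1] y by (simp add: oc)
    have c1: "opl K 1 y \<one>\<^bsub>G 1\<^esub> \<in> carrier (G (K+1))" using y by (simp add: oplc oc)
    have c2: "opl 1 K \<one>\<^bsub>G 1\<^esub> y \<in> carrier (G (K+1))" using y by (simp add: oplc oc)
    have "opl K 1 y \<one>\<^bsub>G 1\<^esub> \<otimes>\<^bsub>G (K+1)\<^esub> inv\<^bsub>G (K+1)\<^esub> b K 1
       = inv\<^bsub>G (K+1)\<^esub> b K 1 \<otimes>\<^bsub>G (K + 1)\<^esub> (b K 1 \<otimes>\<^bsub>G (K+1)\<^esub> opl K 1 y \<one>\<^bsub>G 1\<^esub>) \<otimes>\<^bsub>G (K + 1)\<^esub> inv\<^bsub>G (K+1)\<^esub> b K 1"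
      using bc c1 ibc by (simp add: li2)
    also have "\<dots> = inv\<^bsub>G (K+1)\<^esub> b K 1 \<otimes>\<^bsub>G (K + 1)\<^esub> opl 1 K \<one>\<^bsub>G 1\<^esub> y"
      unfolding nat using bc c2 ibc by (simp add: ma ri ro mc)
    finally show ?thesis by simp
  qed
  also have "inv\<^bsub>G (K+1)\<^esub> b K 1 = opl r (m+1) \<one>\<^bsub>G r\<^esub> (inv\<^bsub>G (m+1)\<^esub> b m 1) \<otimes>\<^bsub>G (K+1)\<^esub> opl (r+1) m (inv\<^bsub>G (r+1)\<^esub> b r 1) \<one>\<^bsub>G m\<^esub>"
  proof -
    have h: "b K 1 = opl (r + 1) m (b r 1) \<one>\<^bsub>G m\<^esub> \<otimes>\<^bsub>G (K+1)\<^esub> opl r (m + 1) \<one>\<^bsub>G r\<^esub> (b m 1)"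
      using hexagon2[of r m 1] K by simp
    have c1: "opl (r + 1) m (b r 1) \<one>\<^bsub>G m\<^esub> \<in> carrier (G (K+1))" using K braid_closed[of r 1] by (simp add: oplc oc)
    have c2: "opl r (m + 1) \<one>\<^bsub>G r\<^esub> (b m 1) \<in> carrier (G (K+1))" using K braid_closed[of m 1] by (simp add: oplc oc)
    show ?thesis unfolding h using c1 c2 K braid_closed[of r 1] braid_closed[of m 1]
      by (simp add: invmult opl_inv oc invone)
  qed
  also have "l_coset (G (K+1)) (opl K 1 y \<one>\<^bsub>G 1\<^esub> \<otimes>\<^bsub>G (K+1)\<^esub> (opl r (m+1) \<one>\<^bsub>G r\<^esub> (inv\<^bsub>G (m+1)\<^esub> b m 1) \<otimes>\<^bsub>G (K+1)\<^esub> opl (r+1) m (inv\<^bsub>G (r+1)\<^esub> b r 1) \<one>\<^bsub>G m\<^esub>)) (stab G opl m (K+1))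
     = l_coset (G (K+1)) (opl K 1 y \<one>\<^bsub>G 1\<^esub> \<otimes>\<^bsub>G (K+1)\<^esub> opl r (m+1) \<one>\<^bsub>G r\<^esub> (inv\<^bsub>G (m+1)\<^esub> b m 1)) (stab G opl m (K+1))"
  proof -
    have c1: "opl K 1 y \<one>\<^bsub>G 1\<^esub> \<in> carrier (G (K+1))" using y by (simp add: oplc oc)
    have c2: "opl r (m+1) \<one>\<^bsub>G r\<^esub> (inv\<^bsub>G (m+1)\<^esub> b m 1) \<in> carrier (G (K+1))" using K braid_closed[of m 1] by (simp add: oplc oc ic)
    have c3: "opl (r+1) m (inv\<^bsub>G (r+1)\<^esub> b r 1) \<one>\<^bsub>G m\<^esub> \<in> carrier (G (K+1))" using K braid_closed[of r 1] by (simp add: oplc oc ic)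
    have st: "stab G opl m (K+1) = (\<lambda>h. opl (r+1) m h \<one>\<^bsub>G m\<^esub>) ` carrier (G (r+1))" using K by (simp add: stab_eq)
    have "l_coset (G (K+1)) ((opl K 1 y \<one>\<^bsub>G 1\<^esub> \<otimes>\<^bsub>G (K+1)\<^esub> opl r (m+1) \<one>\<^bsub>G r\<^esub> (inv\<^bsub>G (m+1)\<^esub> b m 1)) \<otimes>\<^bsub>G (K+1)\<^esub> opl (r+1) m (inv\<^bsub>G (r+1)\<^esub> b r 1) \<one>\<^bsub>G m\<^esub>) (stab G opl m (K+1))
     = l_coset (G (K+1)) (opl K 1 y \<one>\<^bsub>G 1\<^esub> \<otimes>\<^bsub>G (K+1)\<^esub> opl r (m+1) \<one>\<^bsub>G r\<^esub> (inv\<^bsub>G (m+1)\<^esub> b m 1)) (stab G opl m (K+1))"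
      unfolding st apply (rule cos_shift[of "K+1" "r+1" m])
      using c1 c2 K braid_closed[of r 1] by (auto intro!: mc ic)
    then show ?thesis using c1 c2 c3 by (simp add: ma)
  qed
  finally show ?thesis by simp
qed

lemma conj_nat: "N = K + L \<Longrightarrow> x \<in> carrier (G K) \<Longrightarrow> y \<in> carrier (G L) \<Longrightarrow>
  opl K L x y \<otimes>\<^bsub>G N\<^esub> inv\<^bsub>G N\<^esub> (b K L) = inv\<^bsub>G N\<^esub> (b K L) \<otimes>\<^bsub>G N\<^esub> opl L K y x"
proof -
  assume N: "N = K + L" and x: "x \<in> carrier (G K)" and y: "y \<in> carrier (G L)"
  have bc: "b K L \<in> carrier (G N)" using N braid_closed by simp
  have nat: "b K L \<otimes>\<^bsub>G N\<^esub> opl K L x y = opl L K y x \<otimes>\<^bsub>G N\<^esub> b K L"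
    using braid_natural[OF x y] N by simp
  have c1: "opl K L x y \<in> carrier (G N)" using N x y by (simp add: oplc)
  have c2: "opl L K y x \<in> carrier (G N)" using N x y by (simp add: oplc)
  have "opl K L x y \<otimes>\<^bsub>G N\<^esub> inv\<^bsub>G N\<^esub> (b K L)
     = inv\<^bsub>G N\<^esub> b K L \<otimes>\<^bsub>G N\<^esub> (b K L \<otimes>\<^bsub>G N\<^esub> opl K L x y) \<otimes>\<^bsub>G N\<^esub> inv\<^bsub>G N\<^esub> b K L"
    using bc c1 by (simp add: li2 ic)
  also have "\<dots> = inv\<^bsub>G N\<^esub> (b K L) \<otimes>\<^bsub>G N\<^esub> opl L K y x"
    unfolding nat using bc c2 by (simp add: ma ri ro mc ic)
  finally show ?thesis .
qed

lemma core:
  assumes n: "n = r + m + Suc q0" and K: "K = r + m"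
    and g: "g \<in> carrier (G n)" and y: "y \<in> carrier (G K)" and c: "c \<in> carrier (G (Suc q0))"
  shows "(g \<otimes>\<^bsub>G n\<^esub> opl K (Suc q0) \<one>\<^bsub>G K\<^esub> c) \<otimes>\<^bsub>G n\<^esub>
      opl (K+1) q0 (opl K 1 y \<one>\<^bsub>G 1\<^esub> \<otimes>\<^bsub>G (K+1)\<^esub> opl r (m+1) \<one>\<^bsub>G r\<^esub> (inv\<^bsub>G (m+1)\<^esub> b m 1)) \<one>\<^bsub>G q0\<^esub>
      \<otimes>\<^bsub>G n\<^esub> opl (r+1) (m+q0) \<one>\<^bsub>G (r+1)\<^esub> (inv\<^bsub>G (m+q0)\<^esub> b m q0)
    = g \<otimes>\<^bsub>G n\<^esub> opl K (Suc q0) y \<one>\<^bsub>G (Suc q0)\<^esub> \<otimes>\<^bsub>G n\<^esub> opl r (m + Suc q0) \<one>\<^bsub>G r\<^esub> (inv\<^bsub>G (m + Suc q0)\<^esub> b m (Suc q0))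
      \<otimes>\<^bsub>G n\<^esub> opl (r + Suc q0) m (opl r (Suc q0) \<one>\<^bsub>G r\<^esub> c) \<one>\<^bsub>G m\<^esub>"
proof -
  let ?q = "Suc q0"
  let ?Z = "m + Suc q0"
  let ?ib1 = "inv\<^bsub>G (m+1)\<^esub> b m 1"
  let ?jb = "inv\<^bsub>G (m+q0)\<^esub> b m q0"
  let ?ibq = "inv\<^bsub>G ?Z\<^esub> b m ?q"
  have ib1: "?ib1 \<in> carrier (G (m+1))" using braid_closed[of m 1] by (simp add: ic)
  have ibq0: "?jb \<in> carrier (G (m+q0))" using braid_closed[of m q0] by (simp add: ic)
  have ibq: "?ibq \<in> carrier (G ?Z)" using braid_closed[of m ?q] by (simp add: ic)
  have n2: "n = r + ?Z" using n by simp
  have F1: "opl K ?q \<one>\<^bsub>G K\<^esub> c = opl r ?Z \<one>\<^bsub>G r\<^esub> (opl m ?q \<one>\<^bsub>G m\<^esub> c)"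
  proof -
    have "opl K ?q \<one>\<^bsub>G K\<^esub> c = opl (r+m) ?q (opl r m \<one>\<^bsub>G r\<^esub> \<one>\<^bsub>G m\<^esub>) c" using K by (simp add: opl_one)
    also have "\<dots> = opl r ?Z \<one>\<^bsub>G r\<^esub> (opl m ?q \<one>\<^bsub>G m\<^esub> c)" using c by (intro oplassoc) (auto simp: oc)
    finally show ?thesis .
  qed
  have F2: "opl (K+1) q0 (opl K 1 y \<one>\<^bsub>G 1\<^esub> \<otimes>\<^bsub>G (K+1)\<^esub> opl r (m+1) \<one>\<^bsub>G r\<^esub> ?ib1) \<one>\<^bsub>G q0\<^esub>
     = opl K ?q y \<one>\<^bsub>G ?q\<^esub> \<otimes>\<^bsub>G n\<^esub> opl r ?Z \<one>\<^bsub>G r\<^esub> (opl (m+1) q0 ?ib1 \<one>\<^bsub>G q0\<^esub>)"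
  proof -
    have "opl (K+1) q0 (opl K 1 y \<one>\<^bsub>G 1\<^esub> \<otimes>\<^bsub>G (K+1)\<^esub> opl r (m+1) \<one>\<^bsub>G r\<^esub> ?ib1) \<one>\<^bsub>G q0\<^esub>
       = opl (K+1) q0 (opl K 1 y \<one>\<^bsub>G 1\<^esub>) \<one>\<^bsub>G q0\<^esub> \<otimes>\<^bsub>G n\<^esub> opl (K+1) q0 (opl r (m+1) \<one>\<^bsub>G r\<^esub> ?ib1) \<one>\<^bsub>G q0\<^esub>"
      using n K y ib1 by (subst oplm) (auto simp: oplc oc lo)
    also have "opl (K+1) q0 (opl K 1 y \<one>\<^bsub>G 1\<^esub>) \<one>\<^bsub>G q0\<^esub> = opl K (1+q0) y (opl 1 q0 \<one>\<^bsub>G 1\<^esub> \<one>\<^bsub>G q0\<^esub>)"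
      using y by (intro oplassoc) (auto simp: oc)
    also have "opl (K+1) q0 (opl r (m+1) \<one>\<^bsub>G r\<^esub> ?ib1) \<one>\<^bsub>G q0\<^esub> = opl r (m+1+q0) \<one>\<^bsub>G r\<^esub> (opl (m+1) q0 ?ib1 \<one>\<^bsub>G q0\<^esub>)"
      using K ib1 by (intro oplassoc) (auto simp: oc)
    finally show ?thesis by (simp add: opl_one)
  qed
  have F3: "opl (r+1) (m+q0) \<one>\<^bsub>G (r+1)\<^esub> ?jb = opl r ?Z \<one>\<^bsub>G r\<^esub> (opl 1 (m+q0) \<one>\<^bsub>G 1\<^esub> ?jb)"
  proof -
    have "opl (r+1) (m+q0) \<one>\<^bsub>G (r+1)\<^esub> ?jb = opl (r+1) (m+q0) (opl r 1 \<one>\<^bsub>G r\<^esub> \<one>\<^bsub>G 1\<^esub>) ?jb" by (simp add: opl_one)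
    also have "\<dots> = opl r (1 + (m+q0)) \<one>\<^bsub>G r\<^esub> (opl 1 (m+q0) \<one>\<^bsub>G 1\<^esub> ?jb)" using ibq0 by (intro oplassoc) (auto simp: oc)
    finally show ?thesis by simp
  qed
  have F6: "opl (r + ?q) m (opl r ?q \<one>\<^bsub>G r\<^esub> c) \<one>\<^bsub>G m\<^esub> = opl r ?Z \<one>\<^bsub>G r\<^esub> (opl ?q m c \<one>\<^bsub>G m\<^esub>)"
  proof -
    have "opl (r + ?q) m (opl r ?q \<one>\<^bsub>G r\<^esub> c) \<one>\<^bsub>G m\<^esub> = opl r (?q + m) \<one>\<^bsub>G r\<^esub> (opl ?q m c \<one>\<^bsub>G m\<^esub>)"
      using c by (intro oplassoc) (auto simp: oc)
    then show ?thesis by (simp add: add.commute)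
  qed
  have hex: "b m ?q = opl 1 (m + q0) \<one>\<^bsub>G 1\<^esub> (b m q0) \<otimes>\<^bsub>G ?Z\<^esub> opl (m + 1) q0 (b m 1) \<one>\<^bsub>G q0\<^esub>"
    using hexagon1[of m 1 q0] by simp
  have ibq_eq: "?ibq = opl (m+1) q0 ?ib1 \<one>\<^bsub>G q0\<^esub> \<otimes>\<^bsub>G ?Z\<^esub> opl 1 (m+q0) \<one>\<^bsub>G 1\<^esub> ?jb"
  proof -
    have c1: "opl 1 (m + q0) \<one>\<^bsub>G 1\<^esub> (b m q0) \<in> carrier (G ?Z)" using braid_closed[of m q0] by (simp add: oplc oc)
    have c2: "opl (m + 1) q0 (b m 1) \<one>\<^bsub>G q0\<^esub> \<in> carrier (G ?Z)" using braid_closed[of m 1] by (simp add: oplc oc)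
    show ?thesis unfolding hex using c1 c2 braid_closed[of m q0] braid_closed[of m 1]
      by (simp add: invmult opl_inv oc invone)
  qed
  have inner: "opl m ?q \<one>\<^bsub>G m\<^esub> c \<otimes>\<^bsub>G ?Z\<^esub> (opl (m+1) q0 ?ib1 \<one>\<^bsub>G q0\<^esub> \<otimes>\<^bsub>G ?Z\<^esub> opl 1 (m+q0) \<one>\<^bsub>G 1\<^esub> ?jb)
     = ?ibq \<otimes>\<^bsub>G ?Z\<^esub> opl ?q m c \<one>\<^bsub>G m\<^esub>"
    unfolding ibq_eq[symmetric] using conj_nat[of ?Z m ?q "\<one>\<^bsub>G m\<^esub>" c] c by (simp add: oc)
  have cF1: "opl r ?Z \<one>\<^bsub>G r\<^esub> (opl m ?q \<one>\<^bsub>G m\<^esub> c) \<in> carrier (G n)" using n2 c by (simp add: oplc oc)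
  have cF2b: "opl r ?Z \<one>\<^bsub>G r\<^esub> (opl (m+1) q0 ?ib1 \<one>\<^bsub>G q0\<^esub>) \<in> carrier (G n)" using n2 ib1 by (simp add: oplc oc)
  have cF3: "opl r ?Z \<one>\<^bsub>G r\<^esub> (opl 1 (m+q0) \<one>\<^bsub>G 1\<^esub> ?jb) \<in> carrier (G n)" using n2 ibq0 by (simp add: oplc oc)
  have cF4: "opl K ?q y \<one>\<^bsub>G ?q\<^esub> \<in> carrier (G n)" using n K y by (simp add: oplc oc)
  have cF5: "opl r ?Z \<one>\<^bsub>G r\<^esub> ?ibq \<in> carrier (G n)" using n2 ibq by (simp add: oplc oc)
  have cF6: "opl r ?Z \<one>\<^bsub>G r\<^esub> (opl ?q m c \<one>\<^bsub>G m\<^esub>) \<in> carrier (G n)" using n2 c by (simp add: oplc oc)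
  have cA: "opl m ?q \<one>\<^bsub>G m\<^esub> c \<in> carrier (G ?Z)" using c by (simp add: oplc oc)
  have cB: "opl (m+1) q0 ?ib1 \<one>\<^bsub>G q0\<^esub> \<in> carrier (G ?Z)" using ib1 by (simp add: oplc oc)
  have cC: "opl 1 (m+q0) \<one>\<^bsub>G 1\<^esub> ?jb \<in> carrier (G ?Z)" using ibq0 by (simp add: oplc oc)
  have cD: "opl ?q m c \<one>\<^bsub>G m\<^esub> \<in> carrier (G ?Z)" using c by (simp add: oplc oc)
  have comm: "opl r ?Z \<one>\<^bsub>G r\<^esub> (opl m ?q \<one>\<^bsub>G m\<^esub> c) \<otimes>\<^bsub>G n\<^esub> opl K ?q y \<one>\<^bsub>G ?q\<^esub>
     = opl K ?q y \<one>\<^bsub>G ?q\<^esub> \<otimes>\<^bsub>G n\<^esub> opl r ?Z \<one>\<^bsub>G r\<^esub> (opl m ?q \<one>\<^bsub>G m\<^esub> c)"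
    unfolding F1[symmetric] using n K y c by (simp add: oplm oc lo ro)
  have prod: "opl r ?Z \<one>\<^bsub>G r\<^esub> (opl m ?q \<one>\<^bsub>G m\<^esub> c) \<otimes>\<^bsub>G n\<^esub> (opl r ?Z \<one>\<^bsub>G r\<^esub> (opl (m+1) q0 ?ib1 \<one>\<^bsub>G q0\<^esub>)
      \<otimes>\<^bsub>G n\<^esub> opl r ?Z \<one>\<^bsub>G r\<^esub> (opl 1 (m+q0) \<one>\<^bsub>G 1\<^esub> ?jb))
     = opl r ?Z \<one>\<^bsub>G r\<^esub> ?ibq \<otimes>\<^bsub>G n\<^esub> opl r ?Z \<one>\<^bsub>G r\<^esub> (opl ?q m c \<one>\<^bsub>G m\<^esub>)"
    using n2 cA cB cC cD ibq inner by (simp add: oplm oc lo mc)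
  have "(g \<otimes>\<^bsub>G n\<^esub> opl K ?q \<one>\<^bsub>G K\<^esub> c) \<otimes>\<^bsub>G n\<^esub>
      opl (K+1) q0 (opl K 1 y \<one>\<^bsub>G 1\<^esub> \<otimes>\<^bsub>G (K+1)\<^esub> opl r (m+1) \<one>\<^bsub>G r\<^esub> ?ib1) \<one>\<^bsub>G q0\<^esub>
      \<otimes>\<^bsub>G n\<^esub> opl (r+1) (m+q0) \<one>\<^bsub>G (r+1)\<^esub> ?jb
    = g \<otimes>\<^bsub>G n\<^esub> ((opl r ?Z \<one>\<^bsub>G r\<^esub> (opl m ?q \<one>\<^bsub>G m\<^esub> c) \<otimes>\<^bsub>G n\<^esub> opl K ?q y \<one>\<^bsub>G ?q\<^esub>) \<otimes>\<^bsub>G n\<^esub>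
       (opl r ?Z \<one>\<^bsub>G r\<^esub> (opl (m+1) q0 ?ib1 \<one>\<^bsub>G q0\<^esub>) \<otimes>\<^bsub>G n\<^esub> opl r ?Z \<one>\<^bsub>G r\<^esub> (opl 1 (m+q0) \<one>\<^bsub>G 1\<^esub> ?jb)))"
    unfolding F1 F2 F3 using g cF1 cF2b cF3 cF4 by (simp add: ma mc)
  also have "\<dots> = g \<otimes>\<^bsub>G n\<^esub> (opl K ?q y \<one>\<^bsub>G ?q\<^esub> \<otimes>\<^bsub>G n\<^esub> (opl r ?Z \<one>\<^bsub>G r\<^esub> ?ibq \<otimes>\<^bsub>G n\<^esub> opl r ?Z \<one>\<^bsub>G r\<^esub> (opl ?q m c \<one>\<^bsub>G m\<^esub>)))"
    unfolding comm using cF1 cF2b cF3 cF4 prod by (simp add: ma mc)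
  also have "\<dots> = g \<otimes>\<^bsub>G n\<^esub> opl K ?q y \<one>\<^bsub>G ?q\<^esub> \<otimes>\<^bsub>G n\<^esub> opl r ?Z \<one>\<^bsub>G r\<^esub> ?ibq
      \<otimes>\<^bsub>G n\<^esub> opl (r + ?q) m (opl r ?q \<one>\<^bsub>G r\<^esub> c) \<one>\<^bsub>G m\<^esub>"
    unfolding F6 using g cF4 cF5 cF6 by (simp add: ma mc)
  finally show ?thesis .
qed

end


context braided_stability_groupoid begin

definition beta :: "nat \<Rightarrow> nat \<Rightarrow> nat \<Rightarrow> 'g" where
  "beta n m q = opl (n - q - m) (m + q) \<one>\<^bsub>G (n - q - m)\<^esub> (inv\<^bsub>G (m + q)\<^esub> b m q)"

definition Wt :: "nat \<Rightarrow> nat \<Rightarrow> nat \<Rightarrow> 'g \<Rightarrow> 'g \<times> 'g set \<Rightarrow> 'g \<Rightarrow> bool" where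
  "Wt n m q s z u = (u \<in> carrier (G (n - m)) \<and> (\<exists>y\<in>snd z.
      fst z \<otimes>\<^bsub>G n\<^esub> opl (n - q) q y \<one>\<^bsub>G q\<^esub> \<otimes>\<^bsub>G n\<^esub> beta n m q = s \<otimes>\<^bsub>G n\<^esub> opl (n - m) m u \<one>\<^bsub>G m\<^esub>))"

definition inC :: "nat \<Rightarrow> nat \<Rightarrow> nat \<Rightarrow> 'g \<Rightarrow> 'g \<times> 'g set \<Rightarrow> bool" where
  "inC n m q s z = (s \<in> carrier (G n) \<and> (\<exists>u. Wt n m q s z u))"

definition wit :: "nat \<Rightarrow> nat \<Rightarrow> nat \<Rightarrow> 'g \<Rightarrow> 'g \<times> 'g set \<Rightarrow> 'g" where
  "wit n m q s z = (SOME u. Wt n m q s z u)"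

definition canon :: "nat \<Rightarrow> nat \<Rightarrow> nat \<Rightarrow> 'g \<times> 'g set \<Rightarrow> 'g" where
  "canon n m q z = (SOME s. inC n m q s z)"

definition PB :: "nat \<Rightarrow> nat \<Rightarrow> nat \<Rightarrow> 'g \<Rightarrow> 'g \<times> 'g set \<Rightarrow> 'g \<times> 'g set \<Rightarrow> 'r::comm_ring_1" where
  "PB n m q s z = (if inC n m q s z then delta (wit n m q s z, carrier (G (n - m - q))) else (\<lambda>_. 0))"

definition TB :: "nat \<Rightarrow> nat \<Rightarrow> nat \<Rightarrow> 'g \<Rightarrow> 'g \<times> 'g set \<Rightarrow> 'g \<times> 'g set \<Rightarrow> 'r::comm_ring_1" where
  "TB n m q s z = delta (s \<otimes>\<^bsub>G n\<^esub> opl (n - m) m (fst z) \<one>\<^bsub>G m\<^esub> \<otimes>\<^bsub>G n\<^esub> inv\<^bsub>G n\<^esub> (beta n m q), stab G opl m (n - q))"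

lemma beta_eq: "n = r + m + q \<Longrightarrow> beta n m q = opl r (m + q) \<one>\<^bsub>G r\<^esub> (inv\<^bsub>G (m + q)\<^esub> b m q)"
  unfolding beta_def by simp

lemma beta_c: "n = r + m + q \<Longrightarrow> beta n m q \<in> carrier (G n)"
  using braid_closed[of m q] by (simp add: beta_eq oplc oc ic)

lemma K1: "n = r + m + q \<Longrightarrow> w \<in> carrier (G r) \<Longrightarrow>
  opl (r + m) q (opl r m w \<one>\<^bsub>G m\<^esub>) \<one>\<^bsub>G q\<^esub> \<otimes>\<^bsub>G n\<^esub> beta n m q
  = beta n m q \<otimes>\<^bsub>G n\<^esub> opl (r + q) m (opl r q w \<one>\<^bsub>G q\<^esub>) \<one>\<^bsub>G m\<^esub>"
proof -
  assume n: "n = r + m + q" and w: "w \<in> carrier (G r)"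
  have ib: "inv\<^bsub>G (m + q)\<^esub> b m q \<in> carrier (G (m+q))" using braid_closed[of m q] by (simp add: ic)
  have e1: "opl (r + m) q (opl r m w \<one>\<^bsub>G m\<^esub>) \<one>\<^bsub>G q\<^esub> = opl r (m+q) w \<one>\<^bsub>G (m+q)\<^esub>"
    using w by (subst oplassoc[of w r _ m _ q]) (auto simp: oc opl_one)
  have e2: "opl (r + q) m (opl r q w \<one>\<^bsub>G q\<^esub>) \<one>\<^bsub>G m\<^esub> = opl r (m+q) w \<one>\<^bsub>G (m+q)\<^esub>"
    using w by (subst oplassoc[of w r _ q _ m]) (auto simp: oc opl_one add.commute)
  show ?thesis unfolding e1 e2 beta_eq[OF n] using n w ib
    by (simp add: oplm oc lo ro)
qed

lemma Cbasis_char: "z \<in> Cbasis G opl m n q \<Longrightarrow> q \<le> n \<and> m \<le> n - q \<and> fst z \<in> carrier (G n) \<and>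
   (\<exists>a\<in>carrier (G (n - q)). snd z = l_coset (G (n - q)) a (stab G opl m (n - q)))"
  unfolding Cbasis_def using Hom_char by (auto split: if_splits)

lemma emb_mult': "N = k + m \<Longrightarrow> w \<in> carrier (G k) \<Longrightarrow> h \<in> carrier (G k) \<Longrightarrow>
  opl k m w \<one>\<^bsub>G m\<^esub> \<otimes>\<^bsub>G N\<^esub> opl k m h \<one>\<^bsub>G m\<^esub> = opl k m (w \<otimes>\<^bsub>G k\<^esub> h) \<one>\<^bsub>G m\<^esub>"
  using emb_mult by simp

lemma embc: "N = k + m \<Longrightarrow> w \<in> carrier (G k) \<Longrightarrow> opl k m w \<one>\<^bsub>G m\<^esub> \<in> carrier (G N)"
  by (simp add: oplc oc)

lemma emb_inj: "w \<in> carrier (G k) \<Longrightarrow> h \<in> carrier (G k) \<Longrightarrow>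
  opl k m w \<one>\<^bsub>G m\<^esub> = opl k m h \<one>\<^bsub>G m\<^esub> \<Longrightarrow> w = h"
  using opl_inj oc by blast

lemma Sh: "n = r + m + q \<Longrightarrow> g \<in> carrier (G n) \<Longrightarrow> y1 \<in> carrier (G (r + m)) \<Longrightarrow> w \<in> carrier (G r) \<Longrightarrow>
  g \<otimes>\<^bsub>G n\<^esub> opl (r + m) q (y1 \<otimes>\<^bsub>G (r+m)\<^esub> opl r m w \<one>\<^bsub>G m\<^esub>) \<one>\<^bsub>G q\<^esub> \<otimes>\<^bsub>G n\<^esub> beta n m q
  = g \<otimes>\<^bsub>G n\<^esub> opl (r + m) q y1 \<one>\<^bsub>G q\<^esub> \<otimes>\<^bsub>G n\<^esub> beta n m q \<otimes>\<^bsub>G n\<^esub> opl (r + q) m (opl r q w \<one>\<^bsub>G q\<^esub>) \<one>\<^bsub>G m\<^esub>"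
proof -
  assume n: "n = r + m + q" and g: "g \<in> carrier (G n)" and y1: "y1 \<in> carrier (G (r + m))" and w: "w \<in> carrier (G r)"
  have c1: "opl (r + m) q y1 \<one>\<^bsub>G q\<^esub> \<in> carrier (G n)" using n y1 by (simp add: oplc oc)
  have c2: "opl (r + m) q (opl r m w \<one>\<^bsub>G m\<^esub>) \<one>\<^bsub>G q\<^esub> \<in> carrier (G n)" using n w by (simp add: oplc oc)
  have c3: "opl (r + q) m (opl r q w \<one>\<^bsub>G q\<^esub>) \<one>\<^bsub>G m\<^esub> \<in> carrier (G n)" using n w by (simp add: oplc oc)
  have bc: "beta n m q \<in> carrier (G n)" using n by (rule beta_c)
  have wm: "opl r m w \<one>\<^bsub>G m\<^esub> \<in> carrier (G (r+m))" using w by (simp add: oplc oc)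
  have "opl (r + m) q (y1 \<otimes>\<^bsub>G (r+m)\<^esub> opl r m w \<one>\<^bsub>G m\<^esub>) \<one>\<^bsub>G q\<^esub>
     = opl (r + m) q y1 \<one>\<^bsub>G q\<^esub> \<otimes>\<^bsub>G n\<^esub> opl (r + m) q (opl r m w \<one>\<^bsub>G m\<^esub>) \<one>\<^bsub>G q\<^esub>"
    using n y1 wm by (subst oplm[of n "r+m" q]) (auto simp: oc lo)
  then have "g \<otimes>\<^bsub>G n\<^esub> opl (r + m) q (y1 \<otimes>\<^bsub>G (r+m)\<^esub> opl r m w \<one>\<^bsub>G m\<^esub>) \<one>\<^bsub>G q\<^esub> \<otimes>\<^bsub>G n\<^esub> beta n m q
     = g \<otimes>\<^bsub>G n\<^esub> (opl (r + m) q y1 \<one>\<^bsub>G q\<^esub> \<otimes>\<^bsub>G n\<^esub> (opl (r + m) q (opl r m w \<one>\<^bsub>G m\<^esub>) \<one>\<^bsub>G q\<^esub> \<otimes>\<^bsub>G n\<^esub> beta n m q))"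
    using g c1 c2 bc by (simp add: ma mc)
  also have "\<dots> = g \<otimes>\<^bsub>G n\<^esub> (opl (r + m) q y1 \<one>\<^bsub>G q\<^esub> \<otimes>\<^bsub>G n\<^esub> (beta n m q \<otimes>\<^bsub>G n\<^esub> opl (r + q) m (opl r q w \<one>\<^bsub>G q\<^esub>) \<one>\<^bsub>G m\<^esub>))"
    using K1[OF n w] by simp
  also have "\<dots> = g \<otimes>\<^bsub>G n\<^esub> opl (r + m) q y1 \<one>\<^bsub>G q\<^esub> \<otimes>\<^bsub>G n\<^esub> beta n m q \<otimes>\<^bsub>G n\<^esub> opl (r + q) m (opl r q w \<one>\<^bsub>G q\<^esub>) \<one>\<^bsub>G m\<^esub>"
    using g c1 c3 bc by (simp add: ma mc)
  finally show ?thesis .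
qed

lemma Wt_unf: "n = r + m + q \<Longrightarrow> Wt n m q s z u = (u \<in> carrier (G (r + q)) \<and> (\<exists>y\<in>snd z.
      fst z \<otimes>\<^bsub>G n\<^esub> opl (r + m) q y \<one>\<^bsub>G q\<^esub> \<otimes>\<^bsub>G n\<^esub> beta n m q = s \<otimes>\<^bsub>G n\<^esub> opl (r + q) m u \<one>\<^bsub>G m\<^esub>))"
proof -
  assume n: "n = r + m + q"
  have 1: "n - q = r + m" "n - m = r + q" using n by auto
  show ?thesis unfolding Wt_def 1 ..
qed

lemma Cb: "n = r + m + q \<Longrightarrow> z \<in> Cbasis G opl m n q \<Longrightarrow> fst z \<in> carrier (G n) \<and>
   (\<exists>a\<in>carrier (G (r + m)). snd z = l_coset (G (r + m)) a ((\<lambda>h. opl r m h \<one>\<^bsub>G m\<^esub>) ` carrier (G r)))"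
proof -
  assume n: "n = r + m + q" and z: "z \<in> Cbasis G opl m n q"
  have 1: "n - q = r + m" using n by auto
  show ?thesis using Cbasis_char[OF z] unfolding 1 by (simp add: stab_eq)
qed

lemma W2: "n = r + m + q \<Longrightarrow> z \<in> Cbasis G opl m n q \<Longrightarrow> s \<in> carrier (G n) \<Longrightarrow>
  Wt n m q s z u1 \<Longrightarrow> Wt n m q s z u2 \<Longrightarrow> \<exists>w\<in>carrier (G r). u1 = u2 \<otimes>\<^bsub>G (r + q)\<^esub> opl r q w \<one>\<^bsub>G q\<^esub>"
proof -
  assume n: "n = r + m + q" and z: "z \<in> Cbasis G opl m n q" and s: "s \<in> carrier (G n)"
    and 1: "Wt n m q s z u1" and 2: "Wt n m q s z u2"
  obtain a where a: "a \<in> carrier (G (r + m))" "snd z = l_coset (G (r + m)) a ((\<lambda>h. opl r m h \<one>\<^bsub>G m\<^esub>) ` carrier (G r))"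
    and g: "fst z \<in> carrier (G n)" using Cb[OF n z] by blast
  obtain y1 where y1: "y1 \<in> snd z" "fst z \<otimes>\<^bsub>G n\<^esub> opl (r + m) q y1 \<one>\<^bsub>G q\<^esub> \<otimes>\<^bsub>G n\<^esub> beta n m q = s \<otimes>\<^bsub>G n\<^esub> opl (r + q) m u1 \<one>\<^bsub>G m\<^esub>"
    and u1: "u1 \<in> carrier (G (r + q))" using 1 unfolding Wt_unf[OF n] by blast
  obtain y2 where y2: "y2 \<in> snd z" "fst z \<otimes>\<^bsub>G n\<^esub> opl (r + m) q y2 \<one>\<^bsub>G q\<^esub> \<otimes>\<^bsub>G n\<^esub> beta n m q = s \<otimes>\<^bsub>G n\<^esub> opl (r + q) m u2 \<one>\<^bsub>G m\<^esub>"
    and u2: "u2 \<in> carrier (G (r + q))" using 2 unfolding Wt_unf[OF n] by blast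
  obtain w where w: "w \<in> carrier (G r)" "y1 = y2 \<otimes>\<^bsub>G (r + m)\<^esub> opl r m w \<one>\<^bsub>G m\<^esub>"
    using cos_same[of "r + m" r m a y1 y2] a y1(1) y2(1) by auto
  have y2c: "y2 \<in> carrier (G (r + m))" using cos_sub[of "r+m" r m a] a y2(1) by auto
  have wq: "opl r q w \<one>\<^bsub>G q\<^esub> \<in> carrier (G (r + q))" using w by (simp add: oplc oc)
  have "s \<otimes>\<^bsub>G n\<^esub> opl (r + q) m u1 \<one>\<^bsub>G m\<^esub> = fst z \<otimes>\<^bsub>G n\<^esub> opl (r + m) q y1 \<one>\<^bsub>G q\<^esub> \<otimes>\<^bsub>G n\<^esub> beta n m q"
    using y1(2) by simp
  also have "\<dots> = fst z \<otimes>\<^bsub>G n\<^esub> opl (r + m) q y2 \<one>\<^bsub>G q\<^esub> \<otimes>\<^bsub>G n\<^esub> beta n m q \<otimes>\<^bsub>G n\<^esub> opl (r + q) m (opl r q w \<one>\<^bsub>G q\<^esub>) \<one>\<^bsub>G m\<^esub>"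
    unfolding w(2) by (rule Sh[OF n g y2c w(1)])
  also have "\<dots> = s \<otimes>\<^bsub>G n\<^esub> opl (r + q) m u2 \<one>\<^bsub>G m\<^esub> \<otimes>\<^bsub>G n\<^esub> opl (r + q) m (opl r q w \<one>\<^bsub>G q\<^esub>) \<one>\<^bsub>G m\<^esub>"
    unfolding y2(2) ..
  also have "\<dots> = s \<otimes>\<^bsub>G n\<^esub> opl (r + q) m (u2 \<otimes>\<^bsub>G (r + q)\<^esub> opl r q w \<one>\<^bsub>G q\<^esub>) \<one>\<^bsub>G m\<^esub>"
    using n s u2 wq by (simp add: ma embc emb_mult')
  finally have eq: "s \<otimes>\<^bsub>G n\<^esub> opl (r + q) m u1 \<one>\<^bsub>G m\<^esub> = s \<otimes>\<^bsub>G n\<^esub> opl (r + q) m (u2 \<otimes>\<^bsub>G (r + q)\<^esub> opl r q w \<one>\<^bsub>G q\<^esub>) \<one>\<^bsub>G m\<^esub>" .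
  have uw: "u2 \<otimes>\<^bsub>G (r + q)\<^esub> opl r q w \<one>\<^bsub>G q\<^esub> \<in> carrier (G (r + q))" using u2 wq by (rule mc)
  have "opl (r + q) m u1 \<one>\<^bsub>G m\<^esub> = opl (r + q) m (u2 \<otimes>\<^bsub>G (r + q)\<^esub> opl r q w \<one>\<^bsub>G q\<^esub>) \<one>\<^bsub>G m\<^esub>"
    using eq lcan[OF s embc[of n "r+q" m, OF _ u1] embc[of n "r+q" m, OF _ uw]] n by simp
  then have "u1 = u2 \<otimes>\<^bsub>G (r + q)\<^esub> opl r q w \<one>\<^bsub>G q\<^esub>" using emb_inj[OF u1 uw] by blast
  then show ?thesis using w by blast
qed

lemma Wt_any: "n = r + m + q \<Longrightarrow> z \<in> Cbasis G opl m n q \<Longrightarrow> s \<in> carrier (G n) \<Longrightarrow>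
  Wt n m q s z u1 \<Longrightarrow> y \<in> snd z \<Longrightarrow> \<exists>u\<in>carrier (G (r + q)).
   fst z \<otimes>\<^bsub>G n\<^esub> opl (r + m) q y \<one>\<^bsub>G q\<^esub> \<otimes>\<^bsub>G n\<^esub> beta n m q = s \<otimes>\<^bsub>G n\<^esub> opl (r + q) m u \<one>\<^bsub>G m\<^esub>"
proof -
  assume n: "n = r + m + q" and z: "z \<in> Cbasis G opl m n q" and s: "s \<in> carrier (G n)"
    and 1: "Wt n m q s z u1" and y: "y \<in> snd z"
  obtain a where a: "a \<in> carrier (G (r + m))" "snd z = l_coset (G (r + m)) a ((\<lambda>h. opl r m h \<one>\<^bsub>G m\<^esub>) ` carrier (G r))"
    and g: "fst z \<in> carrier (G n)" using Cb[OF n z] by blast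
  obtain y1 where y1: "y1 \<in> snd z" "fst z \<otimes>\<^bsub>G n\<^esub> opl (r + m) q y1 \<one>\<^bsub>G q\<^esub> \<otimes>\<^bsub>G n\<^esub> beta n m q = s \<otimes>\<^bsub>G n\<^esub> opl (r + q) m u1 \<one>\<^bsub>G m\<^esub>"
    and u1: "u1 \<in> carrier (G (r + q))" using 1 unfolding Wt_unf[OF n] by blast
  obtain w where w: "w \<in> carrier (G r)" "y = y1 \<otimes>\<^bsub>G (r + m)\<^esub> opl r m w \<one>\<^bsub>G m\<^esub>"
    using cos_same[of "r + m" r m a y y1] a y1(1) y by auto
  have y1c: "y1 \<in> carrier (G (r + m))" using cos_sub[of "r+m" r m a] a y1(1) by auto
  have wq: "opl r q w \<one>\<^bsub>G q\<^esub> \<in> carrier (G (r + q))" using w by (simp add: oplc oc)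
  have "fst z \<otimes>\<^bsub>G n\<^esub> opl (r + m) q y \<one>\<^bsub>G q\<^esub> \<otimes>\<^bsub>G n\<^esub> beta n m q
      = fst z \<otimes>\<^bsub>G n\<^esub> opl (r + m) q y1 \<one>\<^bsub>G q\<^esub> \<otimes>\<^bsub>G n\<^esub> beta n m q \<otimes>\<^bsub>G n\<^esub> opl (r + q) m (opl r q w \<one>\<^bsub>G q\<^esub>) \<one>\<^bsub>G m\<^esub>"
    unfolding w(2) by (rule Sh[OF n g y1c w(1)])
  also have "\<dots> = s \<otimes>\<^bsub>G n\<^esub> opl (r + q) m u1 \<one>\<^bsub>G m\<^esub> \<otimes>\<^bsub>G n\<^esub> opl (r + q) m (opl r q w \<one>\<^bsub>G q\<^esub>) \<one>\<^bsub>G m\<^esub>"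
    unfolding y1(2) ..
  also have "\<dots> = s \<otimes>\<^bsub>G n\<^esub> opl (r + q) m (u1 \<otimes>\<^bsub>G (r + q)\<^esub> opl r q w \<one>\<^bsub>G q\<^esub>) \<one>\<^bsub>G m\<^esub>"
    using n s u1 wq by (simp add: ma embc emb_mult')
  finally show ?thesis using u1 wq by (blast intro: mc)
qed

lemma Cls: "n = r + m + q \<Longrightarrow> z \<in> Cbasis G opl m n q \<Longrightarrow> inC n m q s z \<Longrightarrow>
  inC n m q t z \<longleftrightarrow> t \<in> l_coset (G n) s ((\<lambda>h. opl (r + q) m h \<one>\<^bsub>G m\<^esub>) ` carrier (G (r + q)))"
proof
  assume n: "n = r + m + q" and z: "z \<in> Cbasis G opl m n q" and s: "inC n m q s z"
  have sc: "s \<in> carrier (G n)" using s unfolding inC_def by blast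
  obtain u1 where u1: "Wt n m q s z u1" using s unfolding inC_def by blast
  {
    assume t: "inC n m q t z"
    have tc: "t \<in> carrier (G n)" using t unfolding inC_def by blast
    obtain u2 y2 where y2: "y2 \<in> snd z" "fst z \<otimes>\<^bsub>G n\<^esub> opl (r + m) q y2 \<one>\<^bsub>G q\<^esub> \<otimes>\<^bsub>G n\<^esub> beta n m q = t \<otimes>\<^bsub>G n\<^esub> opl (r + q) m u2 \<one>\<^bsub>G m\<^esub>"
      and u2: "u2 \<in> carrier (G (r + q))" using t unfolding inC_def Wt_unf[OF n] by blast
    obtain u where u: "u \<in> carrier (G (r + q))" "fst z \<otimes>\<^bsub>G n\<^esub> opl (r + m) q y2 \<one>\<^bsub>G q\<^esub> \<otimes>\<^bsub>G n\<^esub> beta n m q = s \<otimes>\<^bsub>G n\<^esub> opl (r + q) m u \<one>\<^bsub>G m\<^esub>"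
      using Wt_any[OF n z sc u1 y2(1)] by blast
    have iu2: "inv\<^bsub>G (r+q)\<^esub> u2 \<in> carrier (G (r + q))" using u2 by (rule ic)
    have e: "t \<otimes>\<^bsub>G n\<^esub> opl (r + q) m u2 \<one>\<^bsub>G m\<^esub> = s \<otimes>\<^bsub>G n\<^esub> opl (r + q) m u \<one>\<^bsub>G m\<^esub>" using u(2) y2(2) by simp
    have "t = t \<otimes>\<^bsub>G n\<^esub> opl (r + q) m u2 \<one>\<^bsub>G m\<^esub> \<otimes>\<^bsub>G n\<^esub> opl (r + q) m (inv\<^bsub>G (r+q)\<^esub> u2) \<one>\<^bsub>G m\<^esub>"
      using n tc u2 iu2 by (simp add: ma embc emb_mult' ri opl_one'[of n] ro)
    also have "\<dots> = s \<otimes>\<^bsub>G n\<^esub> opl (r + q) m (u \<otimes>\<^bsub>G (r+q)\<^esub> inv\<^bsub>G (r+q)\<^esub> u2) \<one>\<^bsub>G m\<^esub>"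
      unfolding e using n sc u iu2 by (simp add: ma embc emb_mult')
    finally have "t \<in> l_coset (G n) s ((\<lambda>h. opl (r + q) m h \<one>\<^bsub>G m\<^esub>) ` carrier (G (r + q)))"
      unfolding cos_char using u iu2 by (blast intro: mc)
  }
  then show "inC n m q t z \<Longrightarrow> t \<in> l_coset (G n) s ((\<lambda>h. opl (r + q) m h \<one>\<^bsub>G m\<^esub>) ` carrier (G (r + q)))" .
next
  assume n: "n = r + m + q" and z: "z \<in> Cbasis G opl m n q" and s: "inC n m q s z"
    and t: "t \<in> l_coset (G n) s ((\<lambda>h. opl (r + q) m h \<one>\<^bsub>G m\<^esub>) ` carrier (G (r + q)))"
  have sc: "s \<in> carrier (G n)" using s unfolding inC_def by blast
  obtain v where v: "v \<in> carrier (G (r + q))" "t = s \<otimes>\<^bsub>G n\<^esub> opl (r + q) m v \<one>\<^bsub>G m\<^esub>" using cos_mem[OF t] by blast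
  obtain u1 y1 where y1: "y1 \<in> snd z" "fst z \<otimes>\<^bsub>G n\<^esub> opl (r + m) q y1 \<one>\<^bsub>G q\<^esub> \<otimes>\<^bsub>G n\<^esub> beta n m q = s \<otimes>\<^bsub>G n\<^esub> opl (r + q) m u1 \<one>\<^bsub>G m\<^esub>"
    and u1: "u1 \<in> carrier (G (r + q))" using s unfolding inC_def Wt_unf[OF n] by blast
  have iv: "inv\<^bsub>G (r+q)\<^esub> v \<in> carrier (G (r + q))" using v by (simp add: ic)
  have tc: "t \<in> carrier (G n)" using v n sc by (simp add: mc embc)
  have "s \<otimes>\<^bsub>G n\<^esub> opl (r + q) m u1 \<one>\<^bsub>G m\<^esub> = t \<otimes>\<^bsub>G n\<^esub> opl (r + q) m (inv\<^bsub>G (r+q)\<^esub> v \<otimes>\<^bsub>G (r+q)\<^esub> u1) \<one>\<^bsub>G m\<^esub>"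
    unfolding v(2) using n sc v(1) iv u1 by (simp add: ma embc emb_mult' mc ri2)
  then have "Wt n m q t z (inv\<^bsub>G (r+q)\<^esub> v \<otimes>\<^bsub>G (r+q)\<^esub> u1)" unfolding Wt_unf[OF n] using y1 iv u1 by (auto intro: mc)
  then show "inC n m q t z" unfolding inC_def using tc by blast
qed

lemma inC_ex: "n = r + m + q \<Longrightarrow> z \<in> Cbasis G opl m n q \<Longrightarrow> \<exists>s. inC n m q s z"
proof -
  assume n: "n = r + m + q" and z: "z \<in> Cbasis G opl m n q"
  obtain a where a: "a \<in> carrier (G (r + m))" "snd z = l_coset (G (r + m)) a ((\<lambda>h. opl r m h \<one>\<^bsub>G m\<^esub>) ` carrier (G r))"
    and g: "fst z \<in> carrier (G n)" using Cb[OF n z] by blast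
  have ay: "a \<in> snd z" using a cos_self[of "r+m" r m a] by simp
  let ?t = "fst z \<otimes>\<^bsub>G n\<^esub> opl (r + m) q a \<one>\<^bsub>G q\<^esub> \<otimes>\<^bsub>G n\<^esub> beta n m q"
  have tc: "?t \<in> carrier (G n)" using n g a beta_c[OF n] by (simp add: mc oplc oc)
  have "?t = ?t \<otimes>\<^bsub>G n\<^esub> opl (r + q) m \<one>\<^bsub>G (r+q)\<^esub> \<one>\<^bsub>G m\<^esub>" using n tc by (simp add: opl_one'[of n] ro)
  then have "Wt n m q ?t z \<one>\<^bsub>G (r+q)\<^esub>" unfolding Wt_unf[OF n] using ay oc by blast
  then show ?thesis unfolding inC_def using tc by blast
qed

lemma canon_in: "n = r + m + q \<Longrightarrow> z \<in> Cbasis G opl m n q \<Longrightarrow> inC n m q (canon n m q z) z"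
  unfolding canon_def using inC_ex by (metis someI_ex)

lemma canon_eq: "n = r + m + q \<Longrightarrow> z \<in> Cbasis G opl m n q \<Longrightarrow> z' \<in> Cbasis G opl m n q \<Longrightarrow>
  inC n m q s z \<Longrightarrow> inC n m q s z' \<Longrightarrow> canon n m q z = canon n m q z'"
proof -
  assume n: "n = r + m + q" and z: "z \<in> Cbasis G opl m n q" and z': "z' \<in> Cbasis G opl m n q"
    and s: "inC n m q s z" and s': "inC n m q s z'"
  have "(\<lambda>t. inC n m q t z) = (\<lambda>t. inC n m q t z')"
    using Cls[OF n z s] Cls[OF n z' s'] by auto
  then show ?thesis unfolding canon_def by simp
qed

lemma wit_prop: "inC n m q s z \<Longrightarrow> Wt n m q s z (wit n m q s z)"
  unfolding inC_def wit_def by (metis someI_ex)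

lemma compH: "m' \<le> K \<Longrightarrow> h \<in> carrier (G K) \<Longrightarrow> y0 \<in> carrier (G K) \<Longrightarrow>
  UG_comp G opl m' K K (UG_coset G opl K K h) (l_coset (G K) y0 (stab G opl m' K))
  = l_coset (G K) (h \<otimes>\<^bsub>G K\<^esub> y0) (stab G opl m' K)"
proof -
  assume mK: "m' \<le> K" and h: "h \<in> carrier (G K)" and y0: "y0 \<in> carrier (G K)"
  have "UG_comp G opl m' K K (l_coset (G K) h (stab G opl K K)) (l_coset (G K) y0 (stab G opl m' K))
     = l_coset (G K) (h \<otimes>\<^bsub>G K\<^esub> opl 0 K \<one>\<^bsub>G 0\<^esub> y0) (stab G opl m' K)"
    using mK h y0 by (intro comp_coset[of K 0 K "K - m'" m']) auto
  then show ?thesis unfolding UG_coset_def using y0 by (simp add: unit_left)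
qed

lemma genC: "q' \<le> n \<Longrightarrow> m' \<le> n - q' \<Longrightarrow> g \<in> carrier (G n) \<Longrightarrow> h \<in> carrier (G (n - q')) \<Longrightarrow> y0 \<in> carrier (G (n - q')) \<Longrightarrow>
  (\<lambda>y. delta (g \<otimes>\<^bsub>G n\<^esub> opl (n - q') q' h \<one>\<^bsub>G q'\<^esub>, l_coset (G (n - q')) y0 (stab G opl m' (n - q'))) y
     - delta (g, l_coset (G (n - q')) (h \<otimes>\<^bsub>G (n - q')\<^esub> y0) (stab G opl m' (n - q'))) y) \<in> Crel R G opl m' n q'"
proof -
  assume q: "q' \<le> n" and m: "m' \<le> n - q'" and g: "g \<in> carrier (G n)" and h: "h \<in> carrier (G (n - q'))"
    and y0: "y0 \<in> carrier (G (n - q'))"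
  have x: "l_coset (G (n - q')) y0 (stab G opl m' (n - q')) \<in> UG_Hom G opl m' (n - q')"
    unfolding UG_Hom_def UG_coset_def using m y0 by auto
  show ?thesis unfolding Crel_def compH[OF m h y0, symmetric]
    by (rule span_gen, rule CollectI, intro exI conjI) (rule refl, use q g h x in auto)
qed

lemma genC0: "q' \<le> n' \<Longrightarrow> g \<in> carrier (G n') \<Longrightarrow> h \<in> carrier (G (n' - q')) \<Longrightarrow>
  (\<lambda>y. delta (g \<otimes>\<^bsub>G n'\<^esub> opl (n' - q') q' h \<one>\<^bsub>G q'\<^esub>, carrier (G (n' - q'))) y
     - delta (g, carrier (G (n' - q'))) y) \<in> Crel R G opl 0 n' q'"
proof -
  assume q: "q' \<le> n'" and g: "g \<in> carrier (G n')" and h: "h \<in> carrier (G (n' - q'))"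
  have "(\<lambda>y. delta (g \<otimes>\<^bsub>G n'\<^esub> opl (n' - q') q' h \<one>\<^bsub>G q'\<^esub>, l_coset (G (n' - q')) \<one>\<^bsub>G (n' - q')\<^esub> (stab G opl 0 (n' - q'))) y
     - delta (g, l_coset (G (n' - q')) (h \<otimes>\<^bsub>G (n' - q')\<^esub> \<one>\<^bsub>G (n' - q')\<^esub>) (stab G opl 0 (n' - q'))) y) \<in> Crel R G opl 0 n' q'"
    using q g h oc by (intro genC) auto
  then show ?thesis unfolding stab0 using h by (simp add: cos_car oc mc)
qed

lemma lcos1: "S \<subseteq> carrier (G N) \<Longrightarrow> l_coset (G N) \<one>\<^bsub>G N\<^esub> S = S"
  unfolding l_coset_def using lo by force

lemma stab_sub: "N = k + m \<Longrightarrow> stab G opl m N \<subseteq> carrier (G N)"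
  by (auto simp: stab_def intro: oplc oc)

lemma Dz: "n = r + m + q \<Longrightarrow> z \<in> Cbasis G opl m n q \<Longrightarrow> inC n m q s z \<Longrightarrow>
  (\<lambda>y. delta z y - lext (TB n m q s) (PB n m q s z :: _ \<Rightarrow> 'r::comm_ring_1) y) \<in> Crel R G opl m n q"
proof -
  assume n: "n = r + m + q" and z: "z \<in> Cbasis G opl m n q" and s: "inC n m q s z"
  have sc: "s \<in> carrier (G n)" using s unfolding inC_def by blast
  have nq: "n - q = r + m" "n - m = r + q" using n by auto
  obtain a where a: "a \<in> carrier (G (r + m))" "snd z = l_coset (G (r + m)) a ((\<lambda>h. opl r m h \<one>\<^bsub>G m\<^esub>) ` carrier (G r))"
    and g: "fst z \<in> carrier (G n)" using Cb[OF n z] by blast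
  let ?u = "wit n m q s z"
  obtain y where y: "y \<in> snd z" "fst z \<otimes>\<^bsub>G n\<^esub> opl (r + m) q y \<one>\<^bsub>G q\<^esub> \<otimes>\<^bsub>G n\<^esub> beta n m q = s \<otimes>\<^bsub>G n\<^esub> opl (r + q) m ?u \<one>\<^bsub>G m\<^esub>"
    and u: "?u \<in> carrier (G (r + q))" using wit_prop[OF s] unfolding Wt_unf[OF n] by blast
  have yc: "y \<in> carrier (G (r + m))" using cos_sub[of "r+m" r m a] a y(1) by auto
  have st: "stab G opl m (r + m) = (\<lambda>h. opl r m h \<one>\<^bsub>G m\<^esub>) ` carrier (G r)" by (simp add: stab_eq)
  have bc: "beta n m q \<in> carrier (G n)" using beta_c[OF n] .
  have yq: "opl (r + m) q y \<one>\<^bsub>G q\<^esub> \<in> carrier (G n)" using n yc by (simp add: oplc oc)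
  have e1: "s \<otimes>\<^bsub>G n\<^esub> opl (r + q) m ?u \<one>\<^bsub>G m\<^esub> \<otimes>\<^bsub>G n\<^esub> inv\<^bsub>G n\<^esub> beta n m q = fst z \<otimes>\<^bsub>G n\<^esub> opl (r + m) q y \<one>\<^bsub>G q\<^esub>"
    unfolding y(2)[symmetric] using g yq bc by (simp add: ma mc ri ro ic)
  have TBe: "lext (TB n m q s) (PB n m q s z :: _ \<Rightarrow> 'r) = delta (fst z \<otimes>\<^bsub>G n\<^esub> opl (r + m) q y \<one>\<^bsub>G q\<^esub>, stab G opl m (r + m))"
    using s unfolding PB_def by (simp add: lext_delta TB_def nq e1)
  have "(\<lambda>y'. delta (fst z \<otimes>\<^bsub>G n\<^esub> opl (n - q) q y \<one>\<^bsub>G q\<^esub>, l_coset (G (n - q)) \<one>\<^bsub>G (n - q)\<^esub> (stab G opl m (n - q))) y'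
     - delta (fst z, l_coset (G (n - q)) (y \<otimes>\<^bsub>G (n - q)\<^esub> \<one>\<^bsub>G (n - q)\<^esub>) (stab G opl m (n - q))) y' :: 'r) \<in> Crel R G opl m n q"
    using n g yc oc by (intro genC) auto
  moreover have "l_coset (G (r + m)) \<one>\<^bsub>G (r + m)\<^esub> (stab G opl m (r + m)) = stab G opl m (r + m)"
    by (rule lcos1, rule stab_sub[of _ r]) simp
  moreover have "l_coset (G (r + m)) (y \<otimes>\<^bsub>G (r + m)\<^esub> \<one>\<^bsub>G (r + m)\<^esub>) (stab G opl m (r + m)) = snd z"
    using yc ro[OF yc] unfolding st a(2) using cos_rep[of "r+m" r m a y] a y(1) by simp
  ultimately have "(\<lambda>y'. delta (fst z \<otimes>\<^bsub>G n\<^esub> opl (r + m) q y \<one>\<^bsub>G q\<^esub>, stab G opl m (r + m)) y' - delta z y' :: 'r) \<in> Crel R G opl m n q"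
    unfolding nq by simp
  then show ?thesis unfolding TBe Crel_def by (rule span_neg)
qed

lemma coset_lmul: "N = k0 + m \<Longrightarrow> a \<in> carrier (G N) \<Longrightarrow> h \<in> carrier (G N) \<Longrightarrow>
  y' \<in> l_coset (G N) (h \<otimes>\<^bsub>G N\<^esub> a) ((\<lambda>k. opl k0 m k \<one>\<^bsub>G m\<^esub>) ` carrier (G k0)) \<longleftrightarrow>
  (\<exists>y\<in>l_coset (G N) a ((\<lambda>k. opl k0 m k \<one>\<^bsub>G m\<^esub>) ` carrier (G k0)). y' = h \<otimes>\<^bsub>G N\<^esub> y)"
  unfolding cos_char using ma oplc oc by auto

lemma P1gen: "n = r + m + q \<Longrightarrow> a \<in> {(\<lambda>y. delta (g \<otimes>\<^bsub>G n\<^esub> opl (n - q) q h \<one>\<^bsub>G q\<^esub>, x) y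
           - delta (g, UG_comp G opl m (n - q) (n - q) (UG_coset G opl (n - q) (n - q) h) x) y)
      | g h x. q \<le> n \<and> g \<in> carrier (G n) \<and> h \<in> carrier (G (n - q))
               \<and> x \<in> UG_Hom G opl m (n - q)} \<Longrightarrow>
  lext (PB n m q s) a \<in> (Crel R G opl 0 (n - m) q :: (_ \<Rightarrow> 'r::comm_ring_1) set)"
proof -
  assume n: "n = r + m + q" and a: "a \<in> {(\<lambda>y. delta (g \<otimes>\<^bsub>G n\<^esub> opl (n - q) q h \<one>\<^bsub>G q\<^esub>, x) y
           - delta (g, UG_comp G opl m (n - q) (n - q) (UG_coset G opl (n - q) (n - q) h) x) y)
      | g h x. q \<le> n \<and> g \<in> carrier (G n) \<and> h \<in> carrier (G (n - q))
               \<and> x \<in> UG_Hom G opl m (n - q)}"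
  have nq: "n - q = r + m" using n by auto
  obtain g h x where a2: "a = (\<lambda>y. delta (g \<otimes>\<^bsub>G n\<^esub> opl (r + m) q h \<one>\<^bsub>G q\<^esub>, x) y
           - delta (g, UG_comp G opl m (r + m) (r + m) (UG_coset G opl (r + m) (r + m) h) x) y)"
     and g: "g \<in> carrier (G n)" and h: "h \<in> carrier (G (r + m))" and x: "x \<in> UG_Hom G opl m (r + m)"
    using a unfolding nq by blast
  obtain y0 where y0: "y0 \<in> carrier (G (r + m))" "x = l_coset (G (r + m)) y0 (stab G opl m (r + m))"
    using Hom_char[OF x] by blast
  have st: "stab G opl m (r + m) = (\<lambda>h. opl r m h \<one>\<^bsub>G m\<^esub>) ` carrier (G r)" by (simp add: stab_eq)
  have cp: "UG_comp G opl m (r + m) (r + m) (UG_coset G opl (r + m) (r + m) h) x = l_coset (G (r + m)) (h \<otimes>\<^bsub>G (r + m)\<^esub> y0) (stab G opl m (r + m))"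
    unfolding y0(2) using h y0(1) by (intro compH) auto
  let ?z1 = "(g \<otimes>\<^bsub>G n\<^esub> opl (r + m) q h \<one>\<^bsub>G q\<^esub>, x)"
  let ?z2 = "(g, l_coset (G (r + m)) (h \<otimes>\<^bsub>G (r + m)\<^esub> y0) (stab G opl m (r + m)))"
  have mulq: "\<And>y. y \<in> carrier (G (r + m)) \<Longrightarrow> g \<otimes>\<^bsub>G n\<^esub> opl (r + m) q h \<one>\<^bsub>G q\<^esub> \<otimes>\<^bsub>G n\<^esub> opl (r + m) q y \<one>\<^bsub>G q\<^esub>
     = g \<otimes>\<^bsub>G n\<^esub> opl (r + m) q (h \<otimes>\<^bsub>G (r + m)\<^esub> y) \<one>\<^bsub>G q\<^esub>"
    using n g h by (simp add: ma oplc oc oplm lo)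
  have xs: "x \<subseteq> carrier (G (r + m))" unfolding y0(2) st using cos_sub[of "r+m" r m y0] y0(1) by simp
  have W: "\<And>u. Wt n m q s ?z1 u = Wt n m q s ?z2 u"
    unfolding Wt_unf[OF n] fst_conv snd_conv
  proof (intro iffI conjI; elim conjE bexE)
    fix u y assume u: "u \<in> carrier (G (r + q))" and y: "y \<in> x"
      and e: "g \<otimes>\<^bsub>G n\<^esub> opl (r + m) q h \<one>\<^bsub>G q\<^esub> \<otimes>\<^bsub>G n\<^esub> opl (r + m) q y \<one>\<^bsub>G q\<^esub> \<otimes>\<^bsub>G n\<^esub> beta n m q = s \<otimes>\<^bsub>G n\<^esub> opl (r + q) m u \<one>\<^bsub>G m\<^esub>"
    show "u \<in> carrier (G (r + q))" by (rule u)
    have "h \<otimes>\<^bsub>G (r + m)\<^esub> y \<in> l_coset (G (r + m)) (h \<otimes>\<^bsub>G (r + m)\<^esub> y0) (stab G opl m (r + m))"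
      unfolding st using coset_lmul[of "r+m" r m y0 h] y0 h y unfolding st by auto
    then show "\<exists>y\<in>l_coset (G (r + m)) (h \<otimes>\<^bsub>G (r + m)\<^esub> y0) (stab G opl m (r + m)).
       g \<otimes>\<^bsub>G n\<^esub> opl (r + m) q y \<one>\<^bsub>G q\<^esub> \<otimes>\<^bsub>G n\<^esub> beta n m q = s \<otimes>\<^bsub>G n\<^esub> opl (r + q) m u \<one>\<^bsub>G m\<^esub>"
    proof
      have yc: "y \<in> carrier (G (r + m))" using xs y by auto
      show "g \<otimes>\<^bsub>G n\<^esub> opl (r + m) q (h \<otimes>\<^bsub>G (r + m)\<^esub> y) \<one>\<^bsub>G q\<^esub> \<otimes>\<^bsub>G n\<^esub> beta n m q = s \<otimes>\<^bsub>G n\<^esub> opl (r + q) m u \<one>\<^bsub>G m\<^esub>"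
        using e mulq[OF yc] by simp
    qed
  next
    fix u y' assume u: "u \<in> carrier (G (r + q))" and y': "y' \<in> l_coset (G (r + m)) (h \<otimes>\<^bsub>G (r + m)\<^esub> y0) (stab G opl m (r + m))"
      and e: "g \<otimes>\<^bsub>G n\<^esub> opl (r + m) q y' \<one>\<^bsub>G q\<^esub> \<otimes>\<^bsub>G n\<^esub> beta n m q = s \<otimes>\<^bsub>G n\<^esub> opl (r + q) m u \<one>\<^bsub>G m\<^esub>"
    show "u \<in> carrier (G (r + q))" by (rule u)
    obtain y where y: "y \<in> x" "y' = h \<otimes>\<^bsub>G (r + m)\<^esub> y"
      using coset_lmul[of "r+m" r m y0 h y'] y0 h y' unfolding st by auto
    have yc: "y \<in> carrier (G (r + m))" using xs y by auto
    show "\<exists>y\<in>x. g \<otimes>\<^bsub>G n\<^esub> opl (r + m) q h \<one>\<^bsub>G q\<^esub> \<otimes>\<^bsub>G n\<^esub> opl (r + m) q y \<one>\<^bsub>G q\<^esub> \<otimes>\<^bsub>G n\<^esub> beta n m q = s \<otimes>\<^bsub>G n\<^esub> opl (r + q) m u \<one>\<^bsub>G m\<^esub>"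
    proof
      show "g \<otimes>\<^bsub>G n\<^esub> opl (r + m) q h \<one>\<^bsub>G q\<^esub> \<otimes>\<^bsub>G n\<^esub> opl (r + m) q y \<one>\<^bsub>G q\<^esub> \<otimes>\<^bsub>G n\<^esub> beta n m q = s \<otimes>\<^bsub>G n\<^esub> opl (r + q) m u \<one>\<^bsub>G m\<^esub>"
        using e unfolding mulq[OF yc] y(2) .
    qed (rule y(1))
  qed
  have "PB n m q s ?z1 = (PB n m q s ?z2 :: _ \<Rightarrow> 'r)"
  proof -
    have eq: "Wt n m q s ?z1 = Wt n m q s ?z2" using W by (intro ext)
    show ?thesis unfolding PB_def inC_def wit_def by (simp only: eq)
  qed
  then have "lext (PB n m q s) a = (\<lambda>y. 0 :: 'r)" unfolding a2 cp lext_dd by simp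
  then show ?thesis unfolding Crel_def by (simp add: span_0)
qed

lemma T1gen: "n = r + m + q \<Longrightarrow> s \<in> carrier (G n) \<Longrightarrow>
   a \<in> {(\<lambda>y. delta (g \<otimes>\<^bsub>G (n - m)\<^esub> opl (n - m - q) q h \<one>\<^bsub>G q\<^esub>, x) y
           - delta (g, UG_comp G opl 0 (n - m - q) (n - m - q) (UG_coset G opl (n - m - q) (n - m - q) h) x) y)
      | g h x. q \<le> n - m \<and> g \<in> carrier (G (n - m)) \<and> h \<in> carrier (G (n - m - q))
               \<and> x \<in> UG_Hom G opl 0 (n - m - q)} \<Longrightarrow>
  lext (TB n m q s) a \<in> (Crel R G opl m n q :: (_ \<Rightarrow> 'r::comm_ring_1) set)"
proof -
  assume n: "n = r + m + q" and s: "s \<in> carrier (G n)" and a: "a \<in> {(\<lambda>y. delta (g \<otimes>\<^bsub>G (n - m)\<^esub> opl (n - m - q) q h \<one>\<^bsub>G q\<^esub>, x) y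
           - delta (g, UG_comp G opl 0 (n - m - q) (n - m - q) (UG_coset G opl (n - m - q) (n - m - q) h) x) y)
      | g h x. q \<le> n - m \<and> g \<in> carrier (G (n - m)) \<and> h \<in> carrier (G (n - m - q))
               \<and> x \<in> UG_Hom G opl 0 (n - m - q)}"
  have nq: "n - m - q = r" "n - m = r + q" "n - q = r + m" "r + q - q = r" using n by auto
  obtain g h x where a2: "a = (\<lambda>y. delta (g \<otimes>\<^bsub>G (r + q)\<^esub> opl r q h \<one>\<^bsub>G q\<^esub>, x) y
           - delta (g, UG_comp G opl 0 r r (UG_coset G opl r r h) x) y)"
     and g: "g \<in> carrier (G (r + q))" and h: "h \<in> carrier (G r)" and x: "x \<in> UG_Hom G opl 0 r"
    using a unfolding nq by blast
  have bc: "beta n m q \<in> carrier (G n)" using beta_c[OF n] .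
  have ibc: "inv\<^bsub>G n\<^esub> beta n m q \<in> carrier (G n)" using bc by (rule ic)
  let ?g = "s \<otimes>\<^bsub>G n\<^esub> opl (r + q) m g \<one>\<^bsub>G m\<^esub> \<otimes>\<^bsub>G n\<^esub> inv\<^bsub>G n\<^esub> beta n m q"
  have gc: "?g \<in> carrier (G n)" using n s g ibc by (simp add: mc embc)
  have hm: "opl r m h \<one>\<^bsub>G m\<^esub> \<in> carrier (G (r + m))" using h by (simp add: oplc oc)
  have hq: "opl r q h \<one>\<^bsub>G q\<^esub> \<in> carrier (G (r + q))" using h by (simp add: oplc oc)
  have c1: "opl (r + m) q (opl r m h \<one>\<^bsub>G m\<^esub>) \<one>\<^bsub>G q\<^esub> \<in> carrier (G n)" using n hm by (simp add: oplc oc)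
  have c2: "opl (r + q) m (opl r q h \<one>\<^bsub>G q\<^esub>) \<one>\<^bsub>G m\<^esub> \<in> carrier (G n)" using n hq by (simp add: oplc oc)
  have comm: "inv\<^bsub>G n\<^esub> beta n m q \<otimes>\<^bsub>G n\<^esub> opl (r + m) q (opl r m h \<one>\<^bsub>G m\<^esub>) \<one>\<^bsub>G q\<^esub>
       = opl (r + q) m (opl r q h \<one>\<^bsub>G q\<^esub>) \<one>\<^bsub>G m\<^esub> \<otimes>\<^bsub>G n\<^esub> inv\<^bsub>G n\<^esub> beta n m q"
  proof -
    have "inv\<^bsub>G n\<^esub> beta n m q \<otimes>\<^bsub>G n\<^esub> opl (r + m) q (opl r m h \<one>\<^bsub>G m\<^esub>) \<one>\<^bsub>G q\<^esub>
       = inv\<^bsub>G n\<^esub> beta n m q \<otimes>\<^bsub>G n\<^esub> (opl (r + m) q (opl r m h \<one>\<^bsub>G m\<^esub>) \<one>\<^bsub>G q\<^esub> \<otimes>\<^bsub>G n\<^esub> beta n m q) \<otimes>\<^bsub>G n\<^esub> inv\<^bsub>G n\<^esub> beta n m q"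
      using bc ibc c1 by (simp add: ma mc ri ro)
    also have "\<dots> = opl (r + q) m (opl r q h \<one>\<^bsub>G q\<^esub>) \<one>\<^bsub>G m\<^esub> \<otimes>\<^bsub>G n\<^esub> inv\<^bsub>G n\<^esub> beta n m q"
      unfolding K1[OF n h] using bc ibc c2 by (simp add: ma[symmetric] li lo mc)
    finally show ?thesis .
  qed
  have e1: "s \<otimes>\<^bsub>G n\<^esub> opl (r + q) m (g \<otimes>\<^bsub>G (r + q)\<^esub> opl r q h \<one>\<^bsub>G q\<^esub>) \<one>\<^bsub>G m\<^esub> \<otimes>\<^bsub>G n\<^esub> inv\<^bsub>G n\<^esub> beta n m q
     = ?g \<otimes>\<^bsub>G n\<^esub> opl (r + m) q (opl r m h \<one>\<^bsub>G m\<^esub>) \<one>\<^bsub>G q\<^esub>"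
  proof -
    have "?g \<otimes>\<^bsub>G n\<^esub> opl (r + m) q (opl r m h \<one>\<^bsub>G m\<^esub>) \<one>\<^bsub>G q\<^esub>
      = s \<otimes>\<^bsub>G n\<^esub> opl (r + q) m g \<one>\<^bsub>G m\<^esub> \<otimes>\<^bsub>G n\<^esub> (inv\<^bsub>G n\<^esub> beta n m q \<otimes>\<^bsub>G n\<^esub> opl (r + m) q (opl r m h \<one>\<^bsub>G m\<^esub>) \<one>\<^bsub>G q\<^esub>)"
      using n s g ibc c1 by (simp add: ma mc embc)
    also have "\<dots> = s \<otimes>\<^bsub>G n\<^esub> (opl (r + q) m g \<one>\<^bsub>G m\<^esub> \<otimes>\<^bsub>G n\<^esub> opl (r + q) m (opl r q h \<one>\<^bsub>G q\<^esub>) \<one>\<^bsub>G m\<^esub>) \<otimes>\<^bsub>G n\<^esub> inv\<^bsub>G n\<^esub> beta n m q"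
      unfolding comm using n s g ibc c2 by (simp add: ma mc embc)
    also have "\<dots> = s \<otimes>\<^bsub>G n\<^esub> opl (r + q) m (g \<otimes>\<^bsub>G (r + q)\<^esub> opl r q h \<one>\<^bsub>G q\<^esub>) \<one>\<^bsub>G m\<^esub> \<otimes>\<^bsub>G n\<^esub> inv\<^bsub>G n\<^esub> beta n m q"
      using n g hq by (simp add: emb_mult')
    finally show ?thesis by simp
  qed
  have x2: "x = carrier (G r)" using x Hom0 by auto
  have cpx: "UG_comp G opl 0 r r (UG_coset G opl r r h) x = x"
    using compH[of 0 r h "\<one>\<^bsub>G r\<^esub>"] h unfolding x2 stab0 by (simp add: cos_car oc ro)
  have "(\<lambda>y. delta (?g \<otimes>\<^bsub>G n\<^esub> opl (n - q) q (opl r m h \<one>\<^bsub>G m\<^esub>) \<one>\<^bsub>G q\<^esub>, l_coset (G (n - q)) \<one>\<^bsub>G (n - q)\<^esub> (stab G opl m (n - q))) y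
     - delta (?g, l_coset (G (n - q)) (opl r m h \<one>\<^bsub>G m\<^esub> \<otimes>\<^bsub>G (n - q)\<^esub> \<one>\<^bsub>G (n - q)\<^esub>) (stab G opl m (n - q))) y :: 'r) \<in> Crel R G opl m n q"
    using n gc hm oc by (intro genC) auto
  moreover have "l_coset (G (r + m)) \<one>\<^bsub>G (r + m)\<^esub> (stab G opl m (r + m)) = stab G opl m (r + m)"
    by (rule lcos1, rule stab_sub[of _ r]) simp
  moreover have "l_coset (G (r + m)) (opl r m h \<one>\<^bsub>G m\<^esub> \<otimes>\<^bsub>G (r + m)\<^esub> \<one>\<^bsub>G (r + m)\<^esub>) (stab G opl m (r + m)) = stab G opl m (r + m)"
  proof -
    have "l_coset (G (r + m)) (\<one>\<^bsub>G (r + m)\<^esub> \<otimes>\<^bsub>G (r + m)\<^esub> opl r m h \<one>\<^bsub>G m\<^esub>) ((\<lambda>h. opl r m h \<one>\<^bsub>G m\<^esub>) ` carrier (G r))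
        = l_coset (G (r + m)) \<one>\<^bsub>G (r + m)\<^esub> ((\<lambda>h. opl r m h \<one>\<^bsub>G m\<^esub>) ` carrier (G r))"
      using h oc by (intro cos_shift) auto
    then show ?thesis using hm lcos1[OF stab_sub[of "r+m" r m]] by (simp add: stab_eq lo ro)
  qed
  ultimately have "(\<lambda>y. delta (s \<otimes>\<^bsub>G n\<^esub> opl (r + q) m (g \<otimes>\<^bsub>G (r + q)\<^esub> opl r q h \<one>\<^bsub>G q\<^esub>) \<one>\<^bsub>G m\<^esub> \<otimes>\<^bsub>G n\<^esub> inv\<^bsub>G n\<^esub> beta n m q, stab G opl m (r + m)) y
     - delta (?g, stab G opl m (r + m)) y :: 'r) \<in> Crel R G opl m n q"
    unfolding nq e1 by simp
  then show ?thesis unfolding a2 cpx lext_dd TB_def nq fst_conv .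
qed

lemma ci_c: "i < Suc q0 \<Longrightarrow> opl (1 + i) (q0 - i) (b 1 i) \<one>\<^bsub>G (q0 - i)\<^esub> \<in> carrier (G (Suc q0))"
  using braid_closed[of 1 i] by (intro oplc) (auto simp: oc)

lemma face_eq: "n = r + m + Suc q0 \<Longrightarrow> y \<in> carrier (G (r + m)) \<Longrightarrow> snd z = l_coset (G (r + m)) y (stab G opl m (r + m)) \<Longrightarrow>
  face G opl b m n (Suc q0) i z = (fst z \<otimes>\<^bsub>G n\<^esub> opl (r + m) (Suc q0) \<one>\<^bsub>G (r + m)\<^esub> (opl (1 + i) (q0 - i) (b 1 i) \<one>\<^bsub>G (q0 - i)\<^esub>),
    l_coset (G (r + m + 1)) (opl (r + m) 1 y \<one>\<^bsub>G 1\<^esub> \<otimes>\<^bsub>G (r + m + 1)\<^esub> opl r (m + 1) \<one>\<^bsub>G r\<^esub> (inv\<^bsub>G (m + 1)\<^esub> b m 1)) (stab G opl m (r + m + 1)))"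
proof -
  assume n: "n = r + m + Suc q0" and y: "y \<in> carrier (G (r + m))" and z: "snd z = l_coset (G (r + m)) y (stab G opl m (r + m))"
  have nq: "n - Suc q0 = r + m" using n by auto
  show ?thesis unfolding face_def nq z using face2[of "r + m" r m y] y by simp
qed

lemma faceW: "n = r + m + Suc q0 \<Longrightarrow> z \<in> Cbasis G opl m n (Suc q0) \<Longrightarrow> s \<in> carrier (G n) \<Longrightarrow> y \<in> snd z \<Longrightarrow>
  u \<in> carrier (G (r + Suc q0)) \<Longrightarrow> i < Suc q0 \<Longrightarrow>
  fst z \<otimes>\<^bsub>G n\<^esub> opl (r + m) (Suc q0) y \<one>\<^bsub>G (Suc q0)\<^esub> \<otimes>\<^bsub>G n\<^esub> beta n m (Suc q0) = s \<otimes>\<^bsub>G n\<^esub> opl (r + Suc q0) m u \<one>\<^bsub>G m\<^esub> \<Longrightarrow>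
  Wt n m q0 s (face G opl b m n (Suc q0) i z) (u \<otimes>\<^bsub>G (r + Suc q0)\<^esub> opl r (Suc q0) \<one>\<^bsub>G r\<^esub> (opl (1 + i) (q0 - i) (b 1 i) \<one>\<^bsub>G (q0 - i)\<^esub>))"
proof -
  assume n: "n = r + m + Suc q0" and z: "z \<in> Cbasis G opl m n (Suc q0)" and s: "s \<in> carrier (G n)"
    and y: "y \<in> snd z" and u: "u \<in> carrier (G (r + Suc q0))" and i: "i < Suc q0"
    and e: "fst z \<otimes>\<^bsub>G n\<^esub> opl (r + m) (Suc q0) y \<one>\<^bsub>G (Suc q0)\<^esub> \<otimes>\<^bsub>G n\<^esub> beta n m (Suc q0) = s \<otimes>\<^bsub>G n\<^esub> opl (r + Suc q0) m u \<one>\<^bsub>G m\<^esub>"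
  let ?c = "opl (1 + i) (q0 - i) (b 1 i) \<one>\<^bsub>G (q0 - i)\<^esub>"
  have c: "?c \<in> carrier (G (Suc q0))" using ci_c[OF i] .
  obtain a where a: "a \<in> carrier (G (r + m))" "snd z = l_coset (G (r + m)) a ((\<lambda>h. opl r m h \<one>\<^bsub>G m\<^esub>) ` carrier (G r))"
    and g: "fst z \<in> carrier (G n)" using Cb[OF n z] by blast
  have st: "stab G opl m (r + m) = (\<lambda>h. opl r m h \<one>\<^bsub>G m\<^esub>) ` carrier (G r)" by (simp add: stab_eq)
  have yc: "y \<in> carrier (G (r + m))" using cos_sub[of "r+m" r m a] a y by auto
  have zy: "snd z = l_coset (G (r + m)) y (stab G opl m (r + m))" unfolding st a(2)
    using cos_rep[of "r+m" r m a y] a y by simp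
  let ?y2 = "opl (r + m) 1 y \<one>\<^bsub>G 1\<^esub> \<otimes>\<^bsub>G (r + m + 1)\<^esub> opl r (m + 1) \<one>\<^bsub>G r\<^esub> (inv\<^bsub>G (m + 1)\<^esub> b m 1)"
  have y2c: "?y2 \<in> carrier (G (r + m + 1))" using yc braid_closed[of m 1] by (auto intro!: mc oplc oc ic)
  have st2: "stab G opl m (r + m + 1) = (\<lambda>h. opl (r + 1) m h \<one>\<^bsub>G m\<^esub>) ` carrier (G (r + 1))" by (simp add: stab_eq)
  have y2m: "?y2 \<in> l_coset (G (r + m + 1)) ?y2 (stab G opl m (r + m + 1))"
    unfolding st2 using cos_self[of "r + m + 1" "r + 1" m ?y2] y2c by simp
  have fz: "face G opl b m n (Suc q0) i z = (fst z \<otimes>\<^bsub>G n\<^esub> opl (r + m) (Suc q0) \<one>\<^bsub>G (r + m)\<^esub> ?c,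
      l_coset (G (r + m + 1)) ?y2 (stab G opl m (r + m + 1)))"
    using face_eq[OF n yc zy] .
  have cr: "opl r (Suc q0) \<one>\<^bsub>G r\<^esub> ?c \<in> carrier (G (r + Suc q0))" using c by (simp add: oplc oc)
  have core': "fst z \<otimes>\<^bsub>G n\<^esub> opl (r + m) (Suc q0) \<one>\<^bsub>G (r + m)\<^esub> ?c \<otimes>\<^bsub>G n\<^esub>
      opl (r + m + 1) q0 ?y2 \<one>\<^bsub>G q0\<^esub> \<otimes>\<^bsub>G n\<^esub> beta n m q0
    = fst z \<otimes>\<^bsub>G n\<^esub> opl (r + m) (Suc q0) y \<one>\<^bsub>G (Suc q0)\<^esub> \<otimes>\<^bsub>G n\<^esub> beta n m (Suc q0)
      \<otimes>\<^bsub>G n\<^esub> opl (r + Suc q0) m (opl r (Suc q0) \<one>\<^bsub>G r\<^esub> ?c) \<one>\<^bsub>G m\<^esub>"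
    using core[OF n refl g yc c] beta_eq[OF n] beta_eq[of n "r+1" m q0] n by simp
  also have "\<dots> = s \<otimes>\<^bsub>G n\<^esub> opl (r + Suc q0) m (u \<otimes>\<^bsub>G (r + Suc q0)\<^esub> opl r (Suc q0) \<one>\<^bsub>G r\<^esub> ?c) \<one>\<^bsub>G m\<^esub>"
    unfolding e using n s u cr by (simp add: ma embc emb_mult' del: add_Suc_right)
  finally have eq: "fst z \<otimes>\<^bsub>G n\<^esub> opl (r + m) (Suc q0) \<one>\<^bsub>G (r + m)\<^esub> ?c \<otimes>\<^bsub>G n\<^esub>
      opl (r + m + 1) q0 ?y2 \<one>\<^bsub>G q0\<^esub> \<otimes>\<^bsub>G n\<^esub> beta n m q0
      = s \<otimes>\<^bsub>G n\<^esub> opl (r + Suc q0) m (u \<otimes>\<^bsub>G (r + Suc q0)\<^esub> opl r (Suc q0) \<one>\<^bsub>G r\<^esub> ?c) \<one>\<^bsub>G m\<^esub>" .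
  have n2: "n = (r + 1) + m + q0" using n by simp
  show ?thesis unfolding Wt_unf[OF n2] fz fst_conv snd_conv
    using eq y2m u cr by (auto intro!: mc)
qed

lemma face_in: "n = r + m + Suc q0 \<Longrightarrow> z \<in> Cbasis G opl m n (Suc q0) \<Longrightarrow> i < Suc q0 \<Longrightarrow>
  face G opl b m n (Suc q0) i z \<in> Cbasis G opl m n q0"
proof -
  assume n: "n = r + m + Suc q0" and z: "z \<in> Cbasis G opl m n (Suc q0)" and i: "i < Suc q0"
  obtain a where a: "a \<in> carrier (G (r + m))" "snd z = l_coset (G (r + m)) a ((\<lambda>h. opl r m h \<one>\<^bsub>G m\<^esub>) ` carrier (G r))"
    and g: "fst z \<in> carrier (G n)" using Cb[OF n z] by blast
  have st: "stab G opl m (r + m) = (\<lambda>h. opl r m h \<one>\<^bsub>G m\<^esub>) ` carrier (G r)" by (simp add: stab_eq)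
  let ?c = "opl (1 + i) (q0 - i) (b 1 i) \<one>\<^bsub>G (q0 - i)\<^esub>"
  have c: "?c \<in> carrier (G (Suc q0))" using ci_c[OF i] .
  let ?y2 = "opl (r + m) 1 a \<one>\<^bsub>G 1\<^esub> \<otimes>\<^bsub>G (r + m + 1)\<^esub> opl r (m + 1) \<one>\<^bsub>G r\<^esub> (inv\<^bsub>G (m + 1)\<^esub> b m 1)"
  have y2c: "?y2 \<in> carrier (G (r + m + 1))" using a braid_closed[of m 1] by (auto intro!: mc oplc oc ic)
  have nq: "n - q0 = r + m + 1" using n by simp
  have fz: "face G opl b m n (Suc q0) i z = (fst z \<otimes>\<^bsub>G n\<^esub> opl (r + m) (Suc q0) \<one>\<^bsub>G (r + m)\<^esub> ?c,
      l_coset (G (r + m + 1)) ?y2 (stab G opl m (r + m + 1)))"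
    using face_eq[OF n a(1)] a(2) st by simp
  have f1: "fst z \<otimes>\<^bsub>G n\<^esub> opl (r + m) (Suc q0) \<one>\<^bsub>G (r + m)\<^esub> ?c \<in> carrier (G n)" using n g c by (auto intro!: mc oplc oc)
  have f2: "l_coset (G (r + m + 1)) ?y2 (stab G opl m (r + m + 1)) \<in> UG_Hom G opl m (n - q0)"
    unfolding nq UG_Hom_def UG_coset_def using y2c by auto
  show ?thesis unfolding fz Cbasis_def using f1 f2 n by auto
qed

lemma inC_face: "n = r + m + Suc q0 \<Longrightarrow> z \<in> Cbasis G opl m n (Suc q0) \<Longrightarrow> i < Suc q0 \<Longrightarrow>
  inC n m q0 s (face G opl b m n (Suc q0) i z) \<longleftrightarrow> inC n m (Suc q0) s z"
proof -
  assume n: "n = r + m + Suc q0" and z: "z \<in> Cbasis G opl m n (Suc q0)" and i: "i < Suc q0"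
  obtain a where a: "a \<in> carrier (G (r + m))" "snd z = l_coset (G (r + m)) a ((\<lambda>h. opl r m h \<one>\<^bsub>G m\<^esub>) ` carrier (G r))"
    and g: "fst z \<in> carrier (G n)" using Cb[OF n z] by blast
  have ay: "a \<in> snd z" using a cos_self[of "r+m" r m a] by simp
  let ?t = "fst z \<otimes>\<^bsub>G n\<^esub> opl (r + m) (Suc q0) a \<one>\<^bsub>G (Suc q0)\<^esub> \<otimes>\<^bsub>G n\<^esub> beta n m (Suc q0)"
  have tc: "?t \<in> carrier (G n)" using n g a beta_c[OF n] by (simp add: mc oplc oc)
  have te: "?t = ?t \<otimes>\<^bsub>G n\<^esub> opl (r + Suc q0) m \<one>\<^bsub>G (r + Suc q0)\<^esub> \<one>\<^bsub>G m\<^esub>" using n tc by (simp add: opl_one'[of n] ro)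
  have W1: "Wt n m (Suc q0) ?t z \<one>\<^bsub>G (r + Suc q0)\<^esub>" unfolding Wt_unf[OF n] using ay oc te by blast
  then have t1: "inC n m (Suc q0) ?t z" unfolding inC_def using tc by blast
  have "Wt n m q0 ?t (face G opl b m n (Suc q0) i z) (\<one>\<^bsub>G (r + Suc q0)\<^esub> \<otimes>\<^bsub>G (r + Suc q0)\<^esub> opl r (Suc q0) \<one>\<^bsub>G r\<^esub> (opl (1 + i) (q0 - i) (b 1 i) \<one>\<^bsub>G (q0 - i)\<^esub>))"
    using faceW[OF n z tc ay oc i] te by simp
  then have t2: "inC n m q0 ?t (face G opl b m n (Suc q0) i z)" unfolding inC_def using tc by blast
  have n2: "n = (r + 1) + m + q0" using n by simp
  have fi: "face G opl b m n (Suc q0) i z \<in> Cbasis G opl m n q0" using face_in[OF n z i] .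
  show ?thesis using Cls[OF n z t1, of s] Cls[OF n2 fi t2, of s] by simp
qed

lemma dbasis_lext: "lext F (dbasis R G opl b m n q z :: _ \<Rightarrow> 'r::comm_ring_1)
   = (\<lambda>y. \<Sum>i<q. (- 1) ^ i * F (face G opl b m n q i z) y)"
  unfolding dbasis_def by (subst lext_lin) (auto simp: fin_delta lext_delta)

lemma dchain_lext: "dchain R G opl b m n q = lext (dbasis R G opl b m n q)"
  unfolding dchain_def lext_def by (rule ext) simp

lemma P2b: "n = r + m + Suc q0 \<Longrightarrow> z \<in> Cbasis G opl m n (Suc q0) \<Longrightarrow> s \<in> carrier (G n) \<Longrightarrow>
  (\<lambda>y. lext (PB n m q0 s) (dbasis R G opl b m n (Suc q0) z) y
     - lext (dbasis R G opl b 0 (n - m) (Suc q0)) (PB n m (Suc q0) s z) y :: 'r::comm_ring_1)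
   \<in> Crel R G opl 0 (n - m) q0"
proof (cases "inC n m (Suc q0) s z")
  case False
  assume n: "n = r + m + Suc q0" and z: "z \<in> Cbasis G opl m n (Suc q0)" and s: "s \<in> carrier (G n)"
  have "\<And>i. i < Suc q0 \<Longrightarrow> (PB n m q0 s (face G opl b m n (Suc q0) i z) :: _ \<Rightarrow> 'r) = (\<lambda>_. 0)"
    unfolding PB_def using inC_face[OF n z] False by simp
  then have "(\<lambda>y. lext (PB n m q0 s) (dbasis R G opl b m n (Suc q0) z) y
     - lext (dbasis R G opl b 0 (n - m) (Suc q0)) (PB n m (Suc q0) s z) y :: 'r) = (\<lambda>_. 0)"
    unfolding dbasis_lext using False unfolding PB_def[of n m "Suc q0"] by (simp add: lext_zero)
  then show ?thesis unfolding Crel_def by (simp add: span_0)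
next
  case True
  assume n: "n = r + m + Suc q0" and z: "z \<in> Cbasis G opl m n (Suc q0)" and s: "s \<in> carrier (G n)"
  let ?u = "wit n m (Suc q0) s z"
  obtain y where y: "y \<in> snd z" "fst z \<otimes>\<^bsub>G n\<^esub> opl (r + m) (Suc q0) y \<one>\<^bsub>G (Suc q0)\<^esub> \<otimes>\<^bsub>G n\<^esub> beta n m (Suc q0) = s \<otimes>\<^bsub>G n\<^esub> opl (r + Suc q0) m ?u \<one>\<^bsub>G m\<^esub>"
    and u: "?u \<in> carrier (G (r + Suc q0))" using wit_prop[OF True] unfolding Wt_unf[OF n] by blast
  have nm: "n - m - Suc q0 = r" "n - m = r + 0 + Suc q0" using n by auto
  have n2: "n = (r + 1) + m + q0" using n by simp
  have PBz: "(PB n m (Suc q0) s z :: _ \<Rightarrow> 'r) = delta (?u, carrier (G r))"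
    unfolding PB_def using True nm by simp
  have per: "\<And>i. i < Suc q0 \<Longrightarrow> (\<lambda>y. PB n m q0 s (face G opl b m n (Suc q0) i z) y
      - delta (face G opl b 0 (n - m) (Suc q0) i (?u, carrier (G r))) y :: 'r) \<in> Crel R G opl 0 (n - m) q0"
  proof -
    fix i assume i: "i < Suc q0"
    let ?c = "opl (1 + i) (q0 - i) (b 1 i) \<one>\<^bsub>G (q0 - i)\<^esub>"
    let ?u' = "?u \<otimes>\<^bsub>G (r + Suc q0)\<^esub> opl r (Suc q0) \<one>\<^bsub>G r\<^esub> ?c"
    let ?fz = "face G opl b m n (Suc q0) i z"
    have c: "?c \<in> carrier (G (Suc q0))" using ci_c[OF i] .
    have u'c: "?u' \<in> carrier (G (r + Suc q0))" using u c by (auto intro!: mc oplc oc)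
    have W': "Wt n m q0 s ?fz ?u'" using faceW[OF n z s y(1) u i y(2)] .
    have iC: "inC n m q0 s ?fz" unfolding inC_def using s W' by blast
    have fi: "?fz \<in> Cbasis G opl m n q0" using face_in[OF n z i] .
    obtain w where w: "w \<in> carrier (G (r + 1))" "wit n m q0 s ?fz = ?u' \<otimes>\<^bsub>G (r + 1 + q0)\<^esub> opl (r + 1) q0 w \<one>\<^bsub>G q0\<^esub>"
      using W2[OF n2 fi s wit_prop[OF iC] W'] by blast
    have PBf: "(PB n m q0 s ?fz :: _ \<Rightarrow> 'r) = delta (?u' \<otimes>\<^bsub>G (r + 1 + q0)\<^esub> opl (r + 1) q0 w \<one>\<^bsub>G q0\<^esub>, carrier (G (r + 1)))"
      unfolding PB_def using iC w(2) n by simp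
    have f0: "face G opl b 0 (n - m) (Suc q0) i (?u, carrier (G r)) = (?u', carrier (G (r + 1)))"
    proof -
      have cr: "carrier (G r) = l_coset (G (r + 0)) \<one>\<^bsub>G (r + 0)\<^esub> (stab G opl 0 (r + 0))"
        unfolding stab0 by (simp add: cos_car oc)
      have "face G opl b 0 (n - m) (Suc q0) i (?u, carrier (G r)) =
        (?u \<otimes>\<^bsub>G (n - m)\<^esub> opl (r + 0) (Suc q0) \<one>\<^bsub>G (r + 0)\<^esub> ?c,
         l_coset (G (r + 0 + 1)) (opl (r + 0) 1 \<one>\<^bsub>G (r + 0)\<^esub> \<one>\<^bsub>G 1\<^esub> \<otimes>\<^bsub>G (r + 0 + 1)\<^esub> opl r (0 + 1) \<one>\<^bsub>G r\<^esub> (inv\<^bsub>G (0 + 1)\<^esub> b 0 1)) (stab G opl 0 (r + 0 + 1)))"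
        by (rule face_eq[OF nm(2) oc, of "(?u, carrier (G r))" i, simplified fst_conv]) (simp add: cr)
      also have "\<dots> = (?u', carrier (G (r + 1)))"
        unfolding stab0 using nm braid_closed[of 0 1] by (simp add: cos_car mc oplc oc ic)
      finally show ?thesis .
    qed
    have "(\<lambda>y. delta (?u' \<otimes>\<^bsub>G (n - m)\<^esub> opl (n - m - q0) q0 w \<one>\<^bsub>G q0\<^esub>, carrier (G (n - m - q0))) y
       - delta (?u', carrier (G (n - m - q0))) y :: 'r) \<in> Crel R G opl 0 (n - m) q0"
      using n u'c w(1) by (intro genC0) auto
    moreover have "n - m - q0 = r + 1" "n - m = r + 1 + q0" "r + Suc q0 = r + 1 + q0" using n by auto
    ultimately show "?thesis i" unfolding PBf f0 by simp
  qed
  have "(\<lambda>y. lext (PB n m q0 s) (dbasis R G opl b m n (Suc q0) z) y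
     - lext (dbasis R G opl b 0 (n - m) (Suc q0)) (PB n m (Suc q0) s z) y :: 'r)
   = (\<lambda>y. \<Sum>i<Suc q0. (- 1) ^ i * (\<lambda>y. PB n m q0 s (face G opl b m n (Suc q0) i z) y
      - delta (face G opl b 0 (n - m) (Suc q0) i (?u, carrier (G r))) y) y)"
    unfolding PBz lext_delta dbasis_lext unfolding dbasis_def sum_diff_fun by simp
  also have "\<dots> \<in> Crel R G opl 0 (n - m) q0"
    unfolding Crel_def using per[unfolded Crel_def] by (intro span_sum) auto
  finally show ?thesis .
qed

lemma T2b: "n = r + m + Suc q0 \<Longrightarrow> s \<in> carrier (G n) \<Longrightarrow> z' \<in> Cbasis G opl 0 (n - m) (Suc q0) \<Longrightarrow>
  (\<lambda>y. lext (dbasis R G opl b m n (Suc q0)) (TB n m (Suc q0) s z') y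
     - lext (TB n m q0 s) (dbasis R G opl b 0 (n - m) (Suc q0) z') y :: 'r::comm_ring_1)
   \<in> Crel R G opl m n q0"
proof -
  assume n: "n = r + m + Suc q0" and s: "s \<in> carrier (G n)" and z': "z' \<in> Cbasis G opl 0 (n - m) (Suc q0)"
  have nm: "n - m = r + Suc q0" "n - Suc q0 = r + m" "n - q0 = r + m + 1" "n - m - Suc q0 = r" using n by auto
  have g': "fst z' \<in> carrier (G (r + Suc q0))" using z' unfolding Cbasis_def nm by (auto split: if_splits)
  have bq: "beta n m (Suc q0) \<in> carrier (G n)" using beta_c[OF n] .
  have ibq: "inv\<^bsub>G n\<^esub> beta n m (Suc q0) \<in> carrier (G n)" using bq by (rule ic)
  have bq0: "beta n m q0 \<in> carrier (G n)" using beta_c[of n "r+1" m q0] n by simp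
  let ?A0 = "s \<otimes>\<^bsub>G n\<^esub> opl (r + Suc q0) m (fst z') \<one>\<^bsub>G m\<^esub> \<otimes>\<^bsub>G n\<^esub> inv\<^bsub>G n\<^esub> beta n m (Suc q0)"
  have A0: "?A0 \<in> carrier (G n)" using n s g' ibq by (simp add: mc embc)
  let ?w = "(?A0, stab G opl m (r + m))"
  have TBz: "(TB n m (Suc q0) s z' :: _ \<Rightarrow> 'r) = delta ?w" unfolding TB_def nm ..
  have sw: "snd ?w = l_coset (G (r + m)) \<one>\<^bsub>G (r + m)\<^esub> (stab G opl m (r + m))"
    using lcos1[OF stab_sub[of "r+m" r m]] by simp
  let ?g1 = "opl (r + m) 1 \<one>\<^bsub>G (r + m)\<^esub> \<one>\<^bsub>G 1\<^esub> \<otimes>\<^bsub>G (r + m + 1)\<^esub> opl r (m + 1) \<one>\<^bsub>G r\<^esub> (inv\<^bsub>G (m + 1)\<^esub> b m 1)"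
  have g1c: "?g1 \<in> carrier (G (r + m + 1))" using braid_closed[of m 1] by (auto intro!: mc oplc oc ic)
  have per: "\<And>i. i < Suc q0 \<Longrightarrow> (\<lambda>y. delta (face G opl b m n (Suc q0) i ?w) y
      - TB n m q0 s (face G opl b 0 (n - m) (Suc q0) i z') y :: 'r) \<in> Crel R G opl m n q0"
  proof -
    fix i assume i: "i < Suc q0"
    let ?c = "opl (1 + i) (q0 - i) (b 1 i) \<one>\<^bsub>G (q0 - i)\<^esub>"
    have c: "?c \<in> carrier (G (Suc q0))" using ci_c[OF i] .
    let ?Ai = "?A0 \<otimes>\<^bsub>G n\<^esub> opl (r + m) (Suc q0) \<one>\<^bsub>G (r + m)\<^esub> ?c"
    have Ai: "?Ai \<in> carrier (G n)" using n A0 c by (auto intro!: mc oplc oc)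
    have fw: "face G opl b m n (Suc q0) i ?w = (?Ai, l_coset (G (r + m + 1)) ?g1 (stab G opl m (r + m + 1)))"
      using face_eq[OF n oc sw, of i] by simp
    have f0: "fst (face G opl b 0 (r + Suc q0) (Suc q0) i z') = fst z' \<otimes>\<^bsub>G (r + Suc q0)\<^esub> opl r (Suc q0) \<one>\<^bsub>G r\<^esub> ?c"
      unfolding face_def by simp
    have cr: "opl r (Suc q0) \<one>\<^bsub>G r\<^esub> ?c \<in> carrier (G (r + Suc q0))" using c by (simp add: oplc oc)
    have core': "?Ai \<otimes>\<^bsub>G n\<^esub> opl (r + m + 1) q0 ?g1 \<one>\<^bsub>G q0\<^esub> \<otimes>\<^bsub>G n\<^esub> beta n m q0
      = ?A0 \<otimes>\<^bsub>G n\<^esub> opl (r + m) (Suc q0) \<one>\<^bsub>G (r + m)\<^esub> \<one>\<^bsub>G (Suc q0)\<^esub> \<otimes>\<^bsub>G n\<^esub> beta n m (Suc q0)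
      \<otimes>\<^bsub>G n\<^esub> opl (r + Suc q0) m (opl r (Suc q0) \<one>\<^bsub>G r\<^esub> ?c) \<one>\<^bsub>G m\<^esub>"
      using core[OF n refl A0 oc[of "r+m"] c] beta_eq[OF n] beta_eq[of n "r+1" m q0] n by simp
    also have "\<dots> = s \<otimes>\<^bsub>G n\<^esub> opl (r + Suc q0) m (fst z' \<otimes>\<^bsub>G (r + Suc q0)\<^esub> opl r (Suc q0) \<one>\<^bsub>G r\<^esub> ?c) \<one>\<^bsub>G m\<^esub>"
    proof -
      have o: "opl (r + m) (Suc q0) \<one>\<^bsub>G (r + m)\<^esub> \<one>\<^bsub>G (Suc q0)\<^esub> = \<one>\<^bsub>G n\<^esub>" using n by (simp add: opl_one')
      have "?A0 \<otimes>\<^bsub>G n\<^esub> \<one>\<^bsub>G n\<^esub> \<otimes>\<^bsub>G n\<^esub> beta n m (Suc q0) = s \<otimes>\<^bsub>G n\<^esub> opl (r + Suc q0) m (fst z') \<one>\<^bsub>G m\<^esub>"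
        using n s g' bq ibq by (simp add: ro ma mc embc li ro)
      then show ?thesis unfolding o using n s g' cr by (simp add: ma mc embc emb_mult' del: add_Suc_right)
    qed
    finally have e: "?Ai \<otimes>\<^bsub>G n\<^esub> opl (r + m + 1) q0 ?g1 \<one>\<^bsub>G q0\<^esub>
       = s \<otimes>\<^bsub>G n\<^esub> opl (r + Suc q0) m (fst z' \<otimes>\<^bsub>G (r + Suc q0)\<^esub> opl r (Suc q0) \<one>\<^bsub>G r\<^esub> ?c) \<one>\<^bsub>G m\<^esub> \<otimes>\<^bsub>G n\<^esub> inv\<^bsub>G n\<^esub> beta n m q0"
    proof -
      assume h: "?Ai \<otimes>\<^bsub>G n\<^esub> opl (r + m + 1) q0 ?g1 \<one>\<^bsub>G q0\<^esub> \<otimes>\<^bsub>G n\<^esub> beta n m q0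
        = s \<otimes>\<^bsub>G n\<^esub> opl (r + Suc q0) m (fst z' \<otimes>\<^bsub>G (r + Suc q0)\<^esub> opl r (Suc q0) \<one>\<^bsub>G r\<^esub> ?c) \<one>\<^bsub>G m\<^esub>"
      have x: "?Ai \<otimes>\<^bsub>G n\<^esub> opl (r + m + 1) q0 ?g1 \<one>\<^bsub>G q0\<^esub> \<in> carrier (G n)" using n Ai g1c by (auto intro!: mc oplc oc)
      show ?thesis unfolding h[symmetric] using x bq0 by (simp add: ma ri ro ic)
    qed
    have "(\<lambda>y. delta (?Ai \<otimes>\<^bsub>G n\<^esub> opl (n - q0) q0 ?g1 \<one>\<^bsub>G q0\<^esub>, l_coset (G (n - q0)) \<one>\<^bsub>G (n - q0)\<^esub> (stab G opl m (n - q0))) y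
       - delta (?Ai, l_coset (G (n - q0)) (?g1 \<otimes>\<^bsub>G (n - q0)\<^esub> \<one>\<^bsub>G (n - q0)\<^esub>) (stab G opl m (n - q0))) y :: 'r) \<in> Crel R G opl m n q0"
      using n Ai g1c oc by (intro genC) auto
    moreover have "l_coset (G (r + m + 1)) \<one>\<^bsub>G (r + m + 1)\<^esub> (stab G opl m (r + m + 1)) = stab G opl m (r + m + 1)"
      by (rule lcos1, rule stab_sub[of _ "r+1"]) simp
    ultimately have "(\<lambda>y. delta (s \<otimes>\<^bsub>G n\<^esub> opl (r + Suc q0) m (fst z' \<otimes>\<^bsub>G (r + Suc q0)\<^esub> opl r (Suc q0) \<one>\<^bsub>G r\<^esub> ?c) \<one>\<^bsub>G m\<^esub> \<otimes>\<^bsub>G n\<^esub> inv\<^bsub>G n\<^esub> beta n m q0, stab G opl m (r + m + 1)) y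
       - delta (?Ai, l_coset (G (r + m + 1)) ?g1 (stab G opl m (r + m + 1))) y :: 'r) \<in> Crel R G opl m n q0"
      unfolding nm e using g1c by (simp add: ro)
    then show "?thesis i" unfolding fw TB_def nm f0 Crel_def by (rule span_neg)
  qed
  have "(\<lambda>y. lext (dbasis R G opl b m n (Suc q0)) (TB n m (Suc q0) s z') y
     - lext (TB n m q0 s) (dbasis R G opl b 0 (n - m) (Suc q0) z') y :: 'r)
    = (\<lambda>y. \<Sum>i<Suc q0. (- 1) ^ i * (\<lambda>y. delta (face G opl b m n (Suc q0) i ?w) y
      - TB n m q0 s (face G opl b 0 (n - m) (Suc q0) i z') y) y)"
    unfolding TBz lext_delta dbasis_lext unfolding dbasis_def sum_diff_fun by simp
  also have "\<dots> \<in> Crel R G opl m n q0"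
    unfolding Crel_def using per[unfolded Crel_def] by (intro span_sum) auto
  finally show ?thesis .
qed

lemma fin_dbasis: "fin (dbasis R G opl b m n q z :: _ \<Rightarrow> 'r::comm_ring_1)"
  unfolding dbasis_def by (rule fin_comb) (auto simp: fin_delta)

lemma fin_PB: "fin (PB n m q s z :: _ \<Rightarrow> 'r::comm_ring_1)"
  unfolding PB_def by (auto simp: fin_delta)

lemma fin_TB: "fin (TB n m q s z :: _ \<Rightarrow> 'r::comm_ring_1)"
  unfolding TB_def by (auto simp: fin_delta)

lemma fin_ch: "f \<in> chains A \<Longrightarrow> fin f" unfolding chains_def by auto

lemma PB_ch: "n = r + m + q \<Longrightarrow> z \<in> Cbasis G opl m n q \<Longrightarrow> (PB n m q s z :: _ \<Rightarrow> 'r::comm_ring_1) \<in> chains (Cbasis G opl 0 (n - m) q)"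
proof (cases "inC n m q s z")
  case True
  assume n: "n = r + m + q"
  have "wit n m q s z \<in> carrier (G (n - m))" using wit_prop[OF True] unfolding Wt_def by blast
  then have "(wit n m q s z, carrier (G (n - m - q))) \<in> Cbasis G opl 0 (n - m) q"
    unfolding Cbasis_def Hom0 using n by auto
  then show ?thesis unfolding PB_def using True by (simp add: chains_delta)
next
  case False then show ?thesis unfolding PB_def by (simp add: chains_zero)
qed

lemma TB_ch: "n = r + m + q \<Longrightarrow> s \<in> carrier (G n) \<Longrightarrow> z' \<in> Cbasis G opl 0 (n - m) q \<Longrightarrow>
  (TB n m q s z' :: _ \<Rightarrow> 'r::comm_ring_1) \<in> chains (Cbasis G opl m n q)"
proof -
  assume n: "n = r + m + q" and s: "s \<in> carrier (G n)" and z': "z' \<in> Cbasis G opl 0 (n - m) q"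
  have g': "fst z' \<in> carrier (G (n - m))" using z' unfolding Cbasis_def by (auto split: if_splits)
  have nm: "n - m = r + q" "n - q = r + m" using n by auto
  have a: "s \<otimes>\<^bsub>G n\<^esub> opl (n - m) m (fst z') \<one>\<^bsub>G m\<^esub> \<otimes>\<^bsub>G n\<^esub> inv\<^bsub>G n\<^esub> beta n m q \<in> carrier (G n)"
    using n s g' beta_c[OF n] unfolding nm by (simp add: mc embc ic)
  have "stab G opl m (n - q) = l_coset (G (n - q)) \<one>\<^bsub>G (n - q)\<^esub> (stab G opl m (n - q))"
    unfolding nm by (rule lcos1[symmetric], rule stab_sub[of _ r]) simp
  then have "stab G opl m (n - q) \<in> UG_Hom G opl m (n - q)"
    unfolding UG_Hom_def UG_coset_def using n oc by auto
  then show ?thesis unfolding TB_def Cbasis_def using a n by (auto intro!: chains_delta)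
qed

lemma P1c: "n = r + m + q \<Longrightarrow> x \<in> Crel R G opl m n q \<Longrightarrow> lext (PB n m q s) x \<in> (Crel R G opl 0 (n - m) q :: (_ \<Rightarrow> 'r::comm_ring_1) set)"
proof -
  assume n: "n = r + m + q" and x: "x \<in> Crel R G opl m n q"
  show ?thesis unfolding Crel_def
  proof (rule span_lext[OF _ _ x[unfolded Crel_def]])
    show "\<forall>a\<in>{(\<lambda>y. delta (g \<otimes>\<^bsub>G n\<^esub> opl (n - q) q h \<one>\<^bsub>G q\<^esub>, x) y
           - delta (g, UG_comp G opl m (n - q) (n - q) (UG_coset G opl (n - q) (n - q) h) x) y :: 'r)
      | g h x. q \<le> n \<and> g \<in> carrier (G n) \<and> h \<in> carrier (G (n - q))
               \<and> x \<in> UG_Hom G opl m (n - q)}. fin a" by (clarify, rule fin_dd)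
  qed (use P1gen[OF n, unfolded Crel_def] in blast)
qed

lemma T1c: "n = r + m + q \<Longrightarrow> s \<in> carrier (G n) \<Longrightarrow> x \<in> Crel R G opl 0 (n - m) q \<Longrightarrow>
   lext (TB n m q s) x \<in> (Crel R G opl m n q :: (_ \<Rightarrow> 'r::comm_ring_1) set)"
proof -
  assume n: "n = r + m + q" and s: "s \<in> carrier (G n)" and x: "x \<in> Crel R G opl 0 (n - m) q"
  show ?thesis unfolding Crel_def
  proof (rule span_lext[OF _ _ x[unfolded Crel_def]])
    show "\<forall>a\<in>{(\<lambda>y. delta (g \<otimes>\<^bsub>G (n - m)\<^esub> opl (n - m - q) q h \<one>\<^bsub>G q\<^esub>, x) y
           - delta (g, UG_comp G opl 0 (n - m - q) (n - m - q) (UG_coset G opl (n - m - q) (n - m - q) h) x) y :: 'r)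
      | g h x. q \<le> n - m \<and> g \<in> carrier (G (n - m)) \<and> h \<in> carrier (G (n - m - q))
               \<and> x \<in> UG_Hom G opl 0 (n - m - q)}. fin a" by (clarify, rule fin_dd)
  qed (use T1gen[OF n s, unfolded Crel_def] in blast)
qed

lemma lext_spanC: "fin f \<Longrightarrow> (\<forall>z\<in>{z. f z \<noteq> 0}. H z \<in> Crel R G opl m n q) \<Longrightarrow> lext H f \<in> Crel R G opl m n q"
  unfolding Crel_def by (rule lext_span)

lemma Pcyc: "n = r + m + Suc q0 \<Longrightarrow> f \<in> chains (Cbasis G opl m n (Suc q0)) \<Longrightarrow> s \<in> carrier (G n) \<Longrightarrow>
  dchain R G opl b m n (Suc q0) f \<in> Crel R G opl m n q0 \<Longrightarrow>
  dchain R G opl b 0 (n - m) (Suc q0) (lext (PB n m (Suc q0) s) f) \<in> (Crel R G opl 0 (n - m) q0 :: (_ \<Rightarrow> 'r::comm_ring_1) set)"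
proof -
  assume n: "n = r + m + Suc q0" and f: "f \<in> chains (Cbasis G opl m n (Suc q0))" and s: "s \<in> carrier (G n)"
    and cyc: "dchain R G opl b m n (Suc q0) f \<in> Crel R G opl m n q0"
  have n2: "n = (r + 1) + m + q0" using n by simp
  have ff: "fin f" using fin_ch[OF f] .
  let ?X = "lext (PB n m q0 s) (dchain R G opl b m n (Suc q0) f) :: _ \<Rightarrow> 'r"
  have X: "?X \<in> Crel R G opl 0 (n - m) q0" using P1c[OF n2 cyc] .
  have "(\<lambda>y. ?X y - dchain R G opl b 0 (n - m) (Suc q0) (lext (PB n m (Suc q0) s) f) y)
     = lext (\<lambda>z y. lext (PB n m q0 s) (dbasis R G opl b m n (Suc q0) z) y
             - lext (dbasis R G opl b 0 (n - m) (Suc q0)) (PB n m (Suc q0) s z) y) f"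
    unfolding dchain_lext lext_comp[OF ff fin_dbasis[THEN allI]] lext_comp[OF ff fin_PB[THEN allI]] lext_sub ..
  also have "\<dots> \<in> Crel R G opl 0 (n - m) q0"
  proof (rule lext_spanC[OF ff], intro ballI)
    fix z assume "z \<in> {z. f z \<noteq> 0}"
    then have z: "z \<in> Cbasis G opl m n (Suc q0)" using f unfolding chains_def by auto
    show "(\<lambda>y. lext (PB n m q0 s) (dbasis R G opl b m n (Suc q0) z) y
             - lext (dbasis R G opl b 0 (n - m) (Suc q0)) (PB n m (Suc q0) s z) y :: 'r) \<in> Crel R G opl 0 (n - m) q0"
      using P2b[OF n z s] .
  qed
  finally have D: "(\<lambda>y. ?X y - dchain R G opl b 0 (n - m) (Suc q0) (lext (PB n m (Suc q0) s) f) y) \<in> Crel R G opl 0 (n - m) q0" .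
  have "(\<lambda>y. ?X y - (?X y - dchain R G opl b 0 (n - m) (Suc q0) (lext (PB n m (Suc q0) s) f) y)) \<in> Crel R G opl 0 (n - m) q0"
    using span_diff[OF X[unfolded Crel_def] D[unfolded Crel_def]] unfolding Crel_def .
  then show ?thesis by simp
qed

lemma T2c: "n = r + m + q \<Longrightarrow> s \<in> carrier (G n) \<Longrightarrow> c' \<in> chains (Cbasis G opl 0 (n - m) (Suc q)) \<Longrightarrow>
  (\<lambda>y. dchain R G opl b m n (Suc q) (lext (TB n m (Suc q) s) c') y
     - lext (TB n m q s) (dchain R G opl b 0 (n - m) (Suc q) c') y) \<in> (Crel R G opl m n q :: (_ \<Rightarrow> 'r::comm_ring_1) set)"
proof (cases r)
  case 0
  assume n: "n = r + m + q" and s: "s \<in> carrier (G n)" and c': "c' \<in> chains (Cbasis G opl 0 (n - m) (Suc q))"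
  have "Cbasis G opl 0 (n - m) (Suc q) = {}" using n 0 unfolding Cbasis_def by auto
  then have "c' = (\<lambda>_. 0)" using c' chains_empty by auto
  then show ?thesis unfolding Crel_def dchain_lext by (simp add: lext_zero span_0)
next
  case (Suc r1)
  assume n0: "n = r + m + q" and s: "s \<in> carrier (G n)" and c': "c' \<in> chains (Cbasis G opl 0 (n - m) (Suc q))"
  have n: "n = r1 + m + Suc q" using n0 Suc by simp
  have ff: "fin c'" using fin_ch[OF c'] .
  have "(\<lambda>y. dchain R G opl b m n (Suc q) (lext (TB n m (Suc q) s) c') y
     - lext (TB n m q s) (dchain R G opl b 0 (n - m) (Suc q) c') y)
     = lext (\<lambda>z y. lext (dbasis R G opl b m n (Suc q)) (TB n m (Suc q) s z) y
         - lext (TB n m q s) (dbasis R G opl b 0 (n - m) (Suc q) z) y) c'"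
    unfolding dchain_lext lext_comp[OF ff fin_dbasis[THEN allI]] lext_comp[OF ff fin_TB[THEN allI]] lext_sub ..
  also have "\<dots> \<in> Crel R G opl m n q"
  proof (rule lext_spanC[OF ff], intro ballI)
    fix z assume "z \<in> {z. c' z \<noteq> 0}"
    then have z: "z \<in> Cbasis G opl 0 (n - m) (Suc q)" using c' unfolding chains_def by auto
    show "(\<lambda>y. lext (dbasis R G opl b m n (Suc q)) (TB n m (Suc q) s z) y
         - lext (TB n m q s) (dbasis R G opl b 0 (n - m) (Suc q) z) y :: 'r) \<in> Crel R G opl m n q"
      using T2b[OF n s z] .
  qed
  finally show ?thesis .
qed

lemma Dc: "n = r + m + q \<Longrightarrow> f \<in> chains (Cbasis G opl m n q) \<Longrightarrow>
  (\<lambda>y. f y - (\<Sum>s\<in>canon n m q ` {z. f z \<noteq> 0}. lext (TB n m q s) (lext (PB n m q s) f) y))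
   \<in> (Crel R G opl m n q :: (_ \<Rightarrow> 'r::comm_ring_1) set)"
proof -
  assume n: "n = r + m + q" and f: "f \<in> chains (Cbasis G opl m n q)"
  have ff: "fin f" using fin_ch[OF f] .
  have sub: "{z. f z \<noteq> 0} \<subseteq> Cbasis G opl m n q" using f unfolding chains_def by auto
  let ?S = "canon n m q ` {z. f z \<noteq> 0}"
  have fS: "finite ?S" using ff by simp
  have e1: "f = lext delta f" using decomp[OF ff] unfolding lext_def .
  have e2: "(\<lambda>y. \<Sum>s\<in>?S. lext (TB n m q s) (lext (PB n m q s) f) y)
     = lext (\<lambda>z y. \<Sum>s\<in>?S. lext (TB n m q s) (PB n m q s z) y) f"
    unfolding lext_comp[OF ff fin_PB[THEN allI]] lext_sumF ..
  have "(\<lambda>y. f y - (\<Sum>s\<in>?S. lext (TB n m q s) (lext (PB n m q s) f) y))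
     = lext (\<lambda>z y. delta z y - (\<Sum>s\<in>?S. lext (TB n m q s) (PB n m q s z) y)) f"
  proof -
    have e1': "\<And>y. lext delta f y = f y" using e1 by metis
    show ?thesis unfolding lext_sub[symmetric] by (simp add: e1' e2[symmetric])
  qed
  also have "\<dots> \<in> Crel R G opl m n q"
  proof (rule lext_spanC[OF ff], intro ballI)
    fix z assume zA: "z \<in> {z. f z \<noteq> 0}"
    then have z: "z \<in> Cbasis G opl m n q" using sub by auto
    let ?s = "canon n m q z"
    have sS: "?s \<in> ?S" using zA by simp
    have other: "\<And>t. t \<in> ?S \<Longrightarrow> t \<noteq> ?s \<Longrightarrow> (PB n m q t z :: _ \<Rightarrow> 'r) = (\<lambda>_. 0)"
    proof -
      fix t assume "t \<in> ?S" and ne: "t \<noteq> ?s"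
      then obtain z' where z': "z' \<in> {z. f z \<noteq> 0}" "t = canon n m q z'" by blast
      have z'b: "z' \<in> Cbasis G opl m n q" using z' sub by auto
      have "\<not> inC n m q t z"
      proof
        assume "inC n m q t z"
        then have "canon n m q z = canon n m q z'" using canon_eq[OF n z z'b _ canon_in[OF n z'b]] z'(2) by simp
        then show False using ne z'(2) by simp
      qed
      then show "(PB n m q t z :: _ \<Rightarrow> 'r) = (\<lambda>_. 0)" unfolding PB_def by simp
    qed
    have "(\<lambda>y. \<Sum>s\<in>?S. lext (TB n m q s) (PB n m q s z :: _ \<Rightarrow> 'r) y) = lext (TB n m q ?s) (PB n m q ?s z)"
    proof (rule ext)
      fix y
      have "(\<Sum>s\<in>?S. lext (TB n m q s) (PB n m q s z :: _ \<Rightarrow> 'r) y)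
         = lext (TB n m q ?s) (PB n m q ?s z :: _ \<Rightarrow> 'r) y + (\<Sum>s\<in>?S - {?s}. lext (TB n m q s) (PB n m q s z :: _ \<Rightarrow> 'r) y)"
        using fS sS by (rule sum.remove)
      also have "(\<Sum>s\<in>?S - {?s}. lext (TB n m q s) (PB n m q s z :: _ \<Rightarrow> 'r) y) = 0"
        using other by (intro sum.neutral) (simp add: lext_zero)
      finally show "(\<Sum>s\<in>?S. lext (TB n m q s) (PB n m q s z :: _ \<Rightarrow> 'r) y) = lext (TB n m q ?s) (PB n m q ?s z) y" by simp
    qed
    then have "(\<lambda>y. delta z y - (\<Sum>s\<in>?S. lext (TB n m q s) (PB n m q s z :: _ \<Rightarrow> 'r) y))
       = (\<lambda>y. delta z y - lext (TB n m q ?s) (PB n m q ?s z :: _ \<Rightarrow> 'r) y)"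
      by (metis (no_types))
    also have "\<dots> \<in> Crel R G opl m n q" using Dz[OF n z canon_in[OF n z]] .
    finally show "(\<lambda>y. delta z y - (\<Sum>s\<in>?S. lext (TB n m q s) (PB n m q s z :: _ \<Rightarrow> 'r) y)) \<in> Crel R G opl m n q" .
  qed
  finally show ?thesis .
qed

lemma fin_lext: "fin f \<Longrightarrow> (\<forall>z. fin (F z)) \<Longrightarrow> fin (lext F f)"
  unfolding lext_def by (rule fin_comb) auto

lemma telesc: "(x - a) + (a - d) + (d - c) = (x::'a::ab_group_add) - c"
  by simp

lemma main:
  fixes R :: "'r::comm_ring_1 itself"
  assumes H: "m \<le> n \<Longrightarrow> reduced_homology_vanishes R G opl b 0 i (n - m)"
  shows "reduced_homology_vanishes R G opl b m i n"
  unfolding reduced_homology_vanishes_def Let_def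
proof (intro ballI impI)
  let ?q = "nat (i + 1)"
  fix f :: "_ \<Rightarrow> 'r" assume f: "f \<in> chains (Cbasis G opl m n ?q)"
    and cyc: "?q = 0 \<or> dchain R G opl b m n ?q f \<in> Crel R G opl m n (?q - 1)"
  show "\<exists>c\<in>chains (Cbasis G opl m n (Suc ?q)). (\<lambda>y. f y - dchain R G opl b m n (Suc ?q) c y) \<in> Crel R G opl m n ?q"
  proof (cases "m + ?q \<le> n")
    case False
    then have "Cbasis G opl m n ?q = {}" unfolding Cbasis_def UG_Hom_def by auto
    then have f0: "f = (\<lambda>_. 0)" using f chains_empty by auto
    show ?thesis
      by (rule bexI[of _ "\<lambda>_. 0"]) (auto simp: f0 dchain_lext lext_zero span_0 Crel_def chains_zero)
  next
    case True
    have "\<exists>r. n = r + m + ?q" using True by (intro exI[of _ "n - (m + ?q)"]) simp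
    then obtain r where n: "n = r + m + ?q" by (elim exE)
    let ?S = "canon n m ?q ` {z. f z \<noteq> 0}"
    have ff: "fin f" using fin_ch[OF f] .
    have fS: "finite ?S" using ff by simp
    have sub: "{z. f z \<noteq> 0} \<subseteq> Cbasis G opl m n ?q" using f unfolding chains_def by auto
    have sc: "\<And>s. s \<in> ?S \<Longrightarrow> s \<in> carrier (G n)"
      using canon_in[OF n] sub unfolding inC_def by blast
    let ?v = "\<lambda>s. lext (PB n m ?q s) f :: _ \<Rightarrow> 'r"
    have vch: "\<And>s. ?v s \<in> chains (Cbasis G opl 0 (n - m) ?q)"
      using f PB_ch[OF n] by (intro chains_lext) auto
    have vcyc: "\<And>s. s \<in> ?S \<Longrightarrow> ?q = 0 \<or> dchain R G opl b 0 (n - m) ?q (?v s) \<in> Crel R G opl 0 (n - m) (?q - 1)"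
    proof -
      fix s assume s: "s \<in> ?S"
      show "?q = 0 \<or> dchain R G opl b 0 (n - m) ?q (?v s) \<in> Crel R G opl 0 (n - m) (?q - 1)"
      proof (cases ?q)
        case 0 then show ?thesis by simp
      next
        case (Suc q0)
        have n2: "n = r + m + Suc q0" using n Suc by simp
        have "dchain R G opl b m n (Suc q0) f \<in> Crel R G opl m n q0" using cyc Suc by simp
        then have "dchain R G opl b 0 (n - m) (Suc q0) (lext (PB n m (Suc q0) s) f) \<in> Crel R G opl 0 (n - m) q0"
          using Pcyc[OF n2 _ sc[OF s]] f Suc by simp
        then show ?thesis using Suc by simp
      qed
    qed
    have Hm: "reduced_homology_vanishes R G opl b 0 i (n - m)" using H n by simp
    have Hm': "\<forall>g\<in>chains (Cbasis G opl 0 (n - m) ?q).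
        (?q = 0 \<or> dchain R G opl b 0 (n - m) ?q g \<in> Crel R G opl 0 (n - m) (?q - 1)) \<longrightarrow>
        (\<exists>c\<in>chains (Cbasis G opl 0 (n - m) (Suc ?q)).
           (\<lambda>y. g y - dchain R G opl b 0 (n - m) (Suc ?q) c y) \<in> Crel R G opl 0 (n - m) ?q)"
      using Hm unfolding reduced_homology_vanishes_def Let_def .
    have ex: "\<forall>s\<in>?S. \<exists>c. c \<in> chains (Cbasis G opl 0 (n - m) (Suc ?q)) \<and>
        (\<lambda>y. ?v s y - dchain R G opl b 0 (n - m) (Suc ?q) c y) \<in> Crel R G opl 0 (n - m) ?q"
    proof
      fix s assume s: "s \<in> ?S"
      have "\<exists>c\<in>chains (Cbasis G opl 0 (n - m) (Suc ?q)).
           (\<lambda>y. ?v s y - dchain R G opl b 0 (n - m) (Suc ?q) c y) \<in> Crel R G opl 0 (n - m) ?q"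
        using mp[OF bspec[OF Hm' vch] vcyc[OF s]] .
      then show "\<exists>c. c \<in> chains (Cbasis G opl 0 (n - m) (Suc ?q)) \<and>
        (\<lambda>y. ?v s y - dchain R G opl b 0 (n - m) (Suc ?q) c y) \<in> Crel R G opl 0 (n - m) ?q"
        unfolding Bex_def .
    qed
    obtain cs where csa: "\<forall>s\<in>?S. cs s \<in> chains (Cbasis G opl 0 (n - m) (Suc ?q)) \<and>
        (\<lambda>y. ?v s y - dchain R G opl b 0 (n - m) (Suc ?q) (cs s) y) \<in> Crel R G opl 0 (n - m) ?q"
      using bchoice[OF ex] by (elim exE)
    have cs: "\<And>s. s \<in> ?S \<Longrightarrow> cs s \<in> chains (Cbasis G opl 0 (n - m) (Suc ?q))"
      "\<And>s. s \<in> ?S \<Longrightarrow> (\<lambda>y. ?v s y - dchain R G opl b 0 (n - m) (Suc ?q) (cs s) y) \<in> Crel R G opl 0 (n - m) ?q"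
      using csa by auto
    let ?T' = "\<lambda>s. lext (TB n m (Suc ?q) s) (cs s) :: _ \<Rightarrow> 'r"
    let ?c = "\<lambda>y. \<Sum>s\<in>?S. ?T' s y"
    have T'ch: "\<And>s. s \<in> ?S \<Longrightarrow> ?T' s \<in> chains (Cbasis G opl m n (Suc ?q))"
    proof -
      fix s assume s: "s \<in> ?S"
      show "?T' s \<in> chains (Cbasis G opl m n (Suc ?q))"
      proof (cases r)
        case 0
        have "Cbasis G opl 0 (n - m) (Suc ?q) = {}" using n 0 unfolding Cbasis_def by auto
        then have "cs s = (\<lambda>_. 0)" using cs(1)[OF s] chains_empty by auto
        then show ?thesis by (simp add: lext_zero chains_zero)
      next
        case (Suc r1)
        have n2: "n = r1 + m + Suc ?q" using n Suc by simp
        show ?thesis using cs(1)[OF s] TB_ch[OF n2 sc[OF s]] by (intro chains_lext) auto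
      qed
    qed
    have cch: "?c \<in> chains (Cbasis G opl m n (Suc ?q))" using fS T'ch by (intro chains_sum) auto
    let ?d0 = "\<lambda>s. dchain R G opl b 0 (n - m) (Suc ?q) (cs s)"
    let ?Tv = "\<lambda>s. lext (TB n m ?q s) (?v s)"
    let ?Td = "\<lambda>s. lext (TB n m ?q s) (?d0 s)"
    let ?dT = "\<lambda>s. dchain R G opl b m n (Suc ?q) (?T' s)"
    have fin_d0: "\<And>s. s \<in> ?S \<Longrightarrow> fin (?d0 s)"
      unfolding dchain_lext using cs(1) fin_ch by (intro fin_lext) (auto intro: fin_dbasis)
    have X1: "(\<lambda>y. f y - (\<Sum>s\<in>?S. ?Tv s y)) \<in> Crel R G opl m n ?q" using Dc[OF n f] .
    have X2: "\<And>s. s \<in> ?S \<Longrightarrow> (\<lambda>y. ?Tv s y - ?Td s y) \<in> Crel R G opl m n ?q"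
    proof -
      fix s assume s: "s \<in> ?S"
      have "lext (TB n m ?q s) (\<lambda>y. ?v s y - ?d0 s y) \<in> Crel R G opl m n ?q"
        using T1c[OF n sc[OF s] cs(2)[OF s]] .
      then show "?thesis s" unfolding lext_diff[OF fin_ch[OF vch] fin_d0[OF s]] .
    qed
    have X3: "\<And>s. s \<in> ?S \<Longrightarrow> (\<lambda>y. ?Td s y - ?dT s y) \<in> Crel R G opl m n ?q"
    proof -
      fix s assume s: "s \<in> ?S"
      have "(\<lambda>y. ?dT s y - ?Td s y) \<in> Crel R G opl m n ?q" using T2c[OF n sc[OF s] cs(1)[OF s]] .
      then show "?thesis s" unfolding Crel_def by (rule span_neg)
    qed
    have dc: "dchain R G opl b m n (Suc ?q) ?c = (\<lambda>y. \<Sum>s\<in>?S. ?dT s y)"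
      unfolding dchain_lext using fS T'ch fin_ch by (intro lext_sumS) auto
    have eq: "(\<lambda>y. f y - dchain R G opl b m n (Suc ?q) ?c y)
       = (\<lambda>y. (f y - (\<Sum>s\<in>?S. ?Tv s y)) + (\<Sum>s\<in>?S. ?Tv s y - ?Td s y) + (\<Sum>s\<in>?S. ?Td s y - ?dT s y))"
      unfolding dc sum_subtractf telesc ..
    have S2: "(\<lambda>y. \<Sum>s\<in>?S. ?Tv s y - ?Td s y) \<in> Crel R G opl m n ?q"
      unfolding Crel_def by (rule span_sum1[OF fS], intro ballI, rule X2[unfolded Crel_def], assumption)
    have S3: "(\<lambda>y. \<Sum>s\<in>?S. ?Td s y - ?dT s y) \<in> Crel R G opl m n ?q"
      unfolding Crel_def by (rule span_sum1[OF fS], intro ballI, rule X3[unfolded Crel_def], assumption)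
    have "(\<lambda>y. (f y - (\<Sum>s\<in>?S. ?Tv s y)) + (\<Sum>s\<in>?S. ?Tv s y - ?Td s y) + (\<Sum>s\<in>?S. ?Td s y - ?dT s y)) \<in> Crel R G opl m n ?q"
      unfolding Crel_def by (rule span_add[OF span_add[OF X1[unfolded Crel_def] S2[unfolded Crel_def]] S3[unfolded Crel_def]])
    then have "(\<lambda>y. f y - dchain R G opl b m n (Suc ?q) ?c y) \<in> Crel R G opl m n ?q" unfolding eq .
    then show ?thesis by (rule bexI[OF _ cch])
  qed
qed

end

theorem proposition5p10:
  fixes R :: "'r::comm_ring_1 itself"
    and G :: "nat \<Rightarrow> 'g monoid"
    and opl :: "nat \<Rightarrow> nat \<Rightarrow> 'g \<Rightarrow> 'g \<Rightarrow> 'g"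
    and b :: "nat \<Rightarrow> nat \<Rightarrow> 'g"
    and N k a :: nat
  assumes "braided_stability_groupoid G opl b"
    and H3: "\<forall>i::int. \<forall>n::nat. -1 \<le> i \<and> i < int N \<and> int n > int k * i + int a
               \<longrightarrow> reduced_homology_vanishes R G opl b 0 i n"
  shows "\<forall>m::nat. \<forall>i::int. \<forall>n::nat. -1 \<le> i \<and> i < int N \<and> int n > int k * i + int a + int m
               \<longrightarrow> reduced_homology_vanishes R G opl b m i n"
proof (intro allI impI)
  fix m :: nat and i :: int and n :: nat
  assume h: "-1 \<le> i \<and> i < int N \<and> int n > int k * i + int a + int m"
  show "reduced_homology_vanishes R G opl b m i n"
  proof (rule braided_stability_groupoid.main[OF assms(1)])
    assume mn: "m \<le> n"
    have "int (n - m) > int k * i + int a" using h mn by (simp add: of_nat_diff)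
    then show "reduced_homology_vanishes R G opl b 0 i (n - m)" using H3 h by blast
  qed
qed

end
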